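(* Let $X\subseteq\mathbb{R}^n$ be r.e. open. (a) The multi-valued partial mapping $G:\subseteq\mathfrak{O}^n\times\mathbb{R}^n\rightrightarrows\mathbb{N}$ with graph $\{(U,\vec x,k):\overline{B}(\vec x,2^{-k})\subseteq U\}$ (defined when $\vec x\in U$) is $(\theta^n_<\times\rho^n\rightrightarrows\nu)$-computable. (b) For every $(\rho^n\rightrightarrows\rho^m)$-computable multi-valued $f:X\rightrightarrows\mathbb{R}^m$ there exists a $(\rho^n\rightrightarrows\rho^m)$-computable multi-valued sub-function $\tilde f$ of $f$ (i.e. $\tilde f(\vec x)\subseteq f(\vec x)$ for all $\vec x\in X$) such that $\tilde f[K]:=\bigcup_{\vec x\in K}\tilde f(\vec x)$ is bounded for every compact $K\subseteq X$. (c) For $m=1$ and $\tilde f$ as in (b), the multi-valued mapping $K\mapsto N$, with $N\in\mathbb{N}$ satisfying $\tilde f[K]\subseteq[-N,N]$, defined on compact $K\subseteq X$, is $(\kappa^n_>\rightrightarrows\nu)$-computable. Claims (b) and (c) also hold uniformly in $p$ for parametrized computable functions $p\mapsto f(p,\cdot):X\rightrightarrows\mathbb{R}^m$.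
   Context: Type-2 computability (Weihrauch). $\mathfrak{O}^n$: the open subsets of $\mathbb{R}^n$; $\theta^n_<$: a name of open $U$ is a list of rational centers and radii of open balls with union $U$. $\rho^n$: Cauchy representation of $\mathbb{R}^n$; $\nu$: standard notation of $\mathbb{N}$. $\kappa^n_>$: representation of compact subsets of $\mathbb{R}^n$ in which a name of $K$ lists all finite covers of $K$ by open rational balls (covers intersecting $K$ suitably, per Weihrauch's $\kappa_>$). $X$ r.e. open: has a computable $\theta^n_<$-name. A multi-valued $h:A\rightrightarrows B$ is $(\delta\rightrightarrows\delta')$-computable if some machine, on any $\delta$-name of $a$, outputs a $\delta'$-name of some element of $h(a)$. $\overline{B}(\vec x,r)$ is the closed Euclidean ball. *)

theory Defs
  imports "HOL-Analysis.Analysis" "HOL-Library.Nat_Bijection" "HOL-Library.Countable"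
begin

datatype recf = Zr | Sc | Pj nat | Cn recf "recf list" | Pr recf recf | Mn recf

inductive eval :: "recf \<Rightarrow> nat list \<Rightarrow> nat \<Rightarrow> bool" where
  ev_Zr: "eval Zr xs 0"
| ev_Sc: "eval Sc (x # xs) (Suc x)"
| ev_Pj: "i < length xs \<Longrightarrow> eval (Pj i) xs (xs ! i)"
| ev_Cn: "list_all2 (\<lambda>g y. eval g xs y) gs ys \<Longrightarrow> eval f ys z \<Longrightarrow> eval (Cn f gs) xs z"
| ev_Pr0: "eval g xs z \<Longrightarrow> eval (Pr g h) (0 # xs) z"
| ev_PrS: "eval (Pr g h) (n # xs) y \<Longrightarrow> eval h (y # n # xs) z \<Longrightarrow> eval (Pr g h) (Suc n # xs) z"
| ev_Mn: "eval f (n # xs) 0 \<Longrightarrow> (\<forall>m<n. \<exists>v. v > 0 \<and> eval f (m # xs) v) \<Longrightarrow> eval (Mn f) xs n"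

definition comp_seq :: "(nat \<Rightarrow> nat) \<Rightarrow> bool" where
  "comp_seq p \<longleftrightarrow> (\<exists>r. \<forall>i. eval r [i] (p i))"

definition prefix_code :: "(nat \<Rightarrow> nat) \<Rightarrow> nat \<Rightarrow> nat" where
  "prefix_code p n = list_encode (map p [0..<n])"

text \<open>The partial recursive r, read as a Type-2 machine, maps input p to output q:
  on (i, code of a prefix of p) it answers 0 (= not yet) or Suc (q i), consistently,
  and eventually answers Suc (q i).\<close>
definition realizes :: "recf \<Rightarrow> (nat \<Rightarrow> nat) \<Rightarrow> (nat \<Rightarrow> nat) \<Rightarrow> bool" where
  "realizes r p q \<longleftrightarrow>
     (\<forall>i. (\<exists>n. eval r [i, prefix_code p n] (Suc (q i))) \<and>
          (\<forall>n v. eval r [i, prefix_code p n] v \<longrightarrow> v = 0 \<or> v = Suc (q i)))"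

type_synonym 'a rep = "(nat \<Rightarrow> nat) \<Rightarrow> 'a \<Rightarrow> bool"

definition mv_computable :: "'a rep \<Rightarrow> 'b rep \<Rightarrow> 'a set \<Rightarrow> ('a \<Rightarrow> 'b set) \<Rightarrow> bool" where
  "mv_computable \<delta> \<delta>' A h \<longleftrightarrow>
     (\<exists>r. \<forall>a\<in>A. \<forall>p. \<delta> p a \<longrightarrow> (\<exists>q b. realizes r p q \<and> \<delta>' q b \<and> b \<in> h a))"

definition rat_dec :: "nat \<Rightarrow> rat" where
  "rat_dec k = (case prod_decode k of (a, b) \<Rightarrow> Fract (int_decode a) (int b + 1))"

definition vec_dec :: "nat \<Rightarrow> real ^ ('n::finite)" where
  "vec_dec k = (\<chi> j. (let l = list_decode k in
                  if to_nat j < length l then real_of_rat (rat_dec (l ! to_nat j)) else 0))"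

definition rho :: "(real ^ ('n::finite)) rep" where
  "rho p x \<longleftrightarrow> (\<forall>i j. \<bar>vec_dec (p i) $ j - x $ j\<bar> \<le> (1/2) ^ i)"

definition nu :: "nat rep" where
  "nu p k \<longleftrightarrow> p 0 = k"

text \<open>Open rational ball coded by a natural number (radius \<le> 0 gives the empty set).\<close>
definition ball_dec :: "nat \<Rightarrow> (real ^ ('n::finite)) set" where
  "ball_dec k = (case prod_decode k of (c, r) \<Rightarrow> ball (vec_dec c) (real_of_rat (rat_dec r)))"

definition theta :: "(real ^ ('n::finite)) set rep" where
  "theta p U \<longleftrightarrow> U = (\<Union>i. ball_dec (p i))"

definition kappa :: "(real ^ ('n::finite)) set rep" where
  "kappa p K \<longleftrightarrow> compact K \<and>
     (\<forall>k. (\<exists>i. p i = k) \<longleftrightarrow> K \<subseteq> \<Union>(ball_dec ` set (list_decode k)))"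

definition prod_rep :: "'a rep \<Rightarrow> 'b rep \<Rightarrow> ('a \<times> 'b) rep" where
  "prod_rep \<delta>1 \<delta>2 p ab \<longleftrightarrow> \<delta>1 (\<lambda>i. p (2 * i)) (fst ab) \<and> \<delta>2 (\<lambda>i. p (2 * i + 1)) (snd ab)"

definition id_rep :: "(nat \<Rightarrow> nat) rep" where
  "id_rep p p' \<longleftrightarrow> p = p'"

definition re_open :: "(real ^ ('n::finite)) set \<Rightarrow> bool" where
  "re_open X \<longleftrightarrow> (\<exists>p. comp_seq p \<and> theta p X)"

end

theory Submission
  imports Defs "HOL-Library.Diagonal_Subsequence"
begin


inductive_cases eval_ZrE: "eval Zr xs v"
inductive_cases eval_ScE: "eval Sc xs v"
inductive_cases eval_PjE: "eval (Pj i) xs v"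
inductive_cases eval_CnE: "eval (Cn f gs) xs v"
inductive_cases eval_PrE: "eval (Pr g h) xs v"
inductive_cases eval_MnE: "eval (Mn f) xs v"

lemma eval_det: "eval r xs v \<Longrightarrow> eval r xs w \<Longrightarrow> v = w"
proof (induction r xs v arbitrary: w rule: eval.induct)
  case (ev_Zr xs) then show ?case by (auto elim: eval_ZrE)
next
  case (ev_Sc x xs) then show ?case by (auto elim: eval_ScE)
next
  case (ev_Pj i xs) then show ?case by (auto elim: eval_PjE)
next
  case (ev_Cn xs gs ys f z)
  from ev_Cn.prems obtain ys' where a: "list_all2 (\<lambda>g y. eval g xs y) gs ys'" and b: "eval f ys' w"
    by (auto elim: eval_CnE)
  have h: "list_all2 (\<lambda>g y. \<forall>w. eval g xs w \<longrightarrow> y = w) gs ys"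
    using ev_Cn by (auto elim: list_all2_mono)
  have "ys = ys'" using h a
  proof (induction gs arbitrary: ys ys')
    case Nil then show ?case by simp
  next
    case (Cons g gs)
    then obtain y ys1 y' ys1' where "ys = y # ys1" "ys' = y' # ys1'" by (auto simp: list_all2_Cons1)
    with Cons show ?case by auto
  qed
  with ev_Cn b show ?case by auto
next
  case (ev_Pr0 g xs z h)
  from ev_Pr0.prems have "eval g xs w" by (cases rule: eval_PrE) auto
  with ev_Pr0.IH show ?case by blast
next
  case (ev_PrS g h n xs y z)
  from ev_PrS.prems obtain y' where "eval (Pr g h) (n # xs) y'" "eval h (y' # n # xs) w"
    by (cases rule: eval_PrE) auto
  with ev_PrS.IH show ?case by metis
next
  case (ev_Mn f n xs)
  from ev_Mn.prems have a: "eval f (w # xs) 0" and b: "\<forall>m<w. \<exists>v>0. eval f (m # xs) v"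
    by (auto elim: eval_MnE)
  show ?case
  proof (rule ccontr)
    assume "n \<noteq> w"
    then consider "n < w" | "w < n" by linarith
    then show False
    proof cases
      case 1 with b obtain v where "v > 0" "eval f (n # xs) v" by blast
      with ev_Mn.IH(1) show False by force
    next
      case 2 with ev_Mn.IH(2) a show False by force
    qed
  qed
qed

lemma eval_Cn1: "eval g xs y \<Longrightarrow> eval f [y] z \<Longrightarrow> eval (Cn f [g]) xs z"
  by (rule ev_Cn[of xs "[g]" "[y]"]) auto

lemma eval_Cn2: "eval g1 xs y1 \<Longrightarrow> eval g2 xs y2 \<Longrightarrow> eval f [y1, y2] z \<Longrightarrow> eval (Cn f [g1, g2]) xs z"
  by (rule ev_Cn[of xs "[g1, g2]" "[y1, y2]"]) auto

lemma eval_Cn3: "eval g1 xs y1 \<Longrightarrow> eval g2 xs y2 \<Longrightarrow> eval g3 xs y3 \<Longrightarrow> eval f [y1, y2, y3] z \<Longrightarrow> eval (Cn f [g1, g2, g3]) xs z"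
  by (rule ev_Cn[of xs "[g1, g2, g3]" "[y1, y2, y3]"]) auto

lemma eval_Cn1_iff: "eval g xs y \<Longrightarrow> eval (Cn f [g]) xs z \<longleftrightarrow> eval f [y] z"
  by (auto intro: eval_Cn1 elim!: eval_CnE simp: list_all2_Cons1 dest: eval_det)

lemma eval_Cn2_iff: "eval g1 xs y1 \<Longrightarrow> eval g2 xs y2 \<Longrightarrow> eval (Cn f [g1, g2]) xs z \<longleftrightarrow> eval f [y1, y2] z"
  apply (rule iffI)
   apply (erule eval_CnE)
   apply (clarsimp simp: list_all2_Cons1)
   apply (metis eval_det)
  by (rule eval_Cn2)

lemma eval_Pr_tot:
  assumes "eval g xs (R 0)" "\<And>n. eval h (R n # n # xs) (R (Suc n))"
  shows "eval (Pr g h) (n # xs) (R n)"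
  by (induction n) (auto intro: ev_Pr0 ev_PrS assms)

lemma eval_Pj0: "eval (Pj 0) (x # xs) x" using ev_Pj[of 0 "x # xs"] by simp
lemma eval_Pj1: "eval (Pj 1) (x # y # xs) y" using ev_Pj[of 1 "x # y # xs"] by simp
lemma eval_Pj2: "eval (Pj 2) (x # y # z # xs) z" using ev_Pj[of 2 "x # y # z # xs"] by (simp add: numeral_2_eq_2)

section \<open>Total computable functions\<close>

definition comp1 :: "(nat \<Rightarrow> nat) \<Rightarrow> bool" where
  "comp1 F \<longleftrightarrow> (\<exists>r. \<forall>x. eval r [x] (F x))"

definition comp2 :: "(nat \<Rightarrow> nat \<Rightarrow> nat) \<Rightarrow> bool" where
  "comp2 F \<longleftrightarrow> (\<exists>r. \<forall>x y. eval r [x, y] (F x y))"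

lemma comp2_comp: "comp2 F \<Longrightarrow> comp1 G \<Longrightarrow> comp1 H \<Longrightarrow> comp1 (\<lambda>x. F (G x) (H x))"
proof -
  assume "comp2 F" "comp1 G" "comp1 H"
  then obtain rf rg rh where "\<And>x y. eval rf [x, y] (F x y)" "\<And>x. eval rg [x] (G x)" "\<And>x. eval rh [x] (H x)"
    unfolding comp1_def comp2_def by blast
  then have "\<And>x. eval (Cn rf [rg, rh]) [x] (F (G x) (H x))" by (blast intro: eval_Cn2)
  then show ?thesis unfolding comp1_def by blast
qed

lemma comp1_comp: "comp1 F \<Longrightarrow> comp1 G \<Longrightarrow> comp1 (\<lambda>x. F (G x))"
proof -
  assume "comp1 F" "comp1 G"
  then obtain rf rg where "\<And>x. eval rf [x] (F x)" "\<And>x. eval rg [x] (G x)"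
    unfolding comp1_def by blast
  then have "\<And>x. eval (Cn rf [rg]) [x] (F (G x))" by (blast intro: eval_Cn1)
  then show ?thesis unfolding comp1_def by blast
qed

lemma comp1_id: "comp1 (\<lambda>x. x)"
  unfolding comp1_def using eval_Pj0 by blast

lemma comp1_zero: "comp1 (\<lambda>x. 0)"
  unfolding comp1_def using ev_Zr by blast

lemma comp1_Suc: "comp1 F \<Longrightarrow> comp1 (\<lambda>x. Suc (F x))"
proof -
  assume "comp1 F"
  then obtain rf where "\<And>x. eval rf [x] (F x)" unfolding comp1_def by blast
  then have "\<And>x. eval (Cn Sc [rf]) [x] (Suc (F x))" by (blast intro: eval_Cn1 ev_Sc)
  then show ?thesis unfolding comp1_def by blast
qed

lemma comp1_const: "comp1 (\<lambda>x. c)"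
  by (induction c) (auto intro: comp1_zero comp1_Suc[of "\<lambda>x. _", simplified])

lemma comp2_fst: "comp1 F \<Longrightarrow> comp2 (\<lambda>x y. F x)"
proof -
  assume "comp1 F"
  then obtain rf where "\<And>x. eval rf [x] (F x)" unfolding comp1_def by blast
  then have "\<And>x y. eval (Cn rf [Pj 0]) [x, y] (F x)" by (blast intro: eval_Cn1 eval_Pj0)
  then show ?thesis unfolding comp2_def by blast
qed

lemma comp2_snd: "comp1 F \<Longrightarrow> comp2 (\<lambda>x y. F y)"
proof -
  assume "comp1 F"
  then obtain rf where "\<And>x. eval rf [x] (F x)" unfolding comp1_def by blast
  then have "\<And>x y. eval (Cn rf [Pj 1]) [x, y] (F y)" by (blast intro: eval_Cn1 eval_Pj1)
  then show ?thesis unfolding comp2_def by blast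
qed

lemma comp2_add: "comp2 (\<lambda>x y. x + y)"
proof -
  have "eval (Pr (Pj 0) (Cn Sc [Pj 0])) [x, y] (x + y)" for x y
    using eval_Pr_tot[of "Pj 0" "[y]" "\<lambda>n. n + y" "Cn Sc [Pj 0]" x]
    by (auto intro: eval_Pj0 eval_Cn1 ev_Sc)
  then show ?thesis unfolding comp2_def by blast
qed

lemma comp2_mult: "comp2 (\<lambda>x y. x * y)"
proof -
  obtain ra where ra: "\<And>x y. eval ra [x, y] (x + y)" using comp2_add unfolding comp2_def by blast
  have "eval (Pr Zr (Cn ra [Pj 0, Pj 2])) [x, y] (x * y)" for x y
  proof (rule eval_Pr_tot[of Zr "[y]" "\<lambda>n. n * y"])
    show "eval Zr [y] (0 * y)" using ev_Zr by simp
    fix n show "eval (Cn ra [Pj 0, Pj 2]) [n * y, n, y] (Suc n * y)"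
      using eval_Cn2[OF eval_Pj0 eval_Pj2 ra[of "n*y" y]] by (simp add: add.commute)
  qed
  then show ?thesis unfolding comp2_def by blast
qed


lemma comp2_comp2: "comp2 F \<Longrightarrow> comp2 G \<Longrightarrow> comp2 H \<Longrightarrow> comp2 (\<lambda>x y. F (G x y) (H x y))"
proof -
  assume "comp2 F" "comp2 G" "comp2 H"
  then obtain rf rg rh where "\<And>x y. eval rf [x, y] (F x y)" "\<And>x y. eval rg [x, y] (G x y)" "\<And>x y. eval rh [x, y] (H x y)"
    unfolding comp2_def by blast
  then have "\<And>x y. eval (Cn rf [rg, rh]) [x, y] (F (G x y) (H x y))" by (blast intro: eval_Cn2)
  then show ?thesis unfolding comp2_def by blast
qed

lemma comp2_id1: "comp2 (\<lambda>x y. x)" using comp2_fst[OF comp1_id] .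
lemma comp2_id2: "comp2 (\<lambda>x y. y)" using comp2_snd[OF comp1_id] .

lemma comp2_const: "comp2 (\<lambda>x y. c)" using comp2_fst[OF comp1_const] .

lemma comp1_pred: "comp1 (\<lambda>x. x - 1)"
proof -
  have "eval (Pr Zr (Pj 1)) [n] (n - 1)" for n
  proof (rule eval_Pr_tot[of Zr "[]" "\<lambda>n. n - 1"])
    show "eval Zr [] (0 - 1)" using ev_Zr by simp
    fix n show "eval (Pj 1) [n - 1, n] (Suc n - 1)" using eval_Pj1[of "n - 1" n "[]"] by simp
  qed
  then show ?thesis unfolding comp1_def by blast
qed

lemma comp2_minus: "comp2 (\<lambda>x y. x - y)"
proof -
  obtain rp where rp: "\<And>x. eval rp [x] (x - 1)" using comp1_pred unfolding comp1_def by blast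
  have "eval (Pr (Pj 0) (Cn rp [Pj 0])) [y, x] (x - y)" for x y
  proof (rule eval_Pr_tot[of "Pj 0" "[x]" "\<lambda>n. x - n"])
    show "eval (Pj 0) [x] (x - 0)" using eval_Pj0[of x "[]"] by simp
    fix n show "eval (Cn rp [Pj 0]) [x - n, n, x] (x - Suc n)"
    proof -
      have e: "x - Suc n = (x - n) - 1" by simp
      show ?thesis unfolding e by (rule eval_Cn1[OF eval_Pj0 rp[of "x - n"]])
    qed
  qed
  then have "eval (Cn (Pr (Pj 0) (Cn rp [Pj 0])) [Pj 1, Pj 0]) [x, y] (x - y)" for x y
    by (blast intro: eval_Cn2 eval_Pj0 eval_Pj1)
  then show ?thesis unfolding comp2_def by blast
qed

lemma comp1_triangle: "comp1 triangle"
proof -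
  obtain ra where ra: "\<And>x y. eval ra [x, y] (x + y)" using comp2_add unfolding comp2_def by blast
  have "eval (Pr Zr (Cn ra [Pj 0, Cn Sc [Pj 1]])) [n] (triangle n)" for n
  proof (rule eval_Pr_tot[of Zr "[]" "triangle"])
    show "eval Zr [] (triangle 0)" using ev_Zr by simp
    fix n show "eval (Cn ra [Pj 0, Cn Sc [Pj 1]]) [triangle n, n] (triangle (Suc n))"
      using eval_Cn2[OF eval_Pj0 eval_Cn1[OF eval_Pj1 ev_Sc] ra[of "triangle n" "Suc n"]] by simp
  qed
  then show ?thesis unfolding comp1_def by blast
qed

lemma comp2_search:
  assumes "comp2 F" "\<And>x. \<exists>n. F n x = 0"
  shows "comp1 (\<lambda>x. LEAST n. F n x = 0)"
proof -
  obtain rf where rf: "\<And>x y. eval rf [x, y] (F x y)" using assms(1) unfolding comp2_def by blast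
  have "eval (Mn rf) [x] (LEAST n. F n x = 0)" for x
  proof (rule ev_Mn)
    show "eval rf [LEAST n. F n x = 0, x] 0" using rf LeastI_ex[OF assms(2)[of x]] by metis
    show "\<forall>m<(LEAST n. F n x = 0). \<exists>v>0. eval rf [m, x] v"
      using rf not_less_Least by blast
  qed
  then show ?thesis unfolding comp1_def by blast
qed

definition pr :: "nat \<Rightarrow> nat \<Rightarrow> nat" where "pr a b = prod_encode (a, b)"
definition p1 :: "nat \<Rightarrow> nat" where "p1 z = fst (prod_decode z)"
definition p2 :: "nat \<Rightarrow> nat" where "p2 z = snd (prod_decode z)"

lemma p1_pr[simp]: "p1 (pr a b) = a" and p2_pr[simp]: "p2 (pr a b) = b"
  by (simp_all add: p1_def p2_def pr_def)
lemma pr_p[simp]: "pr (p1 z) (p2 z) = z" by (simp add: p1_def p2_def pr_def)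
lemma pr_eq[simp]: "pr a b = pr c d \<longleftrightarrow> a = c \<and> b = d" by (simp add: pr_def)
lemma pr_ge1: "a \<le> pr a b" and pr_ge2: "b \<le> pr a b"
  by (simp_all add: pr_def le_prod_encode_1 le_prod_encode_2)
lemma p1_le: "p1 z \<le> z" by (metis pr_ge1 pr_p)
lemma p2_le: "p2 z \<le> z" by (metis pr_ge2 pr_p)
lemma pr_mono: "a \<le> c \<Longrightarrow> b \<le> d \<Longrightarrow> pr a b \<le> pr c d"
proof -
  assume "a \<le> c" "b \<le> d"
  have "triangle (a + b) \<le> triangle (c + d)" using \<open>a \<le> c\<close> \<open>b \<le> d\<close>
    unfolding triangle_def by (intro div_le_mono mult_le_mono) auto
  then show ?thesis using \<open>a \<le> c\<close> by (simp add: pr_def prod_encode_def)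
qed
lemma triangle_ge: "n \<le> triangle n" by (induction n) auto
lemma pr_ge_add: "a + b \<le> pr a b"
  using triangle_ge[of "a+b"] by (simp add: pr_def prod_encode_def)

lemma comp2_pr: "comp2 pr"
proof -
  have "pr = (\<lambda>x y. triangle (x + y) + x)" by (auto simp: pr_def prod_encode_def fun_eq_iff)
  moreover have "comp2 (\<lambda>x y. triangle (x + y))"
    using comp2_comp2[OF comp2_fst[OF comp1_triangle] comp2_add comp2_id1] by simp
  then have "comp2 (\<lambda>x y. triangle (x + y) + x)"
    using comp2_comp2[OF comp2_add _ comp2_id1] by blast
  ultimately show ?thesis by simp
qed


lemma triangle_mono: "m \<le> n \<Longrightarrow> triangle m \<le> triangle n"
  unfolding triangle_def by (intro div_le_mono mult_le_mono) auto

definition tri_inv :: "nat \<Rightarrow> nat" where "tri_inv z = (LEAST s. z < triangle (Suc s))"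

lemma z_eq: "z = triangle (p1 z + p2 z) + p1 z"
proof -
  have "z = pr (p1 z) (p2 z)" by simp
  also have "\<dots> = triangle (p1 z + p2 z) + p1 z" by (simp add: pr_def prod_encode_def)
  finally show ?thesis .
qed
lemma tri_inv_eq: "tri_inv z = p1 z + p2 z"
proof -
  have z: "z = triangle (p1 z + p2 z) + p1 z"
    by (rule z_eq)
  show ?thesis unfolding tri_inv_def
  proof (rule Least_equality)
    show "z < triangle (Suc (p1 z + p2 z))" by (subst z) simp
    fix y assume "z < triangle (Suc y)"
    show "p1 z + p2 z \<le> y"
    proof (rule ccontr)
      assume "\<not> ?thesis" then have "Suc y \<le> p1 z + p2 z" by simp
      from triangle_mono[OF this] z \<open>z < triangle (Suc y)\<close> show False by linarith
    qed
  qed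
qed

lemma p1_alt: "p1 z = z - triangle (tri_inv z)"
  unfolding tri_inv_eq using z_eq[of z] by linarith
lemma p2_alt: "p2 z = tri_inv z - p1 z"
  by (simp add: tri_inv_eq)

lemma comp1_tri_inv: "comp1 tri_inv"
proof -
  have "comp2 (\<lambda>n x. triangle (Suc n))"
    using comp2_fst[OF comp1_comp[OF comp1_triangle comp1_Suc[OF comp1_id]]] .
  then have "comp2 (\<lambda>n x. 1 - (triangle (Suc n) - x))"
    by (rule comp2_comp2[OF comp2_minus comp2_const comp2_comp2[OF comp2_minus _ comp2_id2]])
  moreover have "(\<lambda>n x. 1 - (triangle (Suc n) - x)) = (\<lambda>n x. if x < triangle (Suc n) then 0 else 1)"
    by (auto simp: fun_eq_iff)
  ultimately have c: "comp2 (\<lambda>n x. if x < triangle (Suc n) then 0 else 1)" by simp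
  have "\<exists>n. (if x < triangle (Suc n) then 0 else 1) = (0::nat)" for x
    using triangle_ge[of "Suc x"] by (intro exI[of _ x]) auto
  from comp2_search[OF c this] show ?thesis
    unfolding tri_inv_def by (simp add: if_split_eq1 cong: if_cong) 
qed

named_theorems ci

definition compP :: "(nat \<Rightarrow> bool) \<Rightarrow> bool" where
  "compP P \<longleftrightarrow> comp1 (\<lambda>x. if P x then 1 else 0)"

lemma C_id[ci]: "comp1 (\<lambda>x. x)" by (rule comp1_id)
lemma C_const[ci]: "comp1 (\<lambda>x. c)" by (rule comp1_const)
lemma C_Suc[ci]: "comp1 F \<Longrightarrow> comp1 (\<lambda>x. Suc (F x))" by (rule comp1_Suc)
lemma C_add[ci]: "comp1 F \<Longrightarrow> comp1 G \<Longrightarrow> comp1 (\<lambda>x. F x + G x)" by (rule comp2_comp[OF comp2_add])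
lemma C_mult[ci]: "comp1 F \<Longrightarrow> comp1 G \<Longrightarrow> comp1 (\<lambda>x. F x * G x)" by (rule comp2_comp[OF comp2_mult])
lemma C_minus[ci]: "comp1 F \<Longrightarrow> comp1 G \<Longrightarrow> comp1 (\<lambda>x. F x - G x)" by (rule comp2_comp[OF comp2_minus])
lemma C_pr[ci]: "comp1 F \<Longrightarrow> comp1 G \<Longrightarrow> comp1 (\<lambda>x. pr (F x) (G x))" by (rule comp2_comp[OF comp2_pr])
lemma C_triangle[ci]: "comp1 F \<Longrightarrow> comp1 (\<lambda>x. triangle (F x))" by (rule comp1_comp[OF comp1_triangle])
lemma C_tri_inv[ci]: "comp1 F \<Longrightarrow> comp1 (\<lambda>x. tri_inv (F x))" by (rule comp1_comp[OF comp1_tri_inv])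
lemma C_p1[ci]: "comp1 F \<Longrightarrow> comp1 (\<lambda>x. p1 (F x))"
proof -
  assume a: "comp1 F"
  show ?thesis unfolding p1_alt by (rule C_minus[OF a C_triangle[OF C_tri_inv[OF a]]])
qed
lemma C_p2[ci]: "comp1 F \<Longrightarrow> comp1 (\<lambda>x. p2 (F x))"
proof -
  assume a: "comp1 F"
  show ?thesis unfolding p2_alt by (rule C_minus[OF C_tri_inv[OF a] C_p1[OF a]])
qed

lemma P_le[ci]: "comp1 F \<Longrightarrow> comp1 G \<Longrightarrow> compP (\<lambda>x. F x \<le> G x)"
proof -
  assume "comp1 F" "comp1 G"
  then have "comp1 (\<lambda>x. 1 - (F x - G x))" by (intro ci)
  moreover have "(\<lambda>x. 1 - (F x - G x)) = (\<lambda>x. if F x \<le> G x then 1 else 0)" by (auto simp: fun_eq_iff)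
  ultimately show ?thesis unfolding compP_def by simp
qed
lemma P_not[ci]: "compP P \<Longrightarrow> compP (\<lambda>x. \<not> P x)"
proof -
  assume "compP P"
  then have "comp1 (\<lambda>x. 1 - (if P x then 1 else 0))" unfolding compP_def by (intro ci)
  moreover have "(\<lambda>x. 1 - (if P x then 1 else 0)) = (\<lambda>x. if \<not> P x then 1 else (0::nat))" by (auto simp: fun_eq_iff)
  ultimately show ?thesis unfolding compP_def by simp
qed
lemma P_and[ci]: "compP P \<Longrightarrow> compP Q \<Longrightarrow> compP (\<lambda>x. P x \<and> Q x)"
proof -
  assume "compP P" "compP Q"
  then have "comp1 (\<lambda>x. (if P x then 1 else 0) * (if Q x then 1 else 0))" unfolding compP_def by (intro ci)
  moreover have "(\<lambda>x. (if P x then 1 else 0) * (if Q x then 1 else 0)) = (\<lambda>x. if P x \<and> Q x then 1 else (0::nat))" by (auto simp: fun_eq_iff)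
  ultimately show ?thesis unfolding compP_def by simp
qed
lemma P_or[ci]: "compP P \<Longrightarrow> compP Q \<Longrightarrow> compP (\<lambda>x. P x \<or> Q x)"
proof -
  assume "compP P" "compP Q"
  then have "compP (\<lambda>x. \<not> (\<not> P x \<and> \<not> Q x))" by (intro P_not P_and)
  then show ?thesis by simp
qed
lemma P_imp[ci]: "compP P \<Longrightarrow> compP Q \<Longrightarrow> compP (\<lambda>x. P x \<longrightarrow> Q x)"
proof -
  assume "compP P" "compP Q"
  then have "compP (\<lambda>x. \<not> P x \<or> Q x)" by (intro P_or P_not)
  then show ?thesis unfolding imp_conv_disj .
qed
lemma P_less[ci]: "comp1 F \<Longrightarrow> comp1 G \<Longrightarrow> compP (\<lambda>x. F x < G x)"
proof -
  assume "comp1 F" "comp1 G"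
  then have "compP (\<lambda>x. \<not> G x \<le> F x)" by (intro ci)
  then show ?thesis by (simp add: not_le)
qed
lemma P_eq[ci]: "comp1 F \<Longrightarrow> comp1 G \<Longrightarrow> compP (\<lambda>x. F x = G x)"
proof -
  assume "comp1 F" "comp1 G"
  then have "compP (\<lambda>x. F x \<le> G x \<and> G x \<le> F x)" by (intro ci)
  then show ?thesis by (simp add: eq_iff)
qed
lemma P_const[ci]: "compP (\<lambda>x. b)"
  unfolding compP_def by (cases b) (simp_all add: ci)

lemma C_if[ci]: "compP P \<Longrightarrow> comp1 F \<Longrightarrow> comp1 G \<Longrightarrow> comp1 (\<lambda>x. if P x then F x else G x)"
proof -
  assume "compP P" "comp1 F" "comp1 G"
  then have "comp1 (\<lambda>x. (if P x then 1 else 0) * F x + (1 - (if P x then 1 else 0)) * G x)"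
    unfolding compP_def by (intro ci)
  moreover have "(\<lambda>x. (if P x then 1 else 0) * F x + (1 - (if P x then 1 else 0)) * G x) = (\<lambda>x. if P x then F x else G x)"
    by (auto simp: fun_eq_iff)
  ultimately show ?thesis by simp
qed

lemma comp2_of: "comp1 (\<lambda>z. F (p1 z) (p2 z)) \<Longrightarrow> comp2 F"
proof -
  assume "comp1 (\<lambda>z. F (p1 z) (p2 z))"
  from comp2_comp[OF comp2_pr comp1_id comp1_id] comp1_comp[OF this]
  have "comp2 (\<lambda>x y. (\<lambda>z. F (p1 z) (p2 z)) (pr x y))"
    using comp2_comp2[OF comp2_fst[OF \<open>comp1 (\<lambda>z. F (p1 z) (p2 z))\<close>] comp2_pr comp2_id1] by simp
  then show ?thesis by simp
qed

lemma C_iter[ci]: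
  assumes "comp1 (\<lambda>z. F (p1 z) (p2 z))" "comp1 N" "comp1 A"
  shows "comp1 (\<lambda>x. (F x ^^ N x) (A x))"
proof -
  obtain rf where rf: "\<And>x y. eval rf [x, y] (F x y)" using comp2_of[OF assms(1)] unfolding comp2_def by blast
  obtain rn where rn: "\<And>x. eval rn [x] (N x)" using assms(2) unfolding comp1_def by blast
  obtain ra where ra: "\<And>x. eval ra [x] (A x)" using assms(3) unfolding comp1_def by blast
  have "eval (Pr ra (Cn rf [Pj 2, Pj 0])) [n, x] ((F x ^^ n) (A x))" for n x
  proof (rule eval_Pr_tot[of ra "[x]" "\<lambda>n. (F x ^^ n) (A x)"])
    show "eval ra [x] ((F x ^^ 0) (A x))" using ra by simp
    fix n show "eval (Cn rf [Pj 2, Pj 0]) [(F x ^^ n) (A x), n, x] ((F x ^^ Suc n) (A x))"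
      using eval_Cn2[OF eval_Pj2 eval_Pj0 rf] by simp
  qed
  then have "eval (Cn (Pr ra (Cn rf [Pj 2, Pj 0])) [rn, Pj 0]) [x] ((F x ^^ N x) (A x))" for x
    by (blast intro: eval_Cn2 rn eval_Pj0)
  then show ?thesis unfolding comp1_def by blast
qed

lemma C_least:
  assumes "compP (\<lambda>z. P (p1 z) (p2 z))" "\<And>x. \<exists>n. P x n"
  shows "comp1 (\<lambda>x. LEAST n. P x n)"
proof -
  have "comp1 (\<lambda>z. if P (p2 z) (p1 z) then 0 else 1)"
  proof -
    have "comp1 (\<lambda>z. if P (p1 z) (p2 z) then 1 else 0)" using assms(1) unfolding compP_def .
    from comp1_comp[OF this C_pr[OF C_p2[OF C_id] C_p1[OF C_id]]]
    have "comp1 (\<lambda>z. if P (p2 z) (p1 z) then 1 else 0)" by simp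
    then have "comp1 (\<lambda>z. 1 - (if P (p2 z) (p1 z) then 1 else 0))" by (rule C_minus[OF C_const])
    moreover have "(\<lambda>z. 1 - (if P (p2 z) (p1 z) then 1 else 0)) = (\<lambda>z. if P (p2 z) (p1 z) then 0 else (1::nat))"
      by (auto simp: fun_eq_iff)
    ultimately show ?thesis by simp
  qed
  then have "comp2 (\<lambda>n x. if P x n then 0 else 1)" by (rule comp2_of)
  from comp2_search[OF this] assms(2) show ?thesis by (simp add: if_split_eq1 cong: if_cong)
qed


lemma C_comp2: "comp1 (\<lambda>z. F (p1 z) (p2 z)) \<Longrightarrow> comp1 G \<Longrightarrow> comp1 H \<Longrightarrow> comp1 (\<lambda>x. F (G x) (H x))"
  by (rule comp2_comp[OF comp2_of])

lemma compP_comp2: "compP (\<lambda>z. P (p1 z) (p2 z)) \<Longrightarrow> comp1 G \<Longrightarrow> comp1 H \<Longrightarrow> compP (\<lambda>x. P (G x) (H x))"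
  unfolding compP_def by (rule C_comp2[where F="\<lambda>a b. if P a b then 1 else 0"])

lemma compP_comp1: "compP P \<Longrightarrow> comp1 G \<Longrightarrow> compP (\<lambda>x. P (G x))"
  unfolding compP_def by (drule comp1_comp) auto

lemma ball_iter:
  "((\<lambda>y. pr (Suc (p1 y)) (if P (p1 y) then p2 y else 0)) ^^ n) (pr 0 1) = pr n (if \<forall>i<n. P i then 1 else 0)"
  by (induction n) (auto simp: less_Suc_eq)

lemma P_ball[ci]:
  assumes "compP (\<lambda>z. P (p1 z) (p2 z))" "comp1 N"
  shows "compP (\<lambda>x. \<forall>i<N x. P x i)"
proof -
  have "comp1 (\<lambda>z. (\<lambda>x y. pr (Suc (p1 y)) (if P x (p1 y) then p2 y else 0)) (p1 z) (p2 z))"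
    using compP_comp2[OF assms(1) C_p1[OF C_id] C_p1[OF C_p2[OF C_id]]]
    by (auto intro!: ci)
  from C_iter[OF this assms(2) C_const[of "pr 0 1"]]
  have "comp1 (\<lambda>x. p2 (((\<lambda>y. pr (Suc (p1 y)) (if P x (p1 y) then p2 y else 0)) ^^ N x) (pr 0 1)))"
    by (rule C_p2)
  then show ?thesis unfolding ball_iter compP_def by simp
qed

lemma P_bex[ci]:
  assumes "compP (\<lambda>z. P (p1 z) (p2 z))" "comp1 N"
  shows "compP (\<lambda>x. \<exists>i<N x. P x i)"
proof -
  have "compP (\<lambda>z. \<not> P (p1 z) (p2 z))" using assms(1) by (rule P_not)
  from P_not[OF P_ball[OF this assms(2)]] show ?thesis by simp
qed

lemma P_ball_le[ci]:
  assumes "compP (\<lambda>z. P (p1 z) (p2 z))" "comp1 N"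
  shows "compP (\<lambda>x. \<forall>i\<le>N x. P x i)"
proof -
  from P_ball[OF assms(1) C_Suc[OF assms(2)]] show ?thesis by (simp add: less_Suc_eq_le)
qed

lemma P_bex_le[ci]:
  assumes "compP (\<lambda>z. P (p1 z) (p2 z))" "comp1 N"
  shows "compP (\<lambda>x. \<exists>i\<le>N x. P x i)"
proof -
  from P_bex[OF assms(1) C_Suc[OF assms(2)]] show ?thesis by (simp add: less_Suc_eq_le)
qed

fun bmax :: "(nat \<Rightarrow> nat) \<Rightarrow> nat \<Rightarrow> nat" where
  "bmax f 0 = 0"
| "bmax f (Suc n) = max (bmax f n) (f n)"

lemma bmax_ge: "i < n \<Longrightarrow> f i \<le> bmax f n"
  by (induction n) (auto simp: less_Suc_eq)

lemma bmax_iter: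
  "((\<lambda>y. pr (Suc (p1 y)) (max (p2 y) (f (p1 y)))) ^^ n) (pr 0 0) = pr n (bmax f n)"
  by (induction n) auto

lemma C_max[ci]: "comp1 F \<Longrightarrow> comp1 G \<Longrightarrow> comp1 (\<lambda>x. max (F x) (G x))"
proof -
  assume "comp1 F" "comp1 G"
  then have "comp1 (\<lambda>x. if F x \<le> G x then G x else F x)" by (intro C_if P_le)
  then show ?thesis by (simp add: max_def)
qed

lemma C_bmax[ci]:
  assumes "comp1 (\<lambda>z. F (p1 z) (p2 z))" "comp1 N"
  shows "comp1 (\<lambda>x. bmax (F x) (N x))"
proof -
  have "comp1 (\<lambda>z. (\<lambda>x y. pr (Suc (p1 y)) (max (p2 y) (F x (p1 y)))) (p1 z) (p2 z))"
    using C_comp2[OF assms(1) C_p1[OF C_id] C_p1[OF C_p2[OF C_id]]]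
    by (auto intro!: C_pr C_Suc C_max C_p1 C_p2 C_id)
  from C_p2[OF C_iter[OF this assms(2) C_const[of "pr 0 0"]]]
  show ?thesis unfolding bmax_iter by simp
qed

lemma C_least_bounded:
  assumes "compP (\<lambda>z. P (p1 z) (p2 z))" "comp1 N"
  shows "comp1 (\<lambda>x. LEAST n. P x n \<or> N x \<le> n)"
proof (rule C_least)
  show "compP (\<lambda>z. P (p1 z) (p2 z) \<or> N (p1 z) \<le> p2 z)"
    using assms by (intro P_or P_le comp1_comp[OF assms(2)] C_p1 C_p2 C_id)
  show "\<exists>n. P x n \<or> N x \<le> n" for x by auto
qed

lemma C_div[ci]: "comp1 F \<Longrightarrow> comp1 G \<Longrightarrow> comp1 (\<lambda>x. F x div G x)"
proof -
  assume f: "comp1 F" and g: "comp1 G"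
  have "compP (\<lambda>z. p2 (p1 z) < p1 (p1 z) * Suc (p2 z))" by (intro ci)
  from C_least_bounded[OF this C_p2[OF C_id]]
  have c: "comp1 (\<lambda>z. LEAST q. p2 z < p1 z * Suc q \<or> p2 z \<le> q)" by simp
  have e: "(LEAST q. x < y * Suc q \<or> x \<le> q) = x div y" if "y \<noteq> 0" for x y :: nat
  proof (rule Least_equality)
    show "x < y * Suc (x div y) \<or> x \<le> x div y"
      using that by (simp add: dividend_less_times_div)
    fix q assume "x < y * Suc q \<or> x \<le> q"
    then show "x div y \<le> q"
    proof
      assume "x < y * Suc q"
      then have "x div y < Suc q" using that by (simp add: div_less_iff_less_mult mult.commute)
      then show ?thesis by simp
    next
      assume "x \<le> q" then show ?thesis using div_le_dividend[of x y] by linarith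
    qed
  qed
  have "comp1 (\<lambda>x. if G x = 0 then 0 else (\<lambda>a b. LEAST q. b < a * Suc q \<or> b \<le> q) (G x) (F x))"
    by (intro C_if P_eq g C_const C_comp2[OF c g f])
  moreover have "(\<lambda>x. if G x = 0 then 0 else (\<lambda>a b. LEAST q. b < a * Suc q \<or> b \<le> q) (G x) (F x)) = (\<lambda>x. F x div G x)"
    using e by (auto simp: fun_eq_iff)
  ultimately show ?thesis by simp
qed

lemma C_mod[ci]: "comp1 F \<Longrightarrow> comp1 G \<Longrightarrow> comp1 (\<lambda>x. F x mod G x)"
proof -
  assume f: "comp1 F" and g: "comp1 G"
  have "comp1 (\<lambda>x. F x - G x * (F x div G x))" by (intro C_minus C_mult C_div f g)
  then show ?thesis by (simp add: minus_mult_div_eq_mod)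
qed

lemma C_pow2[ci]: "comp1 F \<Longrightarrow> comp1 (\<lambda>x. 2 ^ F x)"
proof -
  assume f: "comp1 F"
  have "comp1 (\<lambda>x. ((\<lambda>x y. 2 * y) x ^^ F x) 1)"
    by (rule C_iter[OF _ f C_const]) (auto intro!: ci)
  moreover have "((\<lambda>y. 2 * y) ^^ n) 1 = (2::nat) ^ n" for n by (induction n) auto
  ultimately show ?thesis by simp
qed

section \<open>Lists\<close>

definition lhd :: "nat \<Rightarrow> nat" where "lhd c = p1 (c - 1)"
definition ltl :: "nat \<Rightarrow> nat" where "ltl c = (if c = 0 then 0 else p2 (c - 1))"

lemma list_decode_alt: "list_decode c = (if c = 0 then [] else lhd c # list_decode (ltl c))"
  by (cases c) (auto simp: lhd_def ltl_def p1_def p2_def split: prod.split)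

lemma ltl_le: "ltl c \<le> c" unfolding ltl_def using p2_le[of "c - 1"] by auto
lemma lhd_le: "lhd c \<le> c" unfolding lhd_def using p1_le[of "c - 1"] by auto
lemma ltl_less: "c > 0 \<Longrightarrow> ltl c < c" unfolding ltl_def using p2_le[of "c - 1"] by auto

lemma C_lhd[ci]: "comp1 F \<Longrightarrow> comp1 (\<lambda>x. lhd (F x))" unfolding lhd_def by (intro ci)
lemma C_ltl[ci]: "comp1 F \<Longrightarrow> comp1 (\<lambda>x. ltl (F x))" unfolding ltl_def by (intro ci)

lemma list_decode_ltl_iter: "list_decode ((ltl ^^ i) c) = drop i (list_decode c)"
proof (induction i arbitrary: c)
  case 0 then show ?case by simp
next
  case (Suc i)
  have h: "(ltl ^^ Suc i) c = (ltl ^^ i) (ltl c)" by (simp only: funpow_Suc_right comp_def)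
  have "drop (Suc i) (list_decode c) = drop i (list_decode (ltl c))"
  proof (cases "c = 0")
    case True then show ?thesis by (simp add: ltl_def)
  next
    case False then show ?thesis using list_decode_alt[of c] by simp
  qed
  then show ?case using h Suc.IH[of "ltl c"] by simp
qed

definition lnth :: "nat \<Rightarrow> nat \<Rightarrow> nat" where "lnth c i = lhd ((ltl ^^ i) c)"
definition llen :: "nat \<Rightarrow> nat" where "llen c = length (list_decode c)"

lemma lnth_eq: "i < length (list_decode c) \<Longrightarrow> lnth c i = list_decode c ! i"
proof -
  assume i: "i < length (list_decode c)"
  let ?d = "(ltl ^^ i) c"
  have "list_decode ?d = drop i (list_decode c)" by (rule list_decode_ltl_iter)
  moreover have "drop i (list_decode c) = list_decode c ! i # drop (Suc i) (list_decode c)"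
    using i by (simp add: Cons_nth_drop_Suc)
  ultimately have "list_decode ?d \<noteq> []" and "list_decode ?d = list_decode c ! i # drop (Suc i) (list_decode c)" by auto
  moreover from this(1) have "?d \<noteq> 0" by (rule contrapos_nn) simp
  ultimately show ?thesis unfolding lnth_def using list_decode_alt[of ?d] by auto
qed

lemma lnth_encode: "i < length xs \<Longrightarrow> lnth (list_encode xs) i = xs ! i"
  using lnth_eq[of i "list_encode xs"] by simp

lemma length_list_decode_le: "length (list_decode c) \<le> c"
proof (induction c rule: less_induct)
  case (less c)
  show ?case
  proof (cases "c = 0")
    case False
    then have "length (list_decode c) = Suc (length (list_decode (ltl c)))" using list_decode_alt[of c] by simp
    moreover have "length (list_decode (ltl c)) \<le> ltl c" using less[OF ltl_less] False by simp
    moreover have "ltl c < c" using False by (simp add: ltl_less)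
    ultimately show ?thesis by linarith
  qed simp
qed

lemma llen_alt: "llen c = (LEAST n. (ltl ^^ n) c = 0 \<or> c \<le> n)"
proof (rule Least_equality[symmetric])
  have "list_decode ((ltl ^^ llen c) c) = []" unfolding llen_def list_decode_ltl_iter by simp
  then have "list_encode (list_decode ((ltl ^^ llen c) c)) = list_encode []" by simp
  then show "(ltl ^^ llen c) c = 0 \<or> c \<le> llen c" by (simp only: list_decode_inverse) simp
  fix n assume "(ltl ^^ n) c = 0 \<or> c \<le> n"
  then show "llen c \<le> n"
  proof
    assume "(ltl ^^ n) c = 0"
    then have "drop n (list_decode c) = []" using list_decode_ltl_iter[of n c] by simp
    then show ?thesis unfolding llen_def by simp
  next
    assume "c \<le> n" then show ?thesis unfolding llen_def using length_list_decode_le[of c] by simp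
  qed
qed

lemma C_ltl_iter[ci]: "comp1 F \<Longrightarrow> comp1 G \<Longrightarrow> comp1 (\<lambda>x. (ltl ^^ F x) (G x))"
  by (rule C_iter[where F="\<lambda>x. ltl"]) (auto intro!: ci)

lemma C_lnth[ci]: "comp1 F \<Longrightarrow> comp1 G \<Longrightarrow> comp1 (\<lambda>x. lnth (F x) (G x))"
  unfolding lnth_def by (intro C_lhd C_ltl_iter)

lemma C_llen[ci]: "comp1 F \<Longrightarrow> comp1 (\<lambda>x. llen (F x))"
proof -
  assume f: "comp1 F"
  have "comp1 (\<lambda>z. LEAST n. (ltl ^^ n) z = 0 \<or> z \<le> n)"
    by (rule C_least_bounded[where P="\<lambda>z n. (ltl ^^ n) z = 0" and N="\<lambda>z. z"])
       (auto intro!: ci)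
  from comp1_comp[OF this f] show ?thesis unfolding llen_alt .
qed

definition lcons :: "nat \<Rightarrow> nat \<Rightarrow> nat" where "lcons a c = Suc (pr a c)"
lemma lcons_eq: "lcons a (list_encode xs) = list_encode (a # xs)" by (simp add: lcons_def pr_def)
lemma C_lcons[ci]: "comp1 F \<Longrightarrow> comp1 G \<Longrightarrow> comp1 (\<lambda>x. lcons (F x) (G x))"
  unfolding lcons_def by (intro ci)

lemma lbuild_iter:
  "((\<lambda>y. pr (Suc (p1 y)) (lcons (f (n - Suc (p1 y))) (p2 y))) ^^ j) (pr 0 0) = pr j (list_encode (map f [n - j..<n]))"
  if "j \<le> n" for n
  using that
proof (induction j)
  case 0 then show ?case by simp
next
  case (Suc j)
  then have "[n - Suc j..<n] = (n - Suc j) # [n - j..<n]"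
  proof -
    have a: "n - Suc j < n" and b: "Suc (n - Suc j) = n - j" using Suc.prems by auto
    show ?thesis using upt_conv_Cons[OF a] unfolding b .
  qed
  with Suc show ?case by (simp add: lcons_eq)
qed

lemma C_lbuild[ci]:
  assumes "comp1 (\<lambda>z. F (p1 z) (p2 z))" "comp1 N"
  shows "comp1 (\<lambda>x. list_encode (map (F x) [0..<N x]))"
proof -
  have "comp1 (\<lambda>z. (\<lambda>x y. pr (Suc (p1 y)) (lcons (F x (N x - Suc (p1 y))) (p2 y))) (p1 z) (p2 z))"
    using C_comp2[OF assms(1) C_p1[OF C_id] C_minus[OF comp1_comp[OF assms(2) C_p1[OF C_id]] C_Suc[OF C_p1[OF C_p2[OF C_id]]]]]
    by (auto intro!: C_pr C_Suc C_lcons C_p1 C_p2 C_id)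
  from C_p2[OF C_iter[OF this assms(2) C_const[of "pr 0 0"]]]
  show ?thesis using lbuild_iter[of "N x" "N x" "F x" for x] by simp
qed


section \<open>Step-bounded evaluation\<close>

fun prc :: "nat option \<Rightarrow> (nat \<Rightarrow> nat \<Rightarrow> nat option) \<Rightarrow> nat \<Rightarrow> nat option" where
  "prc a H 0 = a"
| "prc a H (Suc m) = (case prc a H m of None \<Rightarrow> None | Some y \<Rightarrow> H y m)"

fun msrch :: "(nat \<Rightarrow> nat option) \<Rightarrow> nat \<Rightarrow> nat" where
  "msrch F 0 = 0"
| "msrch F (Suc j) = (if msrch F j = 0 then (case F j of None \<Rightarrow> 1 | Some v \<Rightarrow> if v = 0 then Suc (Suc j) else 0) else msrch F j)"

fun clk :: "recf \<Rightarrow> nat \<Rightarrow> nat list \<Rightarrow> nat option" where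
  "clk Zr t xs = Some 0"
| "clk Sc t xs = (case xs of [] \<Rightarrow> None | x # _ \<Rightarrow> Some (Suc x))"
| "clk (Pj i) t xs = (if i < length xs then Some (xs ! i) else None)"
| "clk (Cn f gs) t xs = (if (\<forall>g\<in>set gs. clk g t xs \<noteq> None) then clk f t (map (\<lambda>g. the (clk g t xs)) gs) else None)"
| "clk (Pr g h) t xs = (case xs of [] \<Rightarrow> None | n # ys \<Rightarrow> prc (clk g t ys) (\<lambda>y m. clk h t (y # m # ys)) n)"
| "clk (Mn f) t xs = (let s = msrch (\<lambda>m. clk f t (m # xs)) t in if 2 \<le> s then Some (s - 2) else None)"


lemma msrch_zero: "(\<forall>m<j. \<exists>v>0. F m = Some v) \<Longrightarrow> msrch F j = 0"
  by (induction j) auto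

lemma msrch_zeroD: "msrch F j = 0 \<Longrightarrow> \<forall>m<j. \<exists>v>0. F m = Some v"
proof (induction j)
  case (Suc j)
  then have a: "msrch F j = 0" by (auto split: if_splits)
  with Suc.prems have "\<exists>v>0. F j = Some v" by (auto split: option.splits if_splits)
  with Suc.IH[OF a] show ?case by (auto simp: less_Suc_eq)
qed simp

lemma msrch_found: "msrch F j = Suc (Suc n) \<Longrightarrow> n < j \<and> F n = Some 0 \<and> (\<forall>m<n. \<exists>v>0. F m = Some v)"
proof (induction j)
  case (Suc j)
  show ?case
  proof (cases "msrch F j = 0")
    case True
    with Suc.prems have "n = j" "F j = Some 0" by (auto split: option.splits if_splits)
    with msrch_zeroD[OF True] show ?thesis by auto
  next
    case False
    with Suc.prems have "msrch F j = Suc (Suc n)" by simp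
    with Suc.IH show ?thesis by auto
  qed
qed simp

lemma msrch_find: "F n = Some 0 \<Longrightarrow> (\<forall>m<n. \<exists>v>0. F m = Some v) \<Longrightarrow> n < j \<Longrightarrow> msrch F j = Suc (Suc n)"
proof (induction j)
  case (Suc j)
  show ?case
  proof (cases "n < j")
    case True then show ?thesis using Suc by simp
  next
    case False then have "n = j" using Suc.prems by simp
    with msrch_zero[OF Suc.prems(2)] Suc.prems(1) show ?thesis by simp
  qed
qed simp

lemma clk_Pr_Suc: "clk (Pr g h) t (Suc n # xs) = (case clk (Pr g h) t (n # xs) of None \<Rightarrow> None | Some y \<Rightarrow> clk h t (y # n # xs))"
  by simp

lemma list_all2_map_self: "(\<forall>g\<in>set gs. P g (F g)) \<Longrightarrow> list_all2 P gs (map F gs)"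
  by (induction gs) auto

lemma clk_sound: "clk r t xs = Some v \<Longrightarrow> eval r xs v"
proof (induction r arbitrary: xs v)
  case Zr then show ?case by (auto intro: ev_Zr)
next
  case Sc then show ?case by (auto intro: ev_Sc split: list.splits)
next
  case (Pj i) then show ?case by (auto intro: ev_Pj split: if_splits)
next
  case (Cn f gs)
  from Cn.prems have a: "\<forall>g\<in>set gs. clk g t xs \<noteq> None" and b: "clk f t (map (\<lambda>g. the (clk g t xs)) gs) = Some v"
    by (auto split: if_splits)
  have "list_all2 (\<lambda>g y. eval g xs y) gs (map (\<lambda>g. the (clk g t xs)) gs)"
    using a Cn.IH(2) by (intro list_all2_map_self) auto
  from this Cn.IH(1)[OF b] show ?case by (rule ev_Cn)
next
  case (Pr g h)
  from Pr.prems obtain n ys where xs: "xs = n # ys" by (cases xs) auto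
  have "clk (Pr g h) t (n # ys) = Some v \<Longrightarrow> eval (Pr g h) (n # ys) v" for v
  proof (induction n arbitrary: v)
    case 0 then show ?case using Pr.IH(1) by (auto intro: ev_Pr0)
  next
    case (Suc n)
    from Suc.prems obtain y where "clk (Pr g h) t (n # ys) = Some y" "clk h t (y # n # ys) = Some v"
      by (auto simp only: clk_Pr_Suc split: option.splits)
    with Suc.IH Pr.IH(2) show ?case by (blast intro: ev_PrS)
  qed
  with Pr.prems xs show ?case by simp
next
  case (Mn f)
  let ?F = "\<lambda>m. clk f t (m # xs)"
  from Mn.prems have "msrch ?F t = Suc (Suc v)" by (auto simp: Let_def split: if_splits)
  from msrch_found[OF this] Mn.IH show ?case by (blast intro: ev_Mn)
qed

lemma clk_mono: "clk r t xs = Some v \<Longrightarrow> t \<le> t' \<Longrightarrow> clk r t' xs = Some v"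
proof (induction r arbitrary: xs v)
  case (Cn f gs)
  from Cn.prems have a: "\<forall>g\<in>set gs. clk g t xs \<noteq> None" and b: "clk f t (map (\<lambda>g. the (clk g t xs)) gs) = Some v"
    by (auto split: if_splits)
  have c: "\<forall>g\<in>set gs. clk g t' xs = clk g t xs" using a Cn.IH(2) Cn.prems(2) by force
  then have m: "map (\<lambda>g. the (clk g t' xs)) gs = map (\<lambda>g. the (clk g t xs)) gs" by simp
  have "clk (Cn f gs) t' xs = clk f t' (map (\<lambda>g. the (clk g t' xs)) gs)" using a c by simp
  also have "\<dots> = Some v" unfolding m by (rule Cn.IH(1)[OF b Cn.prems(2)])
  finally show ?case .
next
  case (Pr g h)
  from Pr.prems obtain n ys where xs: "xs = n # ys" by (cases xs) auto
  have "clk (Pr g h) t (n # ys) = Some v \<Longrightarrow> clk (Pr g h) t' (n # ys) = Some v" for v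
  proof (induction n arbitrary: v)
    case 0 then show ?case using Pr.IH(1) Pr.prems(2) by auto
  next
    case (Suc n)
    from Suc.prems obtain y where "clk (Pr g h) t (n # ys) = Some y" "clk h t (y # n # ys) = Some v"
      by (auto simp only: clk_Pr_Suc split: option.splits)
    with Suc.IH Pr.IH(2) Pr.prems(2) show ?case by (simp only: clk_Pr_Suc) simp
  qed
  with Pr.prems xs show ?case by simp
next
  case (Mn f)
  let ?F = "\<lambda>m. clk f t (m # xs)"
  let ?F' = "\<lambda>m. clk f t' (m # xs)"
  from Mn.prems have "msrch ?F t = Suc (Suc v)" by (auto simp: Let_def split: if_splits)
  from msrch_found[OF this] have h: "v < t" "?F v = Some 0" "\<forall>m<v. \<exists>w>0. ?F m = Some w" by auto
  have "?F' v = Some 0" using h(2) Mn.IH Mn.prems(2) by blast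
  moreover have "\<forall>m<v. \<exists>w>0. ?F' m = Some w" using h(3) Mn.IH Mn.prems(2) by blast
  ultimately have "msrch ?F' t' = Suc (Suc v)" using h(1) Mn.prems(2) by (intro msrch_find) auto
  then show ?case by (simp add: Let_def)
qed auto

lemma ex_bound_fin: "(\<forall>m<(n::nat). \<exists>t::nat. \<forall>t'\<ge>t. P m t') \<Longrightarrow> \<exists>t. \<forall>m<n. \<forall>t'\<ge>t. P m t'"
proof (induction n)
  case (Suc n)
  then obtain t1 where t1: "\<forall>m<n. \<forall>t'\<ge>t1. P m t'" by auto
  from Suc.prems obtain t2 where t2: "\<forall>t'\<ge>t2. P n t'" by auto
  show ?case by (rule exI[of _ "max t1 t2"]) (use t1 t2 in \<open>auto simp: less_Suc_eq\<close>)
qed simp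

lemma clk_complete: "eval r xs v \<Longrightarrow> \<exists>t. \<forall>t'\<ge>t. clk r t' xs = Some v"
proof (induction r xs v rule: eval.induct)
  case (ev_Cn xs gs ys f z)
  have len: "length ys = length gs" using ev_Cn.IH(1) by (simp add: list_all2_lengthD)
  have "\<forall>m<length gs. \<exists>t. \<forall>t'\<ge>t. clk (gs ! m) t' xs = Some (ys ! m)"
    using ev_Cn.IH(1) by (auto simp: list_all2_conv_all_nth)
  from ex_bound_fin[OF this] obtain t1 where t1: "\<forall>m<length gs. \<forall>t'\<ge>t1. clk (gs ! m) t' xs = Some (ys ! m)" by blast
  from ev_Cn.IH(2) obtain t2 where t2: "\<forall>t'\<ge>t2. clk f t' ys = Some z" by blast
  have "clk (Cn f gs) t' xs = Some z" if "t' \<ge> max t1 t2" for t'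
  proof -
    have "\<forall>g\<in>set gs. clk g t' xs \<noteq> None" using t1 that by (auto simp: in_set_conv_nth)
    moreover have "map (\<lambda>g. the (clk g t' xs)) gs = ys" using t1 that len by (auto intro!: nth_equalityI)
    ultimately show ?thesis using t2 that by simp
  qed
  then show ?case by blast
next
  case (ev_PrS g h n xs y z)
  then obtain t1 t2 where "\<forall>t'\<ge>t1. clk (Pr g h) t' (n # xs) = Some y" "\<forall>t'\<ge>t2. clk h t' (y # n # xs) = Some z" by blast
  then have "\<forall>t'\<ge>max t1 t2. clk (Pr g h) t' (Suc n # xs) = Some z" by (simp only: clk_Pr_Suc) simp
  then show ?case by blast
next
  case (ev_Mn f n xs)
  from ev_Mn.IH(1) obtain t1 where t1: "\<forall>t'\<ge>t1. clk f t' (n # xs) = Some 0" by blast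
  have "\<forall>m<n. \<exists>t. \<forall>t'\<ge>t. \<exists>v>0. clk f t' (m # xs) = Some v"
    using ev_Mn.IH(2) by metis
  from ex_bound_fin[OF this] obtain t2 where t2: "\<forall>m<n. \<forall>t'\<ge>t2. \<exists>v>0. clk f t' (m # xs) = Some v" by blast
  have "clk (Mn f) t' xs = Some n" if "t' \<ge> max (max t1 t2) (Suc n)" for t'
  proof -
    have "msrch (\<lambda>m. clk f t' (m # xs)) t' = Suc (Suc n)"
      using t1 t2 that by (intro msrch_find) auto
    then show ?thesis by (simp add: Let_def)
  qed
  then show ?case by blast
qed auto

lemma clk_eval: "eval r xs v \<longleftrightarrow> (\<exists>t. clk r t xs = Some v)"
  using clk_sound clk_complete by blast


definition enc :: "nat option \<Rightarrow> nat" where "enc a = (case a of None \<Rightarrow> 0 | Some v \<Rightarrow> Suc v)"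

lemma enc_simps[simp]: "enc None = 0" "enc (Some v) = Suc v" by (simp_all add: enc_def)
lemma enc_0_iff[simp]: "enc a = 0 \<longleftrightarrow> a = None" by (cases a) auto
lemma enc_Suc: "a \<noteq> None \<Longrightarrow> enc a - 1 = the a" by (cases a) auto

definition cenc :: "recf \<Rightarrow> nat \<Rightarrow> nat" where
  "cenc r z = enc (clk r (p1 z) (list_decode (p2 z)))"

lemma llen_eq: "llen c = length (list_decode c)" by (simp add: llen_def)
lemma ltl_decode: "list_decode (ltl c) = tl (list_decode c)"
  using list_decode_alt[of c] by (cases "c = 0") (auto simp: ltl_def)

lemma lcons_decode: "list_decode (lcons a c) = a # list_decode c"
proof -
  have "lcons a c = list_encode (a # list_decode c)" using lcons_eq[of a "list_decode c"] by simp
  then show ?thesis by simp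
qed

lemma comp_list_map: "(\<forall>g\<in>set gs. comp1 (F g)) \<Longrightarrow> comp1 (\<lambda>z. list_encode (map (\<lambda>g. F g z) gs))"
proof (induction gs)
  case Nil then show ?case by (simp add: C_const)
next
  case (Cons g gs)
  then have "comp1 (\<lambda>z. lcons (F g z) (list_encode (map (\<lambda>g. F g z) gs)))" by (intro C_lcons) auto
  then show ?case by (simp add: lcons_eq)
qed

lemma comp_list_all: "(\<forall>g\<in>set gs. comp1 (F g)) \<Longrightarrow> compP (\<lambda>z. \<forall>g\<in>set gs. F g z \<noteq> 0)"
proof (induction gs)
  case Nil then show ?case by (simp add: P_const)
next
  case (Cons g gs)
  then have "compP (\<lambda>z. \<not> F g z = 0 \<and> (\<forall>g\<in>set gs. F g z \<noteq> 0))" by (intro P_and P_not P_eq C_const) auto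
  then show ?case by simp
qed

lemma prc_iter:
  "((\<lambda>y. pr (Suc (p1 y)) (if p2 y = 0 then 0 else enc (H (p2 y - 1) (p1 y)))) ^^ n) (pr 0 (enc a))
   = pr n (enc (prc a H n))"
  by (induction n) (auto simp: enc_Suc split: option.splits)

lemma msrch_iter:
  "((\<lambda>y. pr (Suc (p1 y)) (if p2 y = 0 then (if enc (F (p1 y)) = 0 then 1 else if enc (F (p1 y)) = 1 then Suc (Suc (p1 y)) else 0) else p2 y)) ^^ n) (pr 0 0)
   = pr n (msrch F n)"
proof (induction n)
  case (Suc n)
  then show ?case by (cases "F n") auto
qed simp

lemma comp_cenc: "comp1 (cenc r)"
proof (induction r)
  case Zr
  have "cenc Zr = (\<lambda>z. 1)" by (auto simp: cenc_def fun_eq_iff)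
  then show ?case by (simp add: C_const)
next
  case Sc
  have "cenc Sc = (\<lambda>z. if llen (p2 z) = 0 then 0 else Suc (Suc (lnth (p2 z) 0)))"
    by (auto simp: cenc_def fun_eq_iff llen_eq lnth_eq hd_conv_nth split: list.splits)
  moreover have "comp1 (\<lambda>z. if llen (p2 z) = 0 then 0 else Suc (Suc (lnth (p2 z) 0)))" by (intro ci)
  ultimately show ?case by simp
next
  case (Pj i)
  have "cenc (Pj i) = (\<lambda>z. if i < llen (p2 z) then Suc (lnth (p2 z) i) else 0)"
    by (auto simp: cenc_def fun_eq_iff llen_eq lnth_eq)
  moreover have "comp1 (\<lambda>z. if i < llen (p2 z) then Suc (lnth (p2 z) i) else 0)" by (intro ci)
  ultimately show ?case by simp
next
  case (Cn f gs)
  have e: "cenc (Cn f gs) = (\<lambda>z. if (\<forall>g\<in>set gs. cenc g z \<noteq> 0) then cenc f (pr (p1 z) (list_encode (map (\<lambda>g. cenc g z - 1) gs))) else 0)"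
  proof (rule ext)
    fix z
    show "cenc (Cn f gs) z = (if (\<forall>g\<in>set gs. cenc g z \<noteq> 0) then cenc f (pr (p1 z) (list_encode (map (\<lambda>g. cenc g z - 1) gs))) else 0)"
    proof (cases "\<forall>g\<in>set gs. cenc g z \<noteq> 0")
      case True
      then have a: "\<forall>g\<in>set gs. clk g (p1 z) (list_decode (p2 z)) \<noteq> None" by (simp add: cenc_def)
      have m: "map (\<lambda>g. cenc g z - 1) gs = map (\<lambda>g. the (clk g (p1 z) (list_decode (p2 z)))) gs"
        using a by (auto simp: cenc_def enc_Suc)
      have "cenc (Cn f gs) z = cenc f (pr (p1 z) (list_encode (map (\<lambda>g. the (clk g (p1 z) (list_decode (p2 z)))) gs)))"
        using a by (simp add: cenc_def)
      then show ?thesis using True unfolding m by simp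
    next
      case False
      then show ?thesis by (auto simp: cenc_def)
    qed
  qed
  have c1: "\<forall>g\<in>set gs. comp1 (\<lambda>z. cenc g z - 1)" using Cn.IH(2) by (auto intro: C_minus C_const)
  have "comp1 (\<lambda>z. if (\<forall>g\<in>set gs. cenc g z \<noteq> 0) then cenc f (pr (p1 z) (list_encode (map (\<lambda>g. cenc g z - 1) gs))) else 0)"
    using Cn.IH by (intro C_if comp_list_all comp1_comp[OF Cn.IH(1)] C_pr C_p1 C_id C_const comp_list_map[OF c1]) auto
  then show ?case unfolding e .
next
  case (Pr g h)
  let ?H = "\<lambda>z y m. clk h (p1 z) (y # m # tl (list_decode (p2 z)))"
  let ?st = "\<lambda>z y. pr (Suc (p1 y)) (if p2 y = 0 then 0 else enc (?H z (p2 y - 1) (p1 y)))"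
  have e: "cenc (Pr g h) = (\<lambda>z. if llen (p2 z) = 0 then 0 else p2 ((?st z ^^ lnth (p2 z) 0) (pr 0 (cenc g (pr (p1 z) (ltl (p2 z)))))))"
  proof (rule ext)
    fix z
    show "cenc (Pr g h) z = (if llen (p2 z) = 0 then 0 else p2 ((?st z ^^ lnth (p2 z) 0) (pr 0 (cenc g (pr (p1 z) (ltl (p2 z)))))))"
    proof (cases "list_decode (p2 z)")
      case Nil then show ?thesis by (simp add: cenc_def llen_eq)
    next
      case (Cons n ys)
      have "cenc g (pr (p1 z) (ltl (p2 z))) = enc (clk g (p1 z) ys)" by (simp add: cenc_def ltl_decode Cons)
      moreover have "lnth (p2 z) 0 = n" using Cons lnth_eq[of 0 "p2 z"] by simp
      moreover have tl: "tl (list_decode (p2 z)) = ys" using Cons by simp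
      ultimately show ?thesis unfolding tl
        using prc_iter[where H="\<lambda>y m. clk h (p1 z) (y # m # ys)" and n=n and a="clk g (p1 z) ys"]
        by (simp add: cenc_def llen_eq Cons)
    qed
  qed
  have eh: "enc (?H z y m) = cenc h (pr (p1 z) (lcons y (lcons m (ltl (p2 z)))))" for z y m
    by (simp add: cenc_def ltl_decode lcons_decode)
  have "comp1 (\<lambda>w. pr (Suc (p1 (p2 w))) (if p2 (p2 w) = 0 then 0 else cenc h (pr (p1 (p1 w)) (lcons (p2 (p2 w) - 1) (lcons (p1 (p2 w)) (ltl (p2 (p1 w))))))))"
    by (intro ci comp1_comp[OF Pr.IH(2)])
  then have st: "comp1 (\<lambda>w. ?st (p1 w) (p2 w))" by (simp only: eh)
  have "comp1 (\<lambda>z. if llen (p2 z) = 0 then 0 else p2 ((?st z ^^ lnth (p2 z) 0) (pr 0 (cenc g (pr (p1 z) (ltl (p2 z)))))))"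
    by (intro C_if P_eq C_llen C_p2 C_id C_const C_iter[OF st] C_lnth C_pr comp1_comp[OF Pr.IH(1)] C_p1 C_ltl)
  then show ?case unfolding e .
next
  case (Mn f)
  let ?F = "\<lambda>z m. clk f (p1 z) (m # list_decode (p2 z))"
  let ?st = "\<lambda>z y. pr (Suc (p1 y)) (if p2 y = 0 then (if enc (?F z (p1 y)) = 0 then 1 else if enc (?F z (p1 y)) = 1 then Suc (Suc (p1 y)) else 0) else p2 y)"
  have e: "cenc (Mn f) = (\<lambda>z. let s = p2 ((?st z ^^ p1 z) (pr 0 0)) in if 2 \<le> s then Suc (s - 2) else 0)"
  proof (rule ext)
    fix z
    show "cenc (Mn f) z = (let s = p2 ((?st z ^^ p1 z) (pr 0 0)) in if 2 \<le> s then Suc (s - 2) else 0)"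
      using msrch_iter[where F="\<lambda>m. clk f (p1 z) (m # list_decode (p2 z))" and n="p1 z"]
      by (simp add: cenc_def Let_def)
  qed
  have ef: "enc (?F z m) = cenc f (pr (p1 z) (lcons m (p2 z)))" for z m
    by (simp add: cenc_def lcons_decode)
  have "comp1 (\<lambda>w. pr (Suc (p1 (p2 w))) (if p2 (p2 w) = 0 then (if cenc f (pr (p1 (p1 w)) (lcons (p1 (p2 w)) (p2 (p1 w)))) = 0 then 1 else if cenc f (pr (p1 (p1 w)) (lcons (p1 (p2 w)) (p2 (p1 w)))) = 1 then Suc (Suc (p1 (p2 w))) else 0) else p2 (p2 w)))"
    by (intro ci comp1_comp[OF Mn.IH])
  then have st: "comp1 (\<lambda>w. ?st (p1 w) (p2 w))" by (simp only: ef)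
  have "comp1 (\<lambda>z. if 2 \<le> p2 ((?st z ^^ p1 z) (pr 0 0)) then Suc (p2 ((?st z ^^ p1 z) (pr 0 0)) - 2) else 0)"
    by (intro C_if P_le C_const C_Suc C_minus C_p2 C_iter[OF st] C_p1 C_id)
  then show ?case unfolding e Let_def .
qed


section \<open>Rational arithmetic on codes\<close>

definition qP :: "nat \<Rightarrow> nat" where "qP q = p1 q"
definition qN :: "nat \<Rightarrow> nat" where "qN q = p1 (p2 q)"
definition qD :: "nat \<Rightarrow> nat" where "qD q = Suc (p2 (p2 q))"
definition qmk :: "nat \<Rightarrow> nat \<Rightarrow> nat \<Rightarrow> nat" where "qmk P N D = pr P (pr N (D - 1))"
definition qv :: "nat \<Rightarrow> real" where "qv q = (real (qP q) - real (qN q)) / real (qD q)"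

lemma qD_pos: "0 < qD q" by (simp add: qD_def)
lemma qmk_simps[simp]: "qP (qmk P N D) = P" "qN (qmk P N D) = N" "0 < D \<Longrightarrow> qD (qmk P N D) = D"
  by (auto simp: qP_def qN_def qD_def qmk_def)

lemma qv_qmk: "0 < D \<Longrightarrow> qv (qmk P N D) = (real P - real N) / real D" by (simp add: qv_def)

definition qadd :: "nat \<Rightarrow> nat \<Rightarrow> nat" where
  "qadd a b = qmk (qP a * qD b + qP b * qD a) (qN a * qD b + qN b * qD a) (qD a * qD b)"
definition qmul :: "nat \<Rightarrow> nat \<Rightarrow> nat" where
  "qmul a b = qmk (qP a * qP b + qN a * qN b) (qP a * qN b + qN a * qP b) (qD a * qD b)"
definition qneg :: "nat \<Rightarrow> nat" where "qneg a = qmk (qN a) (qP a) (qD a)"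
definition qsub :: "nat \<Rightarrow> nat \<Rightarrow> nat" where "qsub a b = qadd a (qneg b)"
definition qnat :: "nat \<Rightarrow> nat" where "qnat n = qmk n 0 1"
definition qinv2 :: "nat \<Rightarrow> nat" where "qinv2 k = qmk 1 0 (2 ^ k)"
definition qle :: "nat \<Rightarrow> nat \<Rightarrow> bool" where
  "qle a b \<longleftrightarrow> qP a * qD b + qN b * qD a \<le> qP b * qD a + qN a * qD b"
definition qlt :: "nat \<Rightarrow> nat \<Rightarrow> bool" where
  "qlt a b \<longleftrightarrow> qP a * qD b + qN b * qD a < qP b * qD a + qN a * qD b"

lemma qv_add[simp]: "qv (qadd a b) = qv a + qv b"
  using qD_pos[of a] qD_pos[of b]
  by (simp add: qadd_def qv_qmk qv_def field_simps)

lemma qv_mul[simp]: "qv (qmul a b) = qv a * qv b"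
  using qD_pos[of a] qD_pos[of b]
  by (simp add: qmul_def qv_qmk qv_def field_simps)

lemma qv_neg[simp]: "qv (qneg a) = - qv a"
  using qD_pos[of a] by (simp add: qneg_def qv_qmk qv_def field_simps)

lemma qv_sub[simp]: "qv (qsub a b) = qv a - qv b" by (simp add: qsub_def)
lemma qv_nat[simp]: "qv (qnat n) = real n" by (simp add: qnat_def qv_qmk)
lemma qv_inv2[simp]: "qv (qinv2 k) = (1/2) ^ k" by (simp add: qinv2_def qv_qmk power_one_over)

lemma qle_iff[simp]: "qle a b \<longleftrightarrow> qv a \<le> qv b"
proof -
  have da: "real (qD a) > 0" and db: "real (qD b) > 0" using qD_pos by auto
  have "qv a \<le> qv b \<longleftrightarrow> (real (qP a) - real (qN a)) * real (qD b) \<le> (real (qP b) - real (qN b)) * real (qD a)"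
    unfolding qv_def using da db by (simp add: divide_le_eq le_divide_eq field_simps)
  also have "\<dots> \<longleftrightarrow> real (qP a * qD b + qN b * qD a) \<le> real (qP b * qD a + qN a * qD b)"
    by (simp add: algebra_simps)
  finally show ?thesis unfolding qle_def of_nat_le_iff by simp
qed

lemma qlt_iff[simp]: "qlt a b \<longleftrightarrow> qv a < qv b"
proof -
  have da: "real (qD a) > 0" and db: "real (qD b) > 0" using qD_pos by auto
  have "qv a < qv b \<longleftrightarrow> (real (qP a) - real (qN a)) * real (qD b) < (real (qP b) - real (qN b)) * real (qD a)"
    unfolding qv_def using da db by (simp add: divide_less_eq less_divide_eq field_simps)
  also have "\<dots> \<longleftrightarrow> real (qP a * qD b + qN b * qD a) < real (qP b * qD a + qN a * qD b)"
    by (simp add: algebra_simps)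
  finally show ?thesis unfolding qlt_def of_nat_less_iff by simp
qed

lemma C_qP[ci]: "comp1 F \<Longrightarrow> comp1 (\<lambda>x. qP (F x))" unfolding qP_def by (intro ci)
lemma C_qN[ci]: "comp1 F \<Longrightarrow> comp1 (\<lambda>x. qN (F x))" unfolding qN_def by (intro ci)
lemma C_qD[ci]: "comp1 F \<Longrightarrow> comp1 (\<lambda>x. qD (F x))" unfolding qD_def by (intro ci)
lemma C_qmk[ci]: "comp1 F \<Longrightarrow> comp1 G \<Longrightarrow> comp1 H \<Longrightarrow> comp1 (\<lambda>x. qmk (F x) (G x) (H x))" unfolding qmk_def by (intro ci)
lemma C_qadd[ci]: "comp1 F \<Longrightarrow> comp1 G \<Longrightarrow> comp1 (\<lambda>x. qadd (F x) (G x))" unfolding qadd_def by (intro ci)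
lemma C_qmul[ci]: "comp1 F \<Longrightarrow> comp1 G \<Longrightarrow> comp1 (\<lambda>x. qmul (F x) (G x))" unfolding qmul_def by (intro ci)
lemma C_qneg[ci]: "comp1 F \<Longrightarrow> comp1 (\<lambda>x. qneg (F x))" unfolding qneg_def by (intro ci)
lemma C_qsub[ci]: "comp1 F \<Longrightarrow> comp1 G \<Longrightarrow> comp1 (\<lambda>x. qsub (F x) (G x))" unfolding qsub_def by (intro ci)
lemma C_qnat[ci]: "comp1 F \<Longrightarrow> comp1 (\<lambda>x. qnat (F x))" unfolding qnat_def by (intro ci)
lemma C_qinv2[ci]: "comp1 F \<Longrightarrow> comp1 (\<lambda>x. qinv2 (F x))" unfolding qinv2_def by (intro ci)
lemma P_qle[ci]: "comp1 F \<Longrightarrow> comp1 G \<Longrightarrow> compP (\<lambda>x. qle (F x) (G x))" unfolding qle_def by (intro ci)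
lemma P_qlt[ci]: "comp1 F \<Longrightarrow> comp1 G \<Longrightarrow> compP (\<lambda>x. qlt (F x) (G x))" unfolding qlt_def by (intro ci)

definition qrat :: "nat \<Rightarrow> nat" where
  "qrat k = qmk (if p1 k mod 2 = 0 then p1 k div 2 else 0) (if p1 k mod 2 = 0 then 0 else p1 k div 2 + 1) (Suc (p2 k))"

lemma C_qrat[ci]: "comp1 F \<Longrightarrow> comp1 (\<lambda>x. qrat (F x))" unfolding qrat_def by (intro ci)

lemma int_decode_alt: "int_decode a = (if a mod 2 = 0 then int (a div 2) else - int (a div 2) - 1)"
  unfolding int_decode_def sum_decode_def
  by (cases "even a") (auto simp: even_iff_mod_2_eq_zero odd_iff_mod_2_eq_one)

lemma qv_qrat: "qv (qrat k) = real_of_rat (rat_dec k)"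
proof -
  have rd: "rat_dec k = Fract (int_decode (p1 k)) (int (p2 k) + 1)"
    by (simp add: rat_dec_def p1_def p2_def split: prod.split)
  have "real_of_rat (rat_dec k) = real_of_int (int_decode (p1 k)) / (real (p2 k) + 1)"
    unfolding rd by (simp add: Fract_of_int_quotient of_rat_divide of_rat_add)
  then show ?thesis
    by (auto simp: qrat_def qv_qmk int_decode_alt add.commute)
qed

definition qzero :: nat where "qzero = qnat 0"
lemma qv_zero[simp]: "qv qzero = 0" by (simp add: qzero_def)

definition qcomp :: "nat \<Rightarrow> nat \<Rightarrow> nat" where
  "qcomp jn c = (if jn < llen c then qrat (lnth c jn) else qzero)"

lemma C_qcomp[ci]: "comp1 F \<Longrightarrow> comp1 (\<lambda>x. qcomp jn (F x))" unfolding qcomp_def qzero_def by (intro ci)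

lemma qv_qcomp: "qv (qcomp (to_nat j) c) = vec_dec c $ j"
  by (simp add: qcomp_def vec_dec_def llen_eq lnth_eq qv_qrat Let_def)

definition jl :: "'n::finite list" where "jl = (SOME l. distinct l \<and> set l = UNIV)"
lemma jl: "distinct (jl :: 'n::finite list)" "set (jl :: 'n::finite list) = UNIV"
proof -
  have "\<exists>l. distinct l \<and> set l = (UNIV :: 'n set)" using finite_distinct_list[of "UNIV :: 'n set"] by auto
  from someI_ex[OF this] show "distinct (jl :: 'n::finite list)" "set (jl :: 'n::finite list) = UNIV"
    unfolding jl_def by auto
qed

definition qsumj :: "'n::finite list \<Rightarrow> ('n \<Rightarrow> nat) \<Rightarrow> nat" where
  "qsumj js F = foldr (\<lambda>j acc. qadd (F j) acc) js qzero"

lemma qv_qsumj: "distinct js \<Longrightarrow> qv (qsumj js F) = (\<Sum>j\<in>set js. qv (F j))"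
  by (induction js) (auto simp: qsumj_def)

lemma C_qsumj: "(\<And>j. comp1 (F j)) \<Longrightarrow> comp1 (\<lambda>x. qsumj js (\<lambda>j. F j x))"
proof (induction js)
  case Nil then show ?case by (simp add: qsumj_def qzero_def C_qnat C_const)
next
  case (Cons j js)
  then have "comp1 (\<lambda>x. qadd (F j x) (qsumj js (\<lambda>j. F j x)))" by (intro C_qadd) auto
  then show ?case by (simp add: qsumj_def)
qed

definition qdist2 :: "'n::finite itself \<Rightarrow> nat \<Rightarrow> nat \<Rightarrow> nat" where
  "qdist2 T a b = qsumj (jl :: 'n list) (\<lambda>j. qmul (qsub (qcomp (to_nat j) a) (qcomp (to_nat j) b)) (qsub (qcomp (to_nat j) a) (qcomp (to_nat j) b)))"

lemma dist_vec_sq: "(dist (x :: real ^ 'n) y)\<^sup>2 = (\<Sum>j\<in>UNIV. (x $ j - y $ j)\<^sup>2)"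
  by (simp add: dist_vec_def L2_set_def dist_real_def power2_abs sum_nonneg)

lemma qv_qdist2: "qv (qdist2 TYPE('n::finite) a b) = (dist (vec_dec a :: real ^ 'n) (vec_dec b))\<^sup>2"
  unfolding qdist2_def dist_vec_sq
  by (simp add: qv_qsumj jl qv_qcomp power2_eq_square)

lemma C_qdist2[ci]: "comp1 F \<Longrightarrow> comp1 G \<Longrightarrow> comp1 (\<lambda>x. qdist2 T (F x) (G x))"
  unfolding qdist2_def by (intro C_qsumj ci)


lemma realizer_total: "comp1 (\<lambda>z. F (p1 z) (p2 z)) \<Longrightarrow> \<exists>r. \<forall>i c. eval r [i, c] (F i c)"
  using comp2_of unfolding comp2_def by blast

lemma llen_prefix[simp]: "llen (prefix_code p n) = n"
  by (simp add: llen_eq prefix_code_def)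
lemma lnth_prefix[simp]: "e < n \<Longrightarrow> lnth (prefix_code p n) e = p e"
  by (simp add: lnth_encode prefix_code_def)

lemma realizes_total:
  assumes "\<And>i c. eval r [i, c] (F i c)"
    and "\<And>i. \<exists>n. F i (prefix_code p n) = Suc (q i)"
    and "\<And>i n. F i (prefix_code p n) = 0 \<or> F i (prefix_code p n) = Suc (q i)"
  shows "realizes r p q"
  unfolding realizes_def using assms eval_det by metis

lemma dist_le_card: "(\<And>j. \<bar>u $ j - v $ j\<bar> \<le> e) \<Longrightarrow> dist (u :: real ^ 'n) v \<le> real CARD('n) * e"
proof -
  assume h: "\<And>j. \<bar>u $ j - v $ j\<bar> \<le> e"
  have "dist u v = L2_set (\<lambda>j. dist (u $ j) (v $ j)) UNIV" by (simp add: dist_vec_def)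
  also have "\<dots> \<le> (\<Sum>j\<in>UNIV. dist (u $ j) (v $ j))" by (rule L2_set_le_sum) simp
  also have "\<dots> \<le> (\<Sum>j\<in>(UNIV::'n set). e)" by (rule sum_mono) (simp add: dist_real_def h)
  also have "\<dots> = real CARD('n) * e" by simp
  finally show ?thesis .
qed

lemma rho_dist: "rho p x \<Longrightarrow> dist (vec_dec (p i)) (x :: real ^ 'n) \<le> real CARD('n) * (1/2) ^ i"
  unfolding rho_def by (rule dist_le_card) auto

lemma ball_dec_eq: "ball_dec b = ball (vec_dec (p1 b)) (real_of_rat (rat_dec (p2 b)))"
  by (simp add: ball_dec_def p1_def p2_def split: prod.split)

definition CHa :: "'n::finite itself \<Rightarrow> nat \<Rightarrow> nat \<Rightarrow> nat \<Rightarrow> nat \<Rightarrow> bool" where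
  "CHa T b a j k \<longleftrightarrow> (let s = qsub (qrat (p2 b)) (qadd (qmul (qnat CARD('n)) (qinv2 j)) (qinv2 k))
     in qlt qzero s \<and> qlt (qdist2 T a (p1 b)) (qmul s s))"

definition chkA :: "'n::finite itself \<Rightarrow> (nat \<Rightarrow> nat) \<Rightarrow> nat \<Rightarrow> bool" where
  "chkA T f w \<longleftrightarrow> CHa T (f (2 * p1 w)) (f (2 * p1 (p2 w) + 1)) (p1 (p2 w)) (p2 (p2 w))"

lemma CHa_iff: "CHa TYPE('n::finite) b a j k \<longleftrightarrow>
   (let s = real_of_rat (rat_dec (p2 b)) - (real CARD('n) * (1/2)^j + (1/2)^k)
    in 0 < s \<and> (dist (vec_dec a :: real ^ 'n) (vec_dec (p1 b)))\<^sup>2 < s * s)"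
  unfolding CHa_def Let_def by (simp add: qv_qdist2 qv_qrat)

lemma chkA_sound:
  fixes x :: "real ^ 'n::finite"
  assumes "chkA TYPE('n) pp w" "theta (\<lambda>i. pp (2 * i)) U" "rho (\<lambda>i. pp (2 * i + 1)) x"
  shows "cball x ((1/2) ^ p2 (p2 w)) \<subseteq> U"
proof
  fix y assume y: "y \<in> cball x ((1/2) ^ p2 (p2 w))"
  define b where "b = pp (2 * p1 w)"
  define j where "j = p1 (p2 w)"
  define k where "k = p2 (p2 w)"
  define a where "a = pp (2 * j + 1)"
  define cv :: "real ^ 'n" where "cv = vec_dec (p1 b)"
  define rr where "rr = real_of_rat (rat_dec (p2 b))"
  define s where "s = rr - (real CARD('n) * (1/2)^j + (1/2)^k)"
  from assms(1) have "0 < s" "(dist (vec_dec a :: real ^ 'n) cv)\<^sup>2 < s * s"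
    unfolding chkA_def CHa_iff Let_def s_def rr_def cv_def a_def b_def j_def k_def by auto
  then have d1: "dist (vec_dec a :: real ^ 'n) cv < s"
    using power2_less_imp_less[of "dist (vec_dec a :: real ^ 'n) cv" s] by (simp add: power2_eq_square)
  have d2: "dist (vec_dec a) x \<le> real CARD('n) * (1/2)^j"
    using rho_dist[OF assms(3), of j] unfolding a_def by simp
  have d3: "dist x y \<le> (1/2)^k" using y unfolding k_def by simp
  have "dist cv y \<le> dist cv (vec_dec a) + dist (vec_dec a) x + dist x y"
    using dist_triangle[of cv y "vec_dec a"] dist_triangle[of "vec_dec a" y x] by linarith
  also have "\<dots> < rr" using d1 d2 d3 unfolding s_def by (simp add: dist_commute)
  finally have "y \<in> ball_dec b" unfolding ball_dec_eq cv_def rr_def by simp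
  then show "y \<in> U" using assms(2) unfolding theta_def b_def by blast
qed

lemma chkA_exists:
  fixes x :: "real ^ 'n::finite"
  assumes "x \<in> U" "theta (\<lambda>i. pp (2 * i)) U" "rho (\<lambda>i. pp (2 * i + 1)) x"
  shows "\<exists>w. chkA TYPE('n) pp w"
proof -
  from assms(1,2) obtain ib where "x \<in> ball_dec (pp (2 * ib))" unfolding theta_def by blast
  define b where "b = pp (2 * ib)"
  define cv :: "real ^ 'n" where "cv = vec_dec (p1 b)"
  define rr where "rr = real_of_rat (rat_dec (p2 b))"
  have "dist cv x < rr" using \<open>x \<in> ball_dec (pp (2 * ib))\<close> unfolding ball_dec_eq cv_def rr_def b_def by simp
  define d where "d = rr - dist cv x"
  have d: "d > 0" unfolding d_def using \<open>dist cv x < rr\<close> by simp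
  define C where "C = 2 * real CARD('n) + 1"
  have C: "C > 0" unfolding C_def by simp
  obtain j where j: "(1/2::real) ^ j < d / C" using real_arch_pow_inv[of "d / C" "1/2"] d C by auto
  then have j': "C * (1/2) ^ j < d" using C by (simp add: field_simps)
  define a where "a = pp (2 * j + 1)"
  have d2: "dist (vec_dec a) x \<le> real CARD('n) * (1/2)^j"
    using rho_dist[OF assms(3), of j] unfolding a_def by simp
  define s where "s = rr - (real CARD('n) * (1/2)^j + (1/2)^j)"
  have "dist (vec_dec a) cv \<le> dist (vec_dec a) x + dist x cv" by (rule dist_triangle)
  also have "\<dots> < s" using d2 j' unfolding s_def C_def d_def by (simp add: dist_commute algebra_simps)
  finally have ds: "dist (vec_dec a :: real ^ 'n) cv < s" .
  then have "0 < s" by (metis le_less_trans zero_le_dist)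
  moreover have "(dist (vec_dec a :: real ^ 'n) cv)\<^sup>2 < s * s"
    using ds zero_le_dist[of "vec_dec a :: real ^ 'n" cv] unfolding power2_eq_square
    by (intro mult_strict_mono') auto
  ultimately have "chkA TYPE('n) pp (pr ib (pr j j))"
    unfolding chkA_def CHa_iff Let_def s_def rr_def cv_def a_def b_def by simp
  then show ?thesis by blast
qed

lemma chkA_prefix:
  assumes "2 * w + 1 < n"
  shows "chkA T (lnth (prefix_code pp n)) w = chkA T pp w"
proof -
  have "p1 w \<le> w" "p1 (p2 w) \<le> w" using p1_le p2_le le_trans by blast+
  then show ?thesis using assms unfolding chkA_def by simp
qed

definition RA :: "'n::finite itself \<Rightarrow> nat \<Rightarrow> nat \<Rightarrow> nat" where
  "RA T i c = (if \<exists>w<llen c. 2 * w + 1 < llen c \<and> chkA T (lnth c) w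
     then Suc (p2 (p2 (LEAST w. (2 * w + 1 < llen c \<and> chkA T (lnth c) w) \<or> llen c \<le> w))) else 0)"

lemma comp_RA: "comp1 (\<lambda>z. RA T (p1 z) (p2 z))"
proof -
  have ch: "compP (\<lambda>z. chkA T (lnth (p1 z)) (p2 z))"
    unfolding chkA_def CHa_def Let_def by (intro ci)
  have "compP (\<lambda>z. 2 * p2 z + 1 < llen (p1 z) \<and> chkA T (lnth (p1 z)) (p2 z))"
    by (intro P_and P_less ci ch)
  note l = comp1_comp[OF C_least_bounded[OF this C_llen[OF C_id]] C_p2[OF C_id]]
  have "compP (\<lambda>z. \<exists>w<llen z. 2 * w + 1 < llen z \<and> chkA T (lnth z) w)"
    by (rule P_bex[OF _ C_llen[OF C_id], where P="\<lambda>z w. 2 * w + 1 < llen z \<and> chkA T (lnth z) w"])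
       (intro P_and P_less ci ch)
  then have "comp1 (\<lambda>z. RA T (p1 z) (p2 z))"
    unfolding RA_def
    by (intro C_if C_Suc C_p2 C_const l compP_comp1[OF _ C_p2[OF C_id]])
  then show ?thesis .
qed


lemma RA_prefix:
  assumes "chkA T p W" "\<And>w. chkA T p w \<Longrightarrow> W \<le> w"
  shows "RA T i (prefix_code p n) = (if 2 * W + 1 < n then Suc (p2 (p2 W)) else 0)"
proof -
  let ?c = "prefix_code p n"
  have ex: "(\<exists>w<llen ?c. 2 * w + 1 < llen ?c \<and> chkA T (lnth ?c) w) \<longleftrightarrow> 2 * W + 1 < n"
  proof
    assume "\<exists>w<llen ?c. 2 * w + 1 < llen ?c \<and> chkA T (lnth ?c) w"
    then obtain w where "2 * w + 1 < n" "chkA T (lnth ?c) w" by auto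
    with chkA_prefix have "chkA T p w" by metis
    with assms(2) \<open>2 * w + 1 < n\<close> show "2 * W + 1 < n" by (meson add_le_mono1 le_less_trans mult_le_mono2 assms(2))
  next
    assume "2 * W + 1 < n"
    then show "\<exists>w<llen ?c. 2 * w + 1 < llen ?c \<and> chkA T (lnth ?c) w"
      using chkA_prefix[of W n T p] assms(1) by (intro exI[of _ W]) auto
  qed
  have le: "(LEAST w. (2 * w + 1 < llen ?c \<and> chkA T (lnth ?c) w) \<or> llen ?c \<le> w) = W" if "2 * W + 1 < n"
  proof (rule Least_equality)
    show "(2 * W + 1 < llen ?c \<and> chkA T (lnth ?c) W) \<or> llen ?c \<le> W"
      using that chkA_prefix[of W n T p] assms(1) by auto
    fix y assume "(2 * y + 1 < llen ?c \<and> chkA T (lnth ?c) y) \<or> llen ?c \<le> y"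
    then show "W \<le> y"
    proof
      assume "2 * y + 1 < llen ?c \<and> chkA T (lnth ?c) y"
      then have "chkA T p y" using chkA_prefix[of y n T p] by auto
      then show ?thesis by (rule assms(2))
    next
      assume "llen ?c \<le> y" then show ?thesis using that by simp
    qed
  qed
  show ?thesis unfolding RA_def ex using le by simp
qed

theorem partA:
  "mv_computable (prod_rep theta rho) nu {(U, x::real ^ 'n::finite). open U \<and> x \<in> U}
       (\<lambda>(U, x). {k. cball x ((1/2) ^ k) \<subseteq> U})"
proof -
  obtain r where r: "\<And>i c. eval r [i, c] (RA TYPE('n) i c)"
    using realizer_total[OF comp_RA[of "TYPE('n)"]] by blast
  show ?thesis unfolding mv_computable_def
  proof (intro exI[of _ r] ballI allI impI)
    fix Ux p assume Ux: "Ux \<in> {(U, x::real ^ 'n). open U \<and> x \<in> U}" and pn: "prod_rep theta rho p Ux"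
    obtain U x where Uxe: "Ux = (U, x)" by (cases Ux)
    with Ux have xU: "x \<in> U" by auto
    from pn Uxe have th: "theta (\<lambda>i. p (2 * i)) U" and rh: "rho (\<lambda>i. p (2 * i + 1)) (x :: real ^ 'n)"
      by (auto simp: prod_rep_def)
    have ex: "\<exists>w. chkA TYPE('n) p w" by (rule chkA_exists[OF xU th rh])
    define W where "W = (LEAST w. chkA TYPE('n) p w)"
    have W1: "chkA TYPE('n) p W" unfolding W_def by (rule LeastI_ex[OF ex])
    have W2: "\<And>w. chkA TYPE('n) p w \<Longrightarrow> W \<le> w" unfolding W_def by (rule Least_le)
    define k where "k = p2 (p2 W)"
    have "realizes r p (\<lambda>i. k)"
    proof (rule realizes_total[OF r])
      fix i show "\<exists>n. RA TYPE('n) i (prefix_code p n) = Suc k"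
        using RA_prefix[OF W1 W2, of i "2 * W + 2"] unfolding k_def by (intro exI[of _ "2 * W + 2"]) simp
      fix n show "RA TYPE('n) i (prefix_code p n) = 0 \<or> RA TYPE('n) i (prefix_code p n) = Suc k"
        using RA_prefix[OF W1 W2, of i n] unfolding k_def by simp
    qed
    moreover have "nu (\<lambda>i. k) k" by (simp add: nu_def)
    moreover have "k \<in> (\<lambda>(U, x). {k. cball x ((1/2) ^ k) \<subseteq> U}) Ux"
      using chkA_sound[OF W1 th rh] unfolding Uxe k_def by simp
    ultimately show "\<exists>q b. realizes r p q \<and> nu q b \<and> b \<in> (\<lambda>(U, x). {k. cball x ((1/2) ^ k) \<subseteq> U}) Ux"
      by blast
  qed
qed


lemma P_mem_fin: "finite S \<Longrightarrow> comp1 F \<Longrightarrow> compP (\<lambda>x. F x \<in> S)"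
proof (induction S rule: finite_induct)
  case empty then show ?case by (simp add: P_const)
next
  case (insert a S)
  then have "compP (\<lambda>x. F x = a \<or> F x \<in> S)" by (intro P_or P_eq C_const) auto
  then show ?case by simp
qed

definition rndi :: "nat \<Rightarrow> nat \<Rightarrow> int" where
  "rndi M rc = (if p1 rc mod 2 = 0 then int ((p1 rc div 2 * M) div Suc (p2 rc))
                else - int (((p1 rc div 2 + 1) * M + p2 rc) div Suc (p2 rc)))"

definition rnd :: "nat \<Rightarrow> nat \<Rightarrow> nat" where
  "rnd M rc = pr (if p1 rc mod 2 = 0 then 2 * ((p1 rc div 2 * M) div Suc (p2 rc))
                  else 2 * (((p1 rc div 2 + 1) * M + p2 rc) div Suc (p2 rc)) - 1) (M - 1)"

lemma C_rnd[ci]: "comp1 F \<Longrightarrow> comp1 G \<Longrightarrow> comp1 (\<lambda>x. rnd (F x) (G x))"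
  unfolding rnd_def by (intro ci)

lemma rat_dec_alt: "real_of_rat (rat_dec k) = real_of_int (int_decode (p1 k)) / (real (p2 k) + 1)"
  using qv_qrat[of k] by (simp add: rat_dec_def p1_def p2_def Fract_of_int_quotient of_rat_divide of_rat_add split: prod.split)

lemma int_decode_even: "int_decode (2 * m) = int m"
  by (simp add: int_decode_alt)
lemma int_decode_odd: "m > 0 \<Longrightarrow> int_decode (2 * m - 1) = - int m"
proof -
  assume "m > 0"
  then obtain k where "m = Suc k" by (cases m) auto
  then have "2 * m - 1 = 2 * k + 1" by simp
  then show ?thesis using \<open>m = Suc k\<close> by (simp add: int_decode_alt)
qed

lemma rnd_val: "M > 0 \<Longrightarrow> real_of_rat (rat_dec (rnd M rc)) = real_of_int (rndi M rc) / real M"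
proof -
  assume M: "M > 0"
  have p: "((p1 rc div 2 + 1) * M + p2 rc) div Suc (p2 rc) > 0"
  proof -
    have "Suc (p2 rc) \<le> (p1 rc div 2 + 1) * M + p2 rc" using M by (simp add: Suc_le_eq add_pos_nonneg)
    then show ?thesis by (simp add: div_greater_zero_iff)
  qed
  show ?thesis
    using M p int_decode_odd[OF p] unfolding rat_dec_alt rnd_def rndi_def
    by (auto simp: int_decode_even of_nat_diff)
qed

lemma nat_div_bounds:
  assumes "d > (0::nat)"
  shows "real (X div d) \<le> real X / real d \<and> real X / real d < real (X div d) + 1"
proof -
  have e: "real X = real (X div d) * real d + real (X mod d)"
    by (metis div_mult_mod_eq of_nat_add of_nat_mult)
  have m: "real (X mod d) < real d" using assms by simp
  show ?thesis using assms m unfolding e by (auto simp: field_simps)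
qed

lemma rndi_approx:
  assumes M: "M > 0"
  shows "\<bar>real_of_int (rndi M rc) / real M - real_of_rat (rat_dec rc)\<bar> \<le> 1 / real M"
proof -
  define d where "d = Suc (p2 rc)"
  have d: "real d > 0" unfolding d_def by simp
  have rv: "real_of_rat (rat_dec rc) = real_of_int (int_decode (p1 rc)) / real d"
    unfolding rat_dec_alt d_def by simp
  have key: "\<bar>real_of_int (rndi M rc) - real_of_int (int_decode (p1 rc)) * real M / real d\<bar> \<le> 1"
  proof (cases "p1 rc mod 2 = 0")
    case True
    define X where "X = p1 rc div 2 * M"
    have "real (X div d) \<le> real X / real d" "real X / real d < real (X div d) + 1"
      using nat_div_bounds[of d X] d_def by auto
    moreover have "rndi M rc = int (X div d)" using True unfolding rndi_def X_def d_def by simp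
    moreover have "real_of_int (int_decode (p1 rc)) * real M = real X"
      using True unfolding X_def by (simp add: int_decode_alt)
    ultimately show ?thesis by auto
  next
    case False
    define U where "U = (p1 rc div 2 + 1) * M"
    define Y where "Y = (U + (d - 1)) div d"
    have d0: "d > 0" unfolding d_def by simp
    have z: "U + (d - 1) = d * Y + (U + (d - 1)) mod d" unfolding Y_def by simp
    have "(U + (d - 1)) mod d < d" using d0 by simp
    then have n1: "U \<le> d * Y" and n2: "d * Y < U + d" using z d0 by linarith+
    have "real U \<le> real d * real Y" "real d * real Y < real U + real d"
      using n1 n2 unfolding of_nat_mult[symmetric] of_nat_add[symmetric] of_nat_le_iff of_nat_less_iff by auto
    then have "real U / real d \<le> real Y" "real Y < real U / real d + 1"
      using d by (auto simp: field_simps)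
    moreover have "rndi M rc = - int Y" using False unfolding rndi_def Y_def U_def d_def by simp
    moreover have "real_of_int (int_decode (p1 rc)) * real M = - real U"
      using False unfolding U_def by (simp add: int_decode_alt algebra_simps)
    ultimately show ?thesis by auto
  qed
  have "\<bar>real_of_int (rndi M rc) / real M - real_of_rat (rat_dec rc)\<bar>
      = \<bar>real_of_int (rndi M rc) - real_of_int (int_decode (p1 rc)) * real M / real d\<bar> / real M"
    unfolding rv using M d by (simp add: field_simps abs_div)
  also have "\<dots> \<le> 1 / real M" using key M by (simp add: divide_right_mono)
  finally show ?thesis .
qed


lemma rndi_bound:
  assumes M: "M > 0" and B: "\<bar>real_of_rat (rat_dec rc)\<bar> \<le> real B"
  shows "rnd M rc \<le> pr (2 * (B * M + 1)) M"
proof -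
  have "\<bar>real_of_int (rndi M rc) / real M\<bar> \<le> real B + 1 / real M"
    using rndi_approx[OF M, of rc] B by linarith
  then have "\<bar>real_of_int (rndi M rc)\<bar> \<le> real B * real M + 1"
    using M by (simp add: abs_div field_simps)
  then have ab: "nat \<bar>rndi M rc\<bar> \<le> B * M + 1"
    by (metis (mono_tags, opaque_lifting) nat_le_iff of_int_abs of_int_le_iff of_int_of_nat_eq of_nat_1 of_nat_add of_nat_mult)
  define E where "E = (if p1 rc mod 2 = 0 then 2 * ((p1 rc div 2 * M) div Suc (p2 rc))
                  else 2 * (((p1 rc div 2 + 1) * M + p2 rc) div Suc (p2 rc)) - 1)"
  have "E \<le> 2 * nat \<bar>rndi M rc\<bar>" unfolding E_def rndi_def by auto
  then have "E \<le> 2 * (B * M + 1)" using order_trans mult_le_mono2[OF ab] by blast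
  then show ?thesis unfolding rnd_def E_def[symmetric] by (intro pr_mono) auto
qed

section \<open>Normalisation of names\<close>

definition IDX :: "'n::finite itself \<Rightarrow> nat set" where "IDX T = to_nat ` (UNIV :: 'n set)"
definition LL :: "'n::finite itself \<Rightarrow> nat" where "LL T = Suc (Max (IDX T))"
definition entry :: "nat \<Rightarrow> nat \<Rightarrow> nat" where "entry a e = (if e < llen a then lnth a e else 0)"

definition nmz :: "'n::finite itself \<Rightarrow> nat \<Rightarrow> nat \<Rightarrow> nat" where
  "nmz T i a = list_encode (map (\<lambda>e. if e \<in> IDX T then rnd (2 ^ Suc i) (entry a e) else 0) [0..<LL T])"

lemma finite_IDX: "finite (IDX T)" by (simp add: IDX_def)
lemma IDX_less_LL: "e \<in> IDX T \<Longrightarrow> e < LL T"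
proof -
  assume "e \<in> IDX T"
  then have "e \<le> Max (IDX T)" by (rule Max_ge[OF finite_IDX])
  then show ?thesis unfolding LL_def by simp
qed

lemma C_entry[ci]: "comp1 F \<Longrightarrow> comp1 G \<Longrightarrow> comp1 (\<lambda>x. entry (F x) (G x))"
  unfolding entry_def by (intro ci)

lemma comp_nmz: "comp1 (\<lambda>z. nmz T (p1 z) (p2 z))"
  unfolding nmz_def
  by (intro C_lbuild C_if P_mem_fin[OF finite_IDX] C_rnd C_entry C_pow2 C_Suc C_p1 C_p2 C_id C_const)

lemma C_nmz[ci]: "comp1 F \<Longrightarrow> comp1 G \<Longrightarrow> comp1 (\<lambda>x. nmz T (F x) (G x))"
  by (rule C_comp2[OF comp_nmz])

lemma rat_dec_0: "rat_dec 0 = 0"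
  by (simp add: rat_dec_def prod_decode_def int_decode_def sum_decode_def prod_decode_aux.simps Zero_rat_def)

lemma entry_val: "real_of_rat (rat_dec (entry a (to_nat (j :: 'n::finite)))) = vec_dec a $ j"
  by (simp add: entry_def vec_dec_def llen_eq lnth_eq Let_def rat_dec_0)

lemma nmz_comp: "vec_dec (nmz TYPE('n::finite) i a) $ (j :: 'n) = real_of_int (rndi (2 ^ Suc i) (entry a (to_nat j))) / 2 ^ Suc i"
proof -
  have j: "to_nat j \<in> IDX TYPE('n)" by (simp add: IDX_def)
  then have l: "to_nat j < LL TYPE('n)" by (rule IDX_less_LL)
  show ?thesis
    using j l rnd_val[of "2 ^ Suc i" "entry a (to_nat j)"]
    by (simp add: nmz_def vec_dec_def Let_def)
qed

lemma nmz_approx: "\<bar>vec_dec (nmz TYPE('n::finite) i a) $ (j :: 'n) - vec_dec a $ j\<bar> \<le> (1/2) ^ Suc i"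
  using rndi_approx[of "2 ^ Suc i" "entry a (to_nat j)"] unfolding nmz_comp entry_val
  by (simp add: power_one_over)

definition normseq :: "'n::finite itself \<Rightarrow> (nat \<Rightarrow> nat) \<Rightarrow> nat \<Rightarrow> nat" where
  "normseq T p i = nmz T i (p (Suc i))"

lemma normseq_rho: "rho p (x :: real ^ 'n::finite) \<Longrightarrow> rho (normseq TYPE('n) p) x"
  unfolding rho_def
proof (intro allI)
  fix i j assume r: "\<forall>i j. \<bar>vec_dec (p i) $ j - x $ j\<bar> \<le> (1 / 2) ^ i"
  have "\<bar>vec_dec (normseq TYPE('n) p i) $ j - x $ j\<bar>
     \<le> \<bar>vec_dec (nmz TYPE('n) i (p (Suc i))) $ j - vec_dec (p (Suc i)) $ j\<bar> + \<bar>vec_dec (p (Suc i)) $ j - x $ j\<bar>"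
    unfolding normseq_def by linarith
  also have "\<dots> \<le> (1/2) ^ Suc i + (1/2) ^ Suc i" by (rule add_mono[OF nmz_approx]) (use r[rule_format, of "Suc i" j] in simp)
  also have "\<dots> = (1/2) ^ i" by simp
  finally show "\<bar>vec_dec (normseq TYPE('n) p i) $ j - x $ j\<bar> \<le> (1/2) ^ i" .
qed

lemma list_encode_mono:
  "length xs = length ys \<Longrightarrow> (\<forall>i<length xs. xs ! i \<le> ys ! i) \<Longrightarrow> list_encode xs \<le> list_encode ys"
proof (induction xs arbitrary: ys)
  case (Cons x xs)
  then obtain y ys' where ys: "ys = y # ys'" by (cases ys) auto
  with Cons.prems have "x \<le> y" "list_encode xs \<le> list_encode ys'"
    using Cons.IH[of ys'] by (auto, fastforce)
  then show ?case unfolding ys using pr_mono[of x y "list_encode xs" "list_encode ys'"] by (simp add: pr_def)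
qed simp

definition bnd :: "'n::finite itself \<Rightarrow> nat \<Rightarrow> nat \<Rightarrow> nat" where
  "bnd T B i = list_encode (replicate (LL T) (pr (2 * (B * 2 ^ Suc i + 1)) (2 ^ Suc i)))"

lemma C_bnd[ci]: "comp1 F \<Longrightarrow> comp1 G \<Longrightarrow> comp1 (\<lambda>x. bnd T (F x) (G x))"
proof -
  assume f: "comp1 F" and g: "comp1 G"
  have "comp1 (\<lambda>x. list_encode (map (\<lambda>e. pr (2 * (F x * 2 ^ Suc (G x) + 1)) (2 ^ Suc (G x))) [0..<LL T]))"
    by (rule C_lbuild[where F="\<lambda>x e. pr (2 * (F x * 2 ^ Suc (G x) + 1)) (2 ^ Suc (G x))"])
       (intro ci comp1_comp[OF f] comp1_comp[OF g])+
  then show ?thesis unfolding bnd_def by (simp add: map_replicate_const)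
qed

lemma nmz_bound:
  assumes "\<And>j. \<bar>vec_dec a $ (j :: 'n::finite)\<bar> \<le> real B"
  shows "nmz TYPE('n) i a \<le> bnd TYPE('n) B i"
  unfolding nmz_def bnd_def
proof (rule list_encode_mono, simp, intro allI impI)
  fix e assume "e < length (map (\<lambda>e. if e \<in> IDX TYPE('n) then rnd (2 ^ Suc i) (entry a e) else 0) [0..<LL TYPE('n)])"
  then have e: "e < LL TYPE('n)" by simp
  show "map (\<lambda>e. if e \<in> IDX TYPE('n) then rnd (2 ^ Suc i) (entry a e) else 0) [0..<LL TYPE('n)] ! e
        \<le> replicate (LL TYPE('n)) (pr (2 * (B * 2 ^ Suc i + 1)) (2 ^ Suc i)) ! e"
  proof (cases "e \<in> IDX TYPE('n)")
    case True
    then obtain j :: 'n where j: "e = to_nat j" by (auto simp: IDX_def)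
    have "rnd (2 ^ Suc i) (entry a e) \<le> pr (2 * (B * 2 ^ Suc i + 1)) (2 ^ Suc i)"
      by (rule rndi_bound) (use assms[of j] in \<open>simp_all add: j entry_val\<close>)
    then show ?thesis using e True by simp
  next
    case False then show ?thesis using e by simp
  qed
qed


definition ilv :: "(nat \<Rightarrow> nat) \<Rightarrow> (nat \<Rightarrow> nat) \<Rightarrow> nat \<Rightarrow> nat" where
  "ilv P s e = (if even e then P (e div 2) else s (e div 2))"

lemma ilv_even[simp]: "ilv P s (2 * i) = P i" and ilv_odd[simp]: "ilv P s (2 * i + 1) = s i"
  and ilv_odd'[simp]: "ilv P s (Suc (2 * i)) = s i"
  by (simp_all add: ilv_def)

lemma prod_rep_ilv: "rho s x \<Longrightarrow> prod_rep id_rep rho (ilv P s) (P, x)"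
  by (simp add: prod_rep_def id_rep_def)

lemma ilv_split: "ilv (\<lambda>i. pp (2 * i)) (\<lambda>i. pp (2 * i + 1)) = pp"
  by (auto simp: ilv_def fun_eq_iff)

definition Tg :: "'n::finite itself \<Rightarrow> nat \<Rightarrow> nat" where
  "Tg T c = list_encode (map (\<lambda>e. if e mod 2 = 0 then lnth c e else nmz T (e div 2) (lnth c (e + 2))) [0..<llen c - 6])"

lemma comp_Tg: "comp1 (Tg T)"
  unfolding Tg_def
  by (rule C_lbuild[where F="\<lambda>c e. if e mod 2 = 0 then lnth c e else nmz T (e div 2) (lnth c (e + 2))"])
     (intro ci)+

lemma Tg_prefix:
  "Tg T (prefix_code pp n) = prefix_code (ilv (\<lambda>i. pp (2 * i)) (normseq T (\<lambda>i. pp (2 * i + 1)))) (n - 6)"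
  unfolding Tg_def prefix_code_def[of _ "n - 6"] llen_prefix
proof (rule arg_cong[where f=list_encode], rule map_cong[OF refl])
  fix e assume "e \<in> set [0..<n - 6]"
  then have e: "e < n - 6" by simp
  show "(if e mod 2 = 0 then lnth (prefix_code pp n) e else nmz T (e div 2) (lnth (prefix_code pp n) (e + 2)))
        = ilv (\<lambda>i. pp (2 * i)) (normseq T (\<lambda>i. pp (2 * i + 1))) e"
  proof (cases "even e")
    case True then show ?thesis using e by (simp add: ilv_def flip: even_iff_mod_2_eq_zero)
  next
    case False
    have h: "2 * (e div 2) + 1 = e" using False by (rule odd_two_times_div_two_succ)
    then have "2 * Suc (e div 2) + 1 = e + 2" by simp
    then show ?thesis using e False by (simp add: ilv_def normseq_def flip: even_iff_mod_2_eq_zero)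
  qed
qed

definition gset :: "'n::finite itself \<Rightarrow> recf \<Rightarrow> ((nat \<Rightarrow> nat) \<times> (real ^ 'n) \<Rightarrow> (real ^ 'm::finite) set)
    \<Rightarrow> (nat \<Rightarrow> nat) \<times> (real ^ 'n) \<Rightarrow> (real ^ 'm) set" where
  "gset T r f Px = {y \<in> f Px. \<exists>p q. rho p (snd Px) \<and> realizes r (ilv (fst Px) (normseq T p)) q \<and> rho q y}"

lemma gset_sub: "gset T r f Px \<subseteq> f Px" by (auto simp: gset_def)

lemma gset_comp:
  fixes f :: "(nat \<Rightarrow> nat) \<times> (real ^ 'n::finite) \<Rightarrow> (real ^ 'm::finite) set"
  assumes r: "\<forall>a\<in>D \<times> X. \<forall>p. prod_rep id_rep rho p a \<longrightarrow> (\<exists>q b. realizes r p q \<and> rho q b \<and> b \<in> f a)"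
  shows "mv_computable (prod_rep id_rep rho) rho (D \<times> X) (gset TYPE('n) r f)"
proof -
  obtain rt where rt: "\<And>c. eval rt [c] (Tg TYPE('n) c)" using comp_Tg unfolding comp1_def by blast
  define rg where "rg = Cn r [Pj 0, Cn rt [Pj 1]]"
  have ev: "eval rg [i, c] v \<longleftrightarrow> eval r [i, Tg TYPE('n) c] v" for i c v
    unfolding rg_def by (rule eval_Cn2_iff[OF eval_Pj0 eval_Cn1[OF eval_Pj1 rt]])
  show ?thesis unfolding mv_computable_def
  proof (intro exI[of _ rg] ballI allI impI)
    fix a pp assume a: "a \<in> D \<times> X" and pn: "prod_rep id_rep rho pp a"
    obtain P x where ae: "a = (P, x)" by (cases a)
    from pn ae have P: "P = (\<lambda>i. pp (2 * i))" and rx: "rho (\<lambda>i. pp (2 * i + 1)) x"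
      by (auto simp: prod_rep_def id_rep_def)
    define s where "s = normseq TYPE('n) (\<lambda>i. pp (2 * i + 1))"
    have "rho s x" unfolding s_def by (rule normseq_rho[OF rx])
    then have "prod_rep id_rep rho (ilv P s) a" unfolding ae by (rule prod_rep_ilv)
    with r a obtain q b where qb: "realizes r (ilv P s) q" "rho q b" "b \<in> f a" by blast
    have "realizes rg pp q" unfolding realizes_def
    proof (rule allI, rule conjI)
      fix i
      from qb(1) obtain m where m: "eval r [i, prefix_code (ilv P s) m] (Suc (q i))" unfolding realizes_def by blast
      have "Tg TYPE('n) (prefix_code pp (m + 6)) = prefix_code (ilv P s) m" unfolding Tg_prefix P s_def by simp
      with m show "\<exists>n. eval rg [i, prefix_code pp n] (Suc (q i))" using ev by metis
      show "\<forall>n v. eval rg [i, prefix_code pp n] v \<longrightarrow> v = 0 \<or> v = Suc (q i)"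
        using qb(1) unfolding realizes_def ev Tg_prefix P[symmetric] s_def[symmetric] by blast
    qed
    moreover have "b \<in> gset TYPE('n) r f a"
      unfolding gset_def ae using qb \<open>rho (\<lambda>i. pp (2 * i + 1)) x\<close> ae P s_def by auto
    ultimately show "\<exists>q b. realizes rg pp q \<and> rho q b \<and> b \<in> gset TYPE('n) r f a" using qb by blast
  qed
qed


lemma pigeon_subseq:
  fixes w :: "nat \<Rightarrow> nat"
  assumes "\<And>k. w k \<le> (b :: nat)"
  shows "\<exists>r'::nat\<Rightarrow>nat. strict_mono r' \<and> (\<forall>k. w (r' k) = w (r' 0))"
proof -
  have "finite (range w)" using assms by (metis finite_atMost finite_subset image_subsetI atMost_iff)
  then have "\<exists>y. infinite (w -` {w y})" using inf_img_fin_dom[of w "UNIV::nat set"] infinite_UNIV_nat by simp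
  then obtain c where "infinite (w -` {c})" by blast
  define S where "S = w -` {c}"
  have "infinite S" using \<open>infinite (w -` {c})\<close> S_def by simp
  obtain e :: "nat \<Rightarrow> nat" where e: "strict_mono e" "\<forall>k. e k \<in> S"
    using strict_mono_enumerate[OF \<open>infinite S\<close>] enumerate_in_set[OF \<open>infinite S\<close>] by blast
  then have "\<forall>k. w (e k) = c" unfolding S_def by auto
  then show ?thesis using e(1) by (intro exI[of _ e]) simp
qed

lemma KL:
  fixes u :: "nat \<Rightarrow> nat \<Rightarrow> nat" and xs :: "nat \<Rightarrow> real ^ 'n::finite"
  assumes ub: "\<And>k i. u k i \<le> \<beta> i" and K: "compact K" and xsK: "\<And>k. xs k \<in> K"
  shows "\<exists>\<sigma> s x. strict_mono \<sigma> \<and> x \<in> K \<and> (xs \<circ> \<sigma>) \<longlonglongrightarrow> x \<and> (\<forall>n. \<exists>m0. \<forall>m\<ge>m0. \<forall>i<n. u (\<sigma> m) i = s i)"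
proof -
  from K have "seq_compact K" by (rule compact_imp_seq_compact)
  with xsK obtain x \<sigma>1 where x: "x \<in> K" and s1: "strict_mono \<sigma>1" and lim: "(xs \<circ> \<sigma>1) \<longlonglongrightarrow> x"
    unfolding seq_compact_def by metis
  define v where "v k = u (\<sigma>1 k)" for k
  interpret sq: subseqs "\<lambda>n \<sigma>. \<forall>k. v (\<sigma> k) n = v (\<sigma> 0) n"
  proof
    fix n :: nat and s :: "nat \<Rightarrow> nat" assume "strict_mono s"
    from pigeon_subseq[of "\<lambda>k. v (s k) n" "\<beta> n"] ub obtain r' :: "nat \<Rightarrow> nat" where
      "strict_mono r'" "\<forall>k. v (s (r' k)) n = v (s (r' 0)) n" unfolding v_def by blast
    then show "\<exists>r'::nat\<Rightarrow>nat. strict_mono r' \<and> (\<forall>k. v ((s \<circ> r') k) n = v ((s \<circ> r') 0) n)"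
      by (intro exI[of _ r']) simp
  qed
  have hold: "\<forall>m. v (sq.diagseq (Suc k + m)) k = v (sq.diagseq (Suc k)) k" for k
  proof -
    have "\<forall>m. v ((sq.diagseq \<circ> (+) (Suc k)) m) k = v ((sq.diagseq \<circ> (+) (Suc k)) 0) k"
      by (rule sq.diagseq_holds) (simp only: comp_apply, metis)
    then show ?thesis by simp
  qed
  define s where "s i = v (sq.diagseq (Suc i)) i" for i
  define \<sigma> where "\<sigma> = \<sigma>1 \<circ> sq.diagseq"
  have "strict_mono \<sigma>" unfolding \<sigma>_def using s1 sq.subseq_diagseq by (rule strict_mono_o)
  moreover have "(xs \<circ> \<sigma>) \<longlonglongrightarrow> x"
    using LIMSEQ_subseq_LIMSEQ[OF lim sq.subseq_diagseq] unfolding \<sigma>_def by (simp add: o_assoc)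
  moreover have "\<forall>m\<ge>n. \<forall>i<n. u (\<sigma> m) i = s i" for n :: nat
  proof (intro allI impI)
    fix m i :: nat assume "n \<le> m" "i < n"
    then have e: "Suc i + (m - Suc i) = m" by simp
    have "v (sq.diagseq (Suc i + (m - Suc i))) i = v (sq.diagseq (Suc i)) i" using hold[of i] by blast
    then have "v (sq.diagseq m) i = v (sq.diagseq (Suc i)) i" unfolding e .
    then show "u (\<sigma> m) i = s i" unfolding \<sigma>_def s_def v_def by simp
  qed
  then have "\<forall>n. \<exists>m0. \<forall>m\<ge>m0. \<forall>i<n. u (\<sigma> m) i = s i" by blast
  ultimately show ?thesis using x by blast
qed


lemma prefix_ilv_agree: "(\<forall>i<n. s1 i = s2 i) \<Longrightarrow> prefix_code (ilv P s1) n = prefix_code (ilv P s2) n"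
  unfolding prefix_code_def by (intro arg_cong[where f=list_encode] map_cong refl) (auto simp: ilv_def)

lemma rho_lim:
  fixes xs :: "nat \<Rightarrow> real ^ 'n::finite"
  assumes lim: "xs \<longlonglongrightarrow> x" and ev: "\<And>i. \<exists>m0. \<forall>m\<ge>m0. us m i = s i" and rh: "\<And>m. rho (us m) (xs m)"
  shows "rho s x"
  unfolding rho_def
proof (intro allI)
  fix i j
  obtain m0 where m0: "\<forall>m\<ge>m0. us m i = s i" using ev by blast
  have "(\<lambda>m. \<bar>vec_dec (s i) $ j - xs m $ j\<bar>) \<longlonglongrightarrow> \<bar>vec_dec (s i) $ j - x $ j\<bar>"
    by (intro tendsto_intros lim)
  moreover have "\<forall>m\<ge>m0. \<bar>vec_dec (s i) $ j - xs m $ j\<bar> \<le> (1/2) ^ i"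
    using m0 rh unfolding rho_def by metis
  ultimately show "\<bar>vec_dec (s i) $ j - x $ j\<bar> \<le> (1/2) ^ i"
    by (intro LIMSEQ_le_const2) auto
qed

lemma compact_coord_bound:
  assumes "compact (K :: (real ^ 'n::finite) set)"
  obtains B :: nat where "\<And>x j. x \<in> K \<Longrightarrow> \<bar>x $ j\<bar> + 1 \<le> real B"
proof -
  from compact_imp_bounded[OF assms] obtain M where M: "\<And>x. x \<in> K \<Longrightarrow> norm x \<le> M"
    unfolding bounded_iff by blast
  define B where "B = nat (ceiling M) + 1"
  have "\<bar>x $ j\<bar> + 1 \<le> real B" if "x \<in> K" for x j
  proof -
    have "\<bar>x $ j\<bar> \<le> norm x" by (rule component_le_norm_cart)
    also have "\<dots> \<le> M" using M that by simp
    also have "\<dots> \<le> real (nat (ceiling M))" by linarith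
    finally show ?thesis unfolding B_def by simp
  qed
  then show ?thesis using that by blast
qed

lemma normseq_bound:
  assumes "rho p (x :: real ^ 'n::finite)" "\<And>j. \<bar>x $ j\<bar> + 1 \<le> real B"
  shows "normseq TYPE('n) p i \<le> bnd TYPE('n) B i"
  unfolding normseq_def
proof (rule nmz_bound)
  fix j :: 'n
  have "\<bar>vec_dec (p (Suc i)) $ j - x $ j\<bar> \<le> (1/2) ^ Suc i" using assms(1) unfolding rho_def by blast
  moreover have "(1/2::real) ^ Suc i \<le> 1" by (rule power_le_one) auto
  ultimately show "\<bar>vec_dec (p (Suc i)) $ j\<bar> \<le> real B" using assms(2)[of j] by linarith
qed

lemma q0_bounded:
  fixes f :: "(nat \<Rightarrow> nat) \<times> (real ^ 'n::finite) \<Rightarrow> (real ^ 'm::finite) set"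
  assumes r: "\<forall>a\<in>D \<times> X. \<forall>p. prod_rep id_rep rho p a \<longrightarrow> (\<exists>q b. realizes r p q \<and> rho q b \<and> b \<in> f a)"
    and P: "P \<in> D" and K: "compact K" "K \<subseteq> X"
  shows "\<exists>N. \<forall>x\<in>K. \<forall>p q. rho p x \<and> realizes r (ilv P (normseq TYPE('n) p)) q \<longrightarrow> q 0 \<le> N"
proof (rule ccontr)
  assume "\<not> ?thesis"
  then have "\<forall>N. \<exists>x p q. x \<in> K \<and> rho p x \<and> realizes r (ilv P (normseq TYPE('n) p)) q \<and> N < q 0"
    by (auto simp: not_le) blast
  then obtain xs ps qs where seq: "\<And>N. xs N \<in> K \<and> rho (ps N) (xs N) \<and> realizes r (ilv P (normseq TYPE('n) (ps N))) (qs N) \<and> N < qs N 0"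
    by metis
  obtain B where B: "\<And>x j. x \<in> K \<Longrightarrow> \<bar>x $ j\<bar> + 1 \<le> real B" using compact_coord_bound[OF K(1)] by blast
  define u where "u k = normseq TYPE('n) (ps k)" for k
  have ub: "u k i \<le> bnd TYPE('n) B i" for k i
    unfolding u_def using normseq_bound seq B by blast
  from KL[of u "bnd TYPE('n) B" K xs, OF ub K(1)] seq obtain \<sigma> s x where
    sm: "strict_mono \<sigma>" and x: "x \<in> K" and lim: "(xs \<circ> \<sigma>) \<longlonglongrightarrow> x" and ag: "\<forall>n. \<exists>m0. \<forall>m\<ge>m0. \<forall>i<n. u (\<sigma> m) i = s i"
    by blast
  have "rho s x"
  proof (rule rho_lim[OF lim])
    fix i show "\<exists>m0. \<forall>m\<ge>m0. u (\<sigma> m) i = s i" using ag[rule_format, of "Suc i"] by blast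
    fix m show "rho (u (\<sigma> m)) ((xs \<circ> \<sigma>) m)" unfolding u_def using normseq_rho[of "ps (\<sigma> m)" "xs (\<sigma> m)"] seq[of "\<sigma> m"] by simp
  qed
  then have "prod_rep id_rep rho (ilv P s) (P, x)" by (rule prod_rep_ilv)
  with r P x K(2) obtain q' b where "realizes r (ilv P s) q'" by blast
  then obtain n0 where n0: "eval r [0, prefix_code (ilv P s) n0] (Suc (q' 0))" unfolding realizes_def by blast
  obtain m0 where m0: "\<forall>m\<ge>m0. \<forall>i<n0. u (\<sigma> m) i = s i" using ag by blast
  define m where "m = max m0 (q' 0)"
  have "prefix_code (ilv P (u (\<sigma> m))) n0 = prefix_code (ilv P s) n0"
    using m0 unfolding m_def by (intro prefix_ilv_agree) auto
  with n0 have "eval r [0, prefix_code (ilv P (u (\<sigma> m))) n0] (Suc (q' 0))" by simp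
  with seq[of "\<sigma> m"] have "Suc (q' 0) = Suc (qs (\<sigma> m) 0)" unfolding realizes_def u_def by blast
  moreover have "q' 0 \<le> \<sigma> m" using seq_suble[OF sm, of m] unfolding m_def by linarith
  moreover have "\<sigma> m < qs (\<sigma> m) 0" using seq by blast
  ultimately show False by linarith
qed

lemma gset_bounded:
  fixes f :: "(nat \<Rightarrow> nat) \<times> (real ^ 'n::finite) \<Rightarrow> (real ^ 'm::finite) set"
  assumes r: "\<forall>a\<in>D \<times> X. \<forall>p. prod_rep id_rep rho p a \<longrightarrow> (\<exists>q b. realizes r p q \<and> rho q b \<and> b \<in> f a)"
    and P: "P \<in> D" and K: "compact K" "K \<subseteq> X"
  shows "bounded (\<Union>x\<in>K. gset TYPE('n) r f (P, x))"
proof -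
  obtain N where N: "\<forall>x\<in>K. \<forall>p q. rho p x \<and> realizes r (ilv P (normseq TYPE('n) p)) q \<longrightarrow> q 0 \<le> N"
    using q0_bounded[OF r P K] by blast
  define R where "R = (\<Sum>c\<le>N. norm (vec_dec c :: real ^ 'm)) + real CARD('m)"
  have "norm y \<le> R" if "y \<in> (\<Union>x\<in>K. gset TYPE('n) r f (P, x))" for y
  proof -
    from that obtain x p q where x: "x \<in> K" and pq: "rho p x" "realizes r (ilv P (normseq TYPE('n) p)) q" "rho q y"
      unfolding gset_def by auto
    have qN: "q 0 \<le> N" using N x pq by blast
    have "dist (vec_dec (q 0)) y \<le> real CARD('m) * (1/2) ^ 0" by (rule rho_dist[OF pq(3)])
    then have "norm y \<le> norm (vec_dec (q 0) :: real ^ 'm) + real CARD('m)"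
      using norm_triangle_ineq2[of y "vec_dec (q 0)"] by (simp add: dist_norm norm_minus_commute)
    also have "norm (vec_dec (q 0) :: real ^ 'm) \<le> (\<Sum>c\<le>N. norm (vec_dec c :: real ^ 'm))"
      using qN by (intro member_le_sum) auto
    finally show ?thesis unfolding R_def by linarith
  qed
  then show ?thesis unfolding bounded_iff by blast
qed


lemma list_decode_elem_le: "y \<in> set (list_decode c) \<Longrightarrow> y \<le> c"
proof (induction c rule: less_induct)
  case (less c)
  show ?case
  proof (cases "c = 0")
    case True with less.prems show ?thesis by simp
  next
    case False
    with less.prems have "y = lhd c \<or> y \<in> set (list_decode (ltl c))" using list_decode_alt[of c] by auto
    then show ?thesis
    proof
      assume "y \<in> set (list_decode (ltl c))"
      with less.IH[OF ltl_less] False have "y \<le> ltl c" by simp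
      then show ?thesis using ltl_le[of c] by simp
    qed (simp add: lhd_le)
  qed
qed

lemma lnth_le: "i < llen c \<Longrightarrow> lnth c i \<le> c"
  using list_decode_elem_le[of "list_decode c ! i" c] by (simp add: llen_eq lnth_eq)

lemma int_decode_abs_le: "\<bar>int_decode a\<bar> \<le> int a"
  by (simp add: int_decode_alt) presburger

lemma rat_dec_abs_le: "\<bar>real_of_rat (rat_dec e)\<bar> \<le> real e"
proof -
  have "\<bar>real_of_rat (rat_dec e)\<bar> = \<bar>real_of_int (int_decode (p1 e))\<bar> / (real (p2 e) + 1)"
    by (simp add: rat_dec_alt abs_div)
  also have "\<dots> \<le> \<bar>real_of_int (int_decode (p1 e))\<bar>"
    using divide_left_mono[of 1 "real (p2 e) + 1" "\<bar>real_of_int (int_decode (p1 e))\<bar>"] by simp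
  also have "\<dots> \<le> real (p1 e)" using int_decode_abs_le[of "p1 e"] by linarith
  also have "\<dots> \<le> real e" using p1_le[of e] by simp
  finally show ?thesis .
qed


lemma vec_dec_abs_le: "\<bar>vec_dec c $ j\<bar> \<le> real c"
proof -
  have "\<bar>vec_dec c $ j\<bar> = \<bar>real_of_rat (rat_dec (entry c (to_nat j)))\<bar>" by (simp add: entry_val)
  also have "\<dots> \<le> real (entry c (to_nat j))" by (rule rat_dec_abs_le)
  also have "\<dots> \<le> real c" unfolding entry_def using lnth_le[of "to_nat j" c] by auto
  finally show ?thesis .
qed

lemma kappa_bound:
  assumes "kappa \<kappa> K" "x \<in> K"
  shows "\<bar>(x :: real ^ 'n::finite) $ j\<bar> \<le> real (\<kappa> 0)"
proof -
  from assms(1) have "K \<subseteq> \<Union>(ball_dec ` set (list_decode (\<kappa> 0)))" unfolding kappa_def by blast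
  with assms(2) obtain b where b: "b \<in> set (list_decode (\<kappa> 0))" "x \<in> ball_dec b" by blast
  define cv :: "real ^ 'n" where "cv = vec_dec (p1 b)"
  define \<rho> where "\<rho> = real_of_rat (rat_dec (p2 b))"
  have "dist cv x < \<rho>" using b(2) unfolding ball_dec_eq cv_def \<rho>_def by simp
  moreover have "\<bar>x $ j - cv $ j\<bar> \<le> dist cv x"
    using component_le_norm_cart[of "x - cv" j] by (simp add: dist_norm norm_minus_commute)
  moreover have "\<bar>cv $ j\<bar> \<le> real (p1 b)" unfolding cv_def by (rule vec_dec_abs_le)
  moreover have "\<rho> \<le> real (p2 b)" using rat_dec_abs_le[of "p2 b"] unfolding \<rho>_def by linarith
  moreover have "p1 b + p2 b \<le> b" using pr_ge_add[of "p1 b" "p2 b"] by simp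
  moreover have "b \<le> \<kappa> 0" by (rule list_decode_elem_le[OF b(1)])
  ultimately show ?thesis by linarith
qed

definition cube :: "real ^ 'n::finite \<Rightarrow> real \<Rightarrow> (real ^ 'n) set" where
  "cube a h = {y. \<forall>j. \<bar>a $ j - y $ j\<bar> \<le> h}"

lemma ball_cube_disj:
  fixes c a :: "real ^ 'n::finite"
  assumes h: "h \<ge> 0" and \<rho>: "\<rho> > 0"
  shows "ball c \<rho> \<inter> cube a h = {} \<longleftrightarrow> \<rho>\<^sup>2 \<le> (\<Sum>j\<in>UNIV. (max 0 (\<bar>c $ j - a $ j\<bar> - h))\<^sup>2)"
proof -
  define S where "S = (\<Sum>j\<in>UNIV. (max 0 (\<bar>c $ j - a $ j\<bar> - h))\<^sup>2)"
  have low: "S \<le> (dist c y)\<^sup>2" if "y \<in> cube a h" for y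
    unfolding S_def dist_vec_sq
  proof (rule sum_mono)
    fix j
    have "\<bar>a $ j - y $ j\<bar> \<le> h" using that by (simp add: cube_def)
    then have "max 0 (\<bar>c $ j - a $ j\<bar> - h) \<le> \<bar>c $ j - y $ j\<bar>" by auto
    then show "(max 0 (\<bar>c $ j - a $ j\<bar> - h))\<^sup>2 \<le> (c $ j - y $ j)\<^sup>2"
      using power_mono[of "max 0 (\<bar>c $ j - a $ j\<bar> - h)" "\<bar>c $ j - y $ j\<bar>" 2] by simp
  qed
  define y0 :: "real ^ 'n" where
    "y0 = (\<chi> j. if c $ j < a $ j - h then a $ j - h else if c $ j > a $ j + h then a $ j + h else c $ j)"
  have y0: "y0 \<in> cube a h" unfolding cube_def y0_def using h by auto
  have "(dist c y0)\<^sup>2 = S" unfolding S_def dist_vec_sq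
  proof (rule sum.cong[OF refl])
    fix j show "(c $ j - y0 $ j)\<^sup>2 = (max 0 (\<bar>c $ j - a $ j\<bar> - h))\<^sup>2"
      unfolding y0_def using h by (auto simp: abs_if max_def) (auto simp: power2_eq_square algebra_simps)
  qed
  show ?thesis unfolding S_def[symmetric]
  proof
    assume dj: "ball c \<rho> \<inter> cube a h = {}"
    have "\<rho> \<le> dist c y0"
    proof (rule ccontr)
      assume "\<not> \<rho> \<le> dist c y0"
      then have "y0 \<in> ball c \<rho>" by simp
      with y0 dj show False by blast
    qed
    then have "\<rho>\<^sup>2 \<le> (dist c y0)\<^sup>2" using \<rho> by (intro power_mono) auto
    then show "\<rho>\<^sup>2 \<le> S" using \<open>(dist c y0)\<^sup>2 = S\<close> by simp
  next
    assume a: "\<rho>\<^sup>2 \<le> S"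
    show "ball c \<rho> \<inter> cube a h = {}"
    proof (rule ccontr)
      assume "ball c \<rho> \<inter> cube a h \<noteq> {}"
      then obtain y where "dist c y < \<rho>" "y \<in> cube a h" by auto
      then have "(dist c y)\<^sup>2 < \<rho>\<^sup>2" by (intro power_strict_mono) auto
      with low[OF \<open>y \<in> cube a h\<close>] a show False by linarith
    qed
  qed
qed

lemma rat_dec_surj: "\<exists>k. rat_dec k = q"
proof (cases q)
  case (Fract a b)
  define k where "k = prod_encode (int_encode a, nat (b - 1))"
  have "rat_dec k = Fract a (int (nat (b - 1)) + 1)" by (simp add: k_def rat_dec_def)
  also have "int (nat (b - 1)) + 1 = b" using Fract by simp
  finally show ?thesis using Fract by blast
qed

lemma vec_dec_dense:
  assumes "\<epsilon> > 0"
  shows "\<exists>c. dist (vec_dec c) (x :: real ^ 'n::finite) < \<epsilon>"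
proof -
  define e where "e = \<epsilon> / (2 * real CARD('n))"
  have e: "e > 0" unfolding e_def using assms by simp
  have "\<forall>j. \<exists>q::rat. x $ j < of_rat q \<and> of_rat q < x $ j + e" using of_rat_dense e by simp
  then obtain q :: "'n \<Rightarrow> rat" where q: "\<And>j. x $ j < of_rat (q j) \<and> of_rat (q j) < x $ j + e" by metis
  have "\<forall>j. \<exists>k. rat_dec k = q j" using rat_dec_surj by blast
  from choice[OF this] obtain cq where cq: "\<And>j. rat_dec (cq j) = q j" by blast
  define l where "l = map (\<lambda>k. if k \<in> IDX TYPE('n) then cq (from_nat k :: 'n) else 0) [0..<LL TYPE('n)]"
  have v: "vec_dec (list_encode l) $ j = of_rat (q j)" for j :: 'n
  proof -
    have j: "to_nat j \<in> IDX TYPE('n)" by (simp add: IDX_def)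
    then have "to_nat j < LL TYPE('n)" by (rule IDX_less_LL)
    then show ?thesis using j cq unfolding l_def by (simp add: vec_dec_def)
  qed
  have "dist (vec_dec (list_encode l)) x \<le> real CARD('n) * e"
  proof (rule dist_le_card)
    fix j show "\<bar>vec_dec (list_encode l) $ j - x $ j\<bar> \<le> e" using q[of j] v[of j] by (simp add: abs_if)
  qed
  also have "\<dots> < \<epsilon>" unfolding e_def using assms by simp
  finally show ?thesis by blast
qed

lemma cover_disjoint:
  fixes K Q :: "(real ^ 'n::finite) set"
  assumes K: "compact K" and Q: "closed Q" and d: "K \<inter> Q = {}"
  shows "\<exists>l. K \<subseteq> \<Union>(ball_dec ` set l) \<and> (\<forall>b\<in>set l. ball_dec b \<inter> Q = {})"
proof -
  obtain \<delta> where \<delta>: "\<delta> > 0" "\<forall>x\<in>K. \<forall>y\<in>Q. \<delta> \<le> dist x y"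
    using separate_compact_closed[OF K Q d] by blast
  have "(0::real) < \<delta> / 2" using \<delta> by simp
  from of_rat_dense[OF this] obtain \<rho>0 :: rat where \<rho>0: "0 < (of_rat \<rho>0 :: real)" "(of_rat \<rho>0 :: real) < \<delta> / 2" by blast
  obtain rc where rc: "rat_dec rc = \<rho>0" using rat_dec_surj by blast
  have "\<forall>x. \<exists>c. dist (vec_dec c) (x :: real ^ 'n) < of_rat \<rho>0" using vec_dec_dense \<rho>0(1) by blast
  then obtain cc where cc: "\<And>x. dist (vec_dec (cc x)) (x :: real ^ 'n) < of_rat \<rho>0" by metis
  define bx where "bx x = pr (cc x) rc" for x
  have bxe: "ball_dec (bx x) = ball (vec_dec (cc x)) (of_rat \<rho>0)" for x
    unfolding bx_def ball_dec_eq by (simp add: rc)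
  have cov: "K \<subseteq> (\<Union>x\<in>K. ball_dec (bx x))" using cc unfolding bxe by fastforce
  obtain C' where C': "C' \<subseteq> K" "finite C'" "K \<subseteq> (\<Union>x\<in>C'. ball_dec (bx x))"
    using compactE_image[OF K _ cov] unfolding bxe by blast
  obtain xs where xs: "set xs = C'" using finite_list[OF C'(2)] by blast
  define l where "l = map bx xs"
  have "K \<subseteq> \<Union>(ball_dec ` set l)" using C'(3) xs unfolding l_def by auto
  moreover have "ball_dec b \<inter> Q = {}" if "b \<in> set l" for b
  proof -
    from that obtain x where x: "x \<in> K" "b = bx x" using xs C'(1) unfolding l_def by auto
    show ?thesis
    proof (rule ccontr)
      assume "ball_dec b \<inter> Q \<noteq> {}"
      then obtain y where y0: "y \<in> ball_dec b" "y \<in> Q" by blast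
      then have y: "y \<in> Q" "y \<in> ball (vec_dec (cc x)) (of_rat \<rho>0)" using x(2) bxe[of x] by auto
      then have y': "dist (vec_dec (cc x)) y < of_rat \<rho>0" by simp
      have "dist x y \<le> dist (vec_dec (cc x)) x + dist (vec_dec (cc x)) y" by (rule dist_triangle3)
      also have "\<dots> < \<delta>" using cc[of x] y' \<rho>0 by linarith
      finally show False using \<delta>(2) x y by force
    qed
  qed
  ultimately show ?thesis by blast
qed

lemma consistent_limit:
  fixes s :: "nat \<Rightarrow> nat"
  assumes cons: "\<And>i i' (j::'n::finite). \<bar>vec_dec (s i) $ j - vec_dec (s i') $ j\<bar> \<le> (1/2) ^ i + (1/2) ^ i'"
  shows "\<exists>x :: real ^ 'n. rho s x"
proof -
  have "\<exists>L. (\<lambda>i. vec_dec (s i) $ j) \<longlonglongrightarrow> L" for j :: 'n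
  proof -
    have "Cauchy (\<lambda>i. vec_dec (s i) $ j)"
    proof (rule metric_CauchyI)
      fix e :: real assume e: "e > 0"
      obtain M where M: "(1/2::real) ^ M < e / 2" using real_arch_pow_inv[of "e/2" "1/2"] e by auto
      show "\<exists>M. \<forall>m\<ge>M. \<forall>n\<ge>M. dist (vec_dec (s m) $ j) (vec_dec (s n) $ j) < e"
      proof (intro exI[of _ M] allI impI)
        fix m n :: nat assume "M \<le> m" "M \<le> n"
        then have "(1/2::real) ^ m \<le> (1/2) ^ M" "(1/2::real) ^ n \<le> (1/2) ^ M" by (simp_all add: power_decreasing)
        with cons[where i=m and i'=n and j=j] M show "dist (vec_dec (s m) $ j) (vec_dec (s n) $ j) < e"
          unfolding dist_real_def by linarith
      qed
    qed
    then show ?thesis using Cauchy_convergent_iff convergent_def by blast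
  qed
  then have "\<forall>j::'n. \<exists>L. (\<lambda>i. vec_dec (s i) $ j) \<longlonglongrightarrow> L" by blast
  from choice[OF this] obtain L where L: "\<And>j::'n. (\<lambda>i. vec_dec (s i) $ j) \<longlonglongrightarrow> L j" by blast
  define x :: "real ^ 'n" where "x = (\<chi> j. L j)"
  have "\<bar>vec_dec (s i) $ j - x $ j\<bar> \<le> (1/2) ^ i" for i j
  proof -
    have "(\<lambda>i'. \<bar>vec_dec (s i) $ j - vec_dec (s i') $ j\<bar>) \<longlonglongrightarrow> \<bar>vec_dec (s i) $ j - L j\<bar>"
      by (intro tendsto_intros L)
    moreover have "(\<lambda>i'. (1/2::real) ^ i + (1/2) ^ i') \<longlonglongrightarrow> (1/2) ^ i + 0"
      by (intro tendsto_intros LIMSEQ_power_zero) auto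
    ultimately have "\<bar>vec_dec (s i) $ j - L j\<bar> \<le> (1/2) ^ i + 0"
      by (rule LIMSEQ_le) (use cons in auto)
    then show ?thesis unfolding x_def by simp
  qed
  then show ?thesis unfolding rho_def by blast
qed


definition qabs :: "nat \<Rightarrow> nat" where "qabs a = (if qle qzero a then a else qneg a)"
definition qmax0 :: "nat \<Rightarrow> nat" where "qmax0 a = (if qle a qzero then qzero else a)"

lemma qv_abs[simp]: "qv (qabs a) = \<bar>qv a\<bar>" by (simp add: qabs_def)
lemma qv_max0[simp]: "qv (qmax0 a) = max 0 (qv a)" by (auto simp: qmax0_def max_def)

lemma C_qzero[ci]: "comp1 (\<lambda>x. qzero)" by (simp add: C_const)
lemma C_qabs[ci]: "comp1 F \<Longrightarrow> comp1 (\<lambda>x. qabs (F x))" unfolding qabs_def by (intro ci)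
lemma C_qmax0[ci]: "comp1 F \<Longrightarrow> comp1 (\<lambda>x. qmax0 (F x))" unfolding qmax0_def by (intro ci)

definition qexj :: "'n list \<Rightarrow> ('n \<Rightarrow> bool) \<Rightarrow> bool" where
  "qexj js F = foldr (\<lambda>j acc. F j \<or> acc) js False"

lemma qexj_iff: "qexj js F \<longleftrightarrow> (\<exists>j\<in>set js. F j)"
  by (induction js) (auto simp: qexj_def)

lemma P_qexj[ci]: "(\<And>j. compP (F j)) \<Longrightarrow> compP (\<lambda>x. qexj js (\<lambda>j. F j x))"
proof (induction js)
  case Nil then show ?case by (simp add: qexj_def P_const)
next
  case (Cons j js)
  then have "compP (\<lambda>x. F j x \<or> qexj js (\<lambda>j. F j x))" by (intro P_or) auto
  then show ?case by (simp add: qexj_def)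
qed

lemma C_qsumj'[ci]: "(\<And>j. comp1 (F j)) \<Longrightarrow> comp1 (\<lambda>x. qsumj js (\<lambda>j. F j x))"
  by (rule C_qsumj)

definition disjQ :: "'n::finite itself \<Rightarrow> nat \<Rightarrow> nat \<Rightarrow> nat \<Rightarrow> bool" where
  "disjQ T b a i \<longleftrightarrow> qle (qrat (p2 b)) qzero \<or>
     qle (qmul (qrat (p2 b)) (qrat (p2 b)))
         (qsumj (jl :: 'n list) (\<lambda>j. qmul (qmax0 (qsub (qabs (qsub (qcomp (to_nat j) (p1 b)) (qcomp (to_nat j) a))) (qinv2 i)))
                                          (qmax0 (qsub (qabs (qsub (qcomp (to_nat j) (p1 b)) (qcomp (to_nat j) a))) (qinv2 i)))))"

lemma disjQ_iff: "disjQ TYPE('n::finite) b a i \<longleftrightarrow> ball_dec b \<inter> cube (vec_dec a :: real ^ 'n) ((1/2) ^ i) = {}"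
proof -
  define \<rho> where "\<rho> = real_of_rat (rat_dec (p2 b))"
  define c :: "real ^ 'n" where "c = vec_dec (p1 b)"
  have sum: "qv (qsumj (jl :: 'n list) (\<lambda>j. qmul (qmax0 (qsub (qabs (qsub (qcomp (to_nat j) (p1 b)) (qcomp (to_nat j) a))) (qinv2 i)))
                                          (qmax0 (qsub (qabs (qsub (qcomp (to_nat j) (p1 b)) (qcomp (to_nat j) a))) (qinv2 i)))))
     = (\<Sum>j\<in>UNIV. (max 0 (\<bar>c $ j - (vec_dec a :: real ^ 'n) $ j\<bar> - (1/2) ^ i))\<^sup>2)"
    by (simp add: qv_qsumj jl qv_qcomp c_def power2_eq_square)
  show ?thesis
  proof (cases "\<rho> \<le> 0")
    case True
    then have "ball_dec b = ({} :: (real ^ 'n) set)" unfolding ball_dec_eq \<rho>_def by auto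
    then show ?thesis using True unfolding disjQ_def \<rho>_def by (simp add: qv_qrat)
  next
    case False
    then have "\<not> qle (qrat (p2 b)) qzero" unfolding \<rho>_def by (simp add: qv_qrat)
    moreover have "ball_dec b = ball c \<rho>" unfolding ball_dec_eq c_def \<rho>_def ..
    ultimately show ?thesis
      unfolding disjQ_def using ball_cube_disj[of "(1/2)^i" \<rho> c "vec_dec a"] False
      by (simp add: qv_qrat sum \<rho>_def power2_eq_square)
  qed
qed

lemma P_disjQ[ci]: "comp1 F \<Longrightarrow> comp1 G \<Longrightarrow> comp1 H \<Longrightarrow> compP (\<lambda>x. disjQ T (F x) (G x) (H x))"
  unfolding disjQ_def by (intro ci)

definition inconsQ :: "'n::finite itself \<Rightarrow> nat \<Rightarrow> nat \<Rightarrow> nat \<Rightarrow> nat \<Rightarrow> bool" where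
  "inconsQ T a a' i i' \<longleftrightarrow> qexj (jl :: 'n list)
     (\<lambda>j. qlt (qadd (qinv2 i) (qinv2 i')) (qabs (qsub (qcomp (to_nat j) a) (qcomp (to_nat j) a'))))"

lemma inconsQ_iff: "inconsQ TYPE('n::finite) a a' i i' \<longleftrightarrow>
   (\<exists>j::'n. (1/2) ^ i + (1/2) ^ i' < \<bar>vec_dec a $ j - vec_dec a' $ j\<bar>)"
  by (simp add: inconsQ_def qexj_iff jl qv_qcomp)

lemma P_inconsQ[ci]: "comp1 F \<Longrightarrow> comp1 G \<Longrightarrow> comp1 H \<Longrightarrow> comp1 I \<Longrightarrow> compP (\<lambda>x. inconsQ T (F x) (G x) (H x) (I x))"
  unfolding inconsQ_def by (intro ci)


section \<open>The search predicate of the bound machine\<close>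

definition rinH :: "(nat \<Rightarrow> nat) \<Rightarrow> nat \<Rightarrow> nat \<Rightarrow> nat" where
  "rinH Pa cw n = list_encode (map (\<lambda>e. if e mod 2 = 0 then Pa (e div 2) else lnth cw (e div 2)) [0..<n])"

definition ConvH :: "recf \<Rightarrow> (nat \<Rightarrow> nat) \<Rightarrow> nat \<Rightarrow> nat \<Rightarrow> nat \<Rightarrow> bool" where
  "ConvH r Pa d t cw \<longleftrightarrow> (\<exists>n\<le>2 * d. 2 \<le> cenc r (pr t (list_encode [0, rinH Pa cw n])))"

definition InconsH :: "'n::finite itself \<Rightarrow> nat \<Rightarrow> nat \<Rightarrow> bool" where
  "InconsH T d cw \<longleftrightarrow> (\<exists>i<d. \<exists>i'<d. inconsQ T (lnth cw i) (lnth cw i') i i')"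

definition CertH :: "'n::finite itself \<Rightarrow> (nat \<Rightarrow> nat) \<Rightarrow> nat \<Rightarrow> nat \<Rightarrow> nat \<Rightarrow> bool" where
  "CertH T Ka d t cw \<longleftrightarrow> (\<exists>i<d. \<exists>e<t. \<forall>k<llen (Ka e). disjQ T (lnth (Ka e) k) (lnth cw i) i)"

definition candH :: "'n::finite itself \<Rightarrow> nat \<Rightarrow> nat \<Rightarrow> nat \<Rightarrow> bool" where
  "candH T B d cw \<longleftrightarrow> llen cw = d \<and> (\<forall>i<d. lnth cw i \<le> bnd T B i)"

definition BdH :: "'n::finite itself \<Rightarrow> nat \<Rightarrow> nat \<Rightarrow> nat" where
  "BdH T B d = Suc (list_encode (map (bnd T B) [0..<d]))"

definition GoodH :: "'n::finite itself \<Rightarrow> recf \<Rightarrow> (nat \<Rightarrow> nat) \<Rightarrow> (nat \<Rightarrow> nat) \<Rightarrow> nat \<Rightarrow> nat \<Rightarrow> bool" where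
  "GoodH T r Pa Ka d t \<longleftrightarrow> (\<forall>cw<BdH T (Suc (Ka 0)) d. candH T (Suc (Ka 0)) d cw \<longrightarrow>
      ConvH r Pa d t cw \<or> InconsH T d cw \<or> CertH T Ka d t cw)"

definition nvf :: "'n::finite itself \<Rightarrow> recf \<Rightarrow> (nat \<Rightarrow> nat) \<Rightarrow> (nat \<Rightarrow> nat) \<Rightarrow> nat \<Rightarrow> nat \<Rightarrow> nat \<Rightarrow> nat" where
  "nvf T r Pa Ka d t y = (if candH T (Suc (Ka 0)) d (p1 y) \<and> p2 y \<le> 2 * d \<and> 2 \<le> cenc r (pr t (list_encode [0, rinH Pa (p1 y) (p2 y)]))
     then cenc r (pr t (list_encode [0, rinH Pa (p1 y) (p2 y)])) - 2 else 0)"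

definition NvH :: "'n::finite itself \<Rightarrow> recf \<Rightarrow> (nat \<Rightarrow> nat) \<Rightarrow> (nat \<Rightarrow> nat) \<Rightarrow> nat \<Rightarrow> nat \<Rightarrow> nat" where
  "NvH T r Pa Ka d t = Suc (bmax (nvf T r Pa Ka d t) (Suc (pr (BdH T (Suc (Ka 0)) d) (2 * d))))"

definition rP :: "(nat \<Rightarrow> nat) \<Rightarrow> nat \<Rightarrow> nat \<Rightarrow> nat" where "rP Pa d e = (if e < d then Pa e else 0)"
definition rK :: "(nat \<Rightarrow> nat) \<Rightarrow> nat \<Rightarrow> nat \<Rightarrow> nat" where "rK Ka t e = (if e \<le> t then Ka e else 0)"
definition Pc :: "nat \<Rightarrow> nat \<Rightarrow> nat" where "Pc c e = lnth c (2 * e)"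
definition Kc :: "nat \<Rightarrow> nat \<Rightarrow> nat" where "Kc c e = lnth c (2 * e + 1)"

definition GoodC :: "'n::finite itself \<Rightarrow> recf \<Rightarrow> nat \<Rightarrow> nat \<Rightarrow> nat \<Rightarrow> bool" where
  "GoodC T r c d t \<longleftrightarrow> GoodH T r (rP (Pc c) d) (rK (Kc c) t) d t"
definition NvC :: "'n::finite itself \<Rightarrow> recf \<Rightarrow> nat \<Rightarrow> nat \<Rightarrow> nat \<Rightarrow> nat" where
  "NvC T r c d t = NvH T r (rP (Pc c) d) (rK (Kc c) t) d t"

lemma C_cenc[ci]: "comp1 F \<Longrightarrow> comp1 (\<lambda>x. cenc r (F x))" by (rule comp1_comp[OF comp_cenc])
lemma C_list2[ci]: "comp1 F \<Longrightarrow> comp1 G \<Longrightarrow> comp1 (\<lambda>x. list_encode [F x, G x])"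
proof -
  assume "comp1 F" "comp1 G"
  then have "comp1 (\<lambda>x. lcons (F x) (lcons (G x) 0))" by (intro ci)
  then show ?thesis by (simp add: lcons_def pr_def)
qed

lemma C_rinH: "comp1 (\<lambda>z. Pa (p1 z) (p2 z)) \<Longrightarrow> comp1 CW \<Longrightarrow> comp1 N \<Longrightarrow> comp1 (\<lambda>x. rinH (Pa x) (CW x) (N x))"
proof -
  assume a: "comp1 (\<lambda>z. Pa (p1 z) (p2 z))" and b: "comp1 CW" "comp1 N"
  have "comp1 (\<lambda>x. list_encode (map (\<lambda>e. if e mod 2 = 0 then Pa x (e div 2) else lnth (CW x) (e div 2)) [0..<N x]))"
    by (rule C_lbuild[where F="\<lambda>x e. if e mod 2 = 0 then Pa x (e div 2) else lnth (CW x) (e div 2)"])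
       (intro ci C_comp2[OF a] comp1_comp[OF b(1)] b(2))+
  then show ?thesis unfolding rinH_def .
qed

lemma comp_GoodC: "compP (\<lambda>z. GoodC T r (p1 z) (p1 (p2 z)) (p2 (p2 z)))"
  unfolding GoodC_def GoodH_def ConvH_def InconsH_def CertH_def candH_def BdH_def rP_def rK_def Pc_def Kc_def
  by (intro ci C_rinH)


lemma comp_NvC: "comp1 (\<lambda>z. NvC T r (p1 z) (p1 (p2 z)) (p2 (p2 z)))"
  unfolding NvC_def NvH_def nvf_def candH_def BdH_def rP_def rK_def Pc_def Kc_def
  by (intro ci C_rinH)

lemma C_GoodC: "comp1 F \<Longrightarrow> comp1 G \<Longrightarrow> comp1 H \<Longrightarrow> compP (\<lambda>x. GoodC T r (F x) (G x) (H x))"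
proof -
  assume "comp1 F" "comp1 G" "comp1 H"
  from compP_comp1[OF comp_GoodC C_pr[OF this(1) C_pr[OF this(2,3)]]] show ?thesis by simp
qed

lemma C_NvC: "comp1 F \<Longrightarrow> comp1 G \<Longrightarrow> comp1 H \<Longrightarrow> comp1 (\<lambda>x. NvC T r (F x) (G x) (H x))"
proof -
  assume "comp1 F" "comp1 G" "comp1 H"
  from comp1_comp[OF comp_NvC C_pr[OF this(1) C_pr[OF this(2,3)]]] show ?thesis by simp
qed

definition RE :: "'n::finite itself \<Rightarrow> recf \<Rightarrow> nat \<Rightarrow> nat \<Rightarrow> nat" where
  "RE T r i c = (if \<exists>z<llen c. 2 * z + 1 < llen c \<and> GoodC T r c (p1 z) (p2 z)
     then Suc (NvC T r c (p1 (LEAST z. (2 * z + 1 < llen c \<and> GoodC T r c (p1 z) (p2 z)) \<or> llen c \<le> z))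
                         (p2 (LEAST z. (2 * z + 1 < llen c \<and> GoodC T r c (p1 z) (p2 z)) \<or> llen c \<le> z))) else 0)"

lemma comp_RE: "comp1 (\<lambda>z. RE T r (p1 z) (p2 z))"
proof -
  have ch: "compP (\<lambda>z. 2 * p2 z + 1 < llen (p1 z) \<and> GoodC T r (p1 z) (p1 (p2 z)) (p2 (p2 z)))"
    by (intro P_and P_less C_GoodC ci)
  note l = comp1_comp[OF C_least_bounded[OF ch C_llen[OF C_id]] C_p2[OF C_id]]
  have ex: "compP (\<lambda>z. \<exists>w<llen z. 2 * w + 1 < llen z \<and> GoodC T r z (p1 w) (p2 w))"
    by (rule P_bex[OF _ C_llen[OF C_id], where P="\<lambda>z w. 2 * w + 1 < llen z \<and> GoodC T r z (p1 w) (p2 w)"])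
       (intro P_and P_less C_GoodC ci)
  show ?thesis
    unfolding RE_def
    by (intro C_if C_Suc C_NvC C_p1 C_p2 C_const l compP_comp1[OF ex C_p2[OF C_id]] C_id)
qed


lemma rinH_rP: "n \<le> 2 * d \<Longrightarrow> rinH (rP Pa d) cw n = rinH Pa cw n"
  unfolding rinH_def by (intro arg_cong[where f=list_encode] map_cong refl) (auto simp: rP_def)

lemma ConvH_rP: "ConvH r (rP Pa d) d t cw = ConvH r Pa d t cw"
  unfolding ConvH_def using rinH_rP by auto

lemma CertH_rK: "CertH T (rK Ka t) d t cw = CertH T Ka d t cw"
proof -
  have e: "\<And>e. e < t \<Longrightarrow> rK Ka t e = Ka e" by (simp add: rK_def)
  show ?thesis unfolding CertH_def
  proof
    assume "\<exists>i<d. \<exists>e<t. \<forall>k<llen (rK Ka t e). disjQ T (lnth (rK Ka t e) k) (lnth cw i) i"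
    then obtain i e where "i < d" "e < t" "\<forall>k<llen (rK Ka t e). disjQ T (lnth (rK Ka t e) k) (lnth cw i) i" by blast
    then show "\<exists>i<d. \<exists>e<t. \<forall>k<llen (Ka e). disjQ T (lnth (Ka e) k) (lnth cw i) i" using e by metis
  next
    assume "\<exists>i<d. \<exists>e<t. \<forall>k<llen (Ka e). disjQ T (lnth (Ka e) k) (lnth cw i) i"
    then obtain i e where "i < d" "e < t" "\<forall>k<llen (Ka e). disjQ T (lnth (Ka e) k) (lnth cw i) i" by blast
    then show "\<exists>i<d. \<exists>e<t. \<forall>k<llen (rK Ka t e). disjQ T (lnth (rK Ka t e) k) (lnth cw i) i" using e by metis
  qed
qed

lemma GoodH_r: "GoodH T r (rP Pa d) (rK Ka t) d t = GoodH T r Pa Ka d t"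
  unfolding GoodH_def ConvH_rP CertH_rK by (simp add: rK_def)

lemma nvf_r: "nvf T r (rP Pa d) (rK Ka t) d t y = nvf T r Pa Ka d t y"
  unfolding nvf_def using rinH_rP[of "p2 y" d Pa "p1 y"] by (auto simp: rK_def)

lemma nvf_r': "nvf T r (rP Pa d) (rK Ka t) d t = nvf T r Pa Ka d t"
  by (rule ext) (rule nvf_r)

lemma NvH_r: "NvH T r (rP Pa d) (rK Ka t) d t = NvH T r Pa Ka d t"
  unfolding NvH_def nvf_r' by (simp add: rK_def)

lemma rP_prefix: "2 * d \<le> n \<Longrightarrow> rP (Pc (prefix_code (ilv P K) n)) d = rP P d"
  by (auto simp: rP_def Pc_def fun_eq_iff)

lemma rK_prefix: "2 * t + 1 < n \<Longrightarrow> rK (Kc (prefix_code (ilv P K) n)) t = rK K t"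
  by (auto simp: rK_def Kc_def fun_eq_iff)

lemma GoodC_prefix:
  assumes "2 * z + 1 < n" "d \<le> z" "t \<le> z"
  shows "GoodC T r (prefix_code (ilv P K) n) d t \<longleftrightarrow> GoodH T r P K d t"
  using assms unfolding GoodC_def by (simp add: rP_prefix rK_prefix GoodH_r)

lemma NvC_prefix:
  assumes "2 * z + 1 < n" "d \<le> z" "t \<le> z"
  shows "NvC T r (prefix_code (ilv P K) n) d t = NvH T r P K d t"
  using assms unfolding NvC_def by (simp add: rP_prefix rK_prefix NvH_r)

section \<open>Soundness of the computed bound\<close>

lemma rinH_prefix: "n \<le> 2 * d \<Longrightarrow> rinH P (list_encode (map s [0..<d])) n = prefix_code (ilv P s) n"
  unfolding rinH_def prefix_code_def
  by (intro arg_cong[where f=list_encode] map_cong refl) (auto simp: ilv_def lnth_encode even_iff_mod_2_eq_zero)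

lemma cenc_list: "cenc r (pr t (list_encode xs)) = enc (clk r t xs)"
  by (simp add: cenc_def)

lemma NvH_sound:
  fixes x :: "real ^ 'n::finite" and y :: "real ^ 'm::finite"
  assumes G: "GoodH TYPE('n) r P \<kappa> d t" and k: "kappa \<kappa> K" and x: "x \<in> K" and p: "rho p x"
    and q: "realizes r (ilv P (normseq TYPE('n) p)) q" and y: "rho q y"
  shows "\<bar>y $ j\<bar> \<le> real (NvH TYPE('n) r P \<kappa> d t)"
proof -
  define s where "s = normseq TYPE('n) p"
  define cw where "cw = list_encode (map s [0..<d])"
  have rs: "rho s x" unfolding s_def by (rule normseq_rho[OF p])
  have B: "\<bar>x $ j\<bar> + 1 \<le> real (Suc (\<kappa> 0))" for j using kappa_bound[OF k x, of j] by simp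
  have sb: "s i \<le> bnd TYPE('n) (Suc (\<kappa> 0)) i" for i unfolding s_def by (rule normseq_bound[OF p B])
  have cand: "candH TYPE('n) (Suc (\<kappa> 0)) d cw"
    unfolding candH_def cw_def by (simp add: llen_eq lnth_encode sb)
  have cwle: "cw \<le> list_encode (map (bnd TYPE('n) (Suc (\<kappa> 0))) [0..<d])"
    unfolding cw_def by (rule list_encode_mono) (auto simp: sb)
  then have cwB: "cw < BdH TYPE('n) (Suc (\<kappa> 0)) d" unfolding BdH_def by simp
  have ni: "\<not> InconsH TYPE('n) d cw"
  proof
    assume "InconsH TYPE('n) d cw"
    then obtain i i' j where ii: "i < d" "i' < d" and
      gt: "(1/2) ^ i + (1/2) ^ i' < \<bar>vec_dec (s i) $ j - vec_dec (s i') $ (j :: 'n)\<bar>"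
      unfolding InconsH_def inconsQ_iff cw_def by (auto simp: lnth_encode)
    have "\<bar>vec_dec (s i) $ j - x $ j\<bar> \<le> (1/2) ^ i" "\<bar>vec_dec (s i') $ j - x $ j\<bar> \<le> (1/2) ^ i'"
      using rs unfolding rho_def by auto
    with gt show False by linarith
  qed
  have nc: "\<not> CertH TYPE('n) \<kappa> d t cw"
  proof
    assume "CertH TYPE('n) \<kappa> d t cw"
    then obtain i e where ie: "i < d" "\<forall>k<llen (\<kappa> e). disjQ TYPE('n) (lnth (\<kappa> e) k) (lnth cw i) i"
      unfolding CertH_def by blast
    from k have "K \<subseteq> \<Union>(ball_dec ` set (list_decode (\<kappa> e)))" unfolding kappa_def by blast
    with x obtain b where b: "b \<in> set (list_decode (\<kappa> e))" "x \<in> ball_dec b" by blast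
    then obtain k' where k': "k' < llen (\<kappa> e)" "lnth (\<kappa> e) k' = b"
      by (auto simp: llen_eq lnth_eq in_set_conv_nth)
    have "lnth cw i = s i" unfolding cw_def using ie(1) by (simp add: lnth_encode)
    with ie(2) k' have "ball_dec b \<inter> cube (vec_dec (s i) :: real ^ 'n) ((1/2) ^ i) = {}"
      unfolding disjQ_iff by metis
    moreover have "x \<in> cube (vec_dec (s i)) ((1/2) ^ i)" using rs unfolding rho_def cube_def by auto
    ultimately show False using b(2) by blast
  qed
  from G cwB cand ni nc have "ConvH r P d t cw" unfolding GoodH_def by blast
  then obtain n where n: "n \<le> 2 * d" and c2: "2 \<le> cenc r (pr t (list_encode [0, rinH P cw n]))"
    unfolding ConvH_def by blast
  have pre: "rinH P cw n = prefix_code (ilv P s) n" unfolding cw_def by (rule rinH_prefix[OF n])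
  from c2 obtain v where v: "clk r t [0, prefix_code (ilv P s) n] = Some (Suc v)"
    unfolding pre cenc_list by (cases "clk r t [0, prefix_code (ilv P s) n]") (auto, metis Suc_le_D Suc_le_lessD Suc_less_eq not0_implies_Suc)
  then have "eval r [0, prefix_code (ilv P s) n] (Suc v)" by (rule clk_sound)
  with q have vq: "v = q 0" unfolding realizes_def s_def by blast
  have ce: "cenc r (pr t (list_encode [0, rinH P cw n])) = Suc (Suc v)"
    unfolding pre cenc_list v by simp
  have "nvf TYPE('n) r P \<kappa> d t (pr cw n) = v"
    unfolding nvf_def p1_pr p2_pr ce using cand n by simp
  moreover have "pr cw n < Suc (pr (BdH TYPE('n) (Suc (\<kappa> 0)) d) (2 * d))"
    using pr_mono[of cw "BdH TYPE('n) (Suc (\<kappa> 0)) d" n "2 * d"] cwB n by simp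
  ultimately have "v \<le> bmax (nvf TYPE('n) r P \<kappa> d t) (Suc (pr (BdH TYPE('n) (Suc (\<kappa> 0)) d) (2 * d)))"
    using bmax_ge by metis
  then have vN: "Suc v \<le> NvH TYPE('n) r P \<kappa> d t" unfolding NvH_def by simp
  have "\<bar>vec_dec (q 0) $ j - y $ j\<bar> \<le> 1" using y unfolding rho_def by (metis power_0)
  moreover have "\<bar>vec_dec (q 0) $ j\<bar> \<le> real (q 0)" by (rule vec_dec_abs_le)
  ultimately show ?thesis using vN vq by linarith
qed


section \<open>Termination of the search\<close>

lemma closed_cube: "closed (cube (a :: real ^ 'n::finite) h)"
proof -
  have "cube a h = (\<Inter>j. {y. \<bar>a $ j - y $ j\<bar> \<le> h})" by (auto simp: cube_def)
  moreover have "closed {y :: real ^ 'n. \<bar>a $ j - y $ j\<bar> \<le> h}" for j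
    by (intro closed_Collect_le continuous_intros)
  ultimately show ?thesis by auto
qed

lemma rinH_agree: "(\<forall>i<n. lnth cw i = s i) \<Longrightarrow> rinH P cw n = prefix_code (ilv P s) n"
  unfolding rinH_def prefix_code_def
  by (intro arg_cong[where f=list_encode] map_cong refl) (auto simp: ilv_def even_iff_mod_2_eq_zero)

lemma Good_exists:
  fixes f :: "(nat \<Rightarrow> nat) \<times> (real ^ 'n::finite) \<Rightarrow> (real ^ 'm::finite) set"
  assumes r: "\<forall>a\<in>D \<times> X. \<forall>p. prod_rep id_rep rho p a \<longrightarrow> (\<exists>q b. realizes r p q \<and> rho q b \<and> b \<in> f a)"
    and P: "P \<in> D" and k: "kappa \<kappa> K" and KX: "K \<subseteq> X"
  shows "\<exists>d t. GoodH TYPE('n) r P \<kappa> d t"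
proof (rule ccontr)
  assume nG: "\<not> ?thesis"
  define B where "B = Suc (\<kappa> 0)"
  have "\<forall>d. \<exists>cw. cw < BdH TYPE('n) B d \<and> candH TYPE('n) B d cw \<and> \<not> ConvH r P d d cw
          \<and> \<not> InconsH TYPE('n) d cw \<and> \<not> CertH TYPE('n) \<kappa> d d cw"
  proof
    fix d from nG have "\<not> GoodH TYPE('n) r P \<kappa> d d" by blast
    then show "\<exists>cw. cw < BdH TYPE('n) B d \<and> candH TYPE('n) B d cw \<and> \<not> ConvH r P d d cw
          \<and> \<not> InconsH TYPE('n) d cw \<and> \<not> CertH TYPE('n) \<kappa> d d cw"
      unfolding GoodH_def B_def by blast
  qed
  from choice[OF this] obtain cws where cws: "\<And>d. cws d < BdH TYPE('n) B d \<and> candH TYPE('n) B d (cws d) \<and> \<not> ConvH r P d d (cws d)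
          \<and> \<not> InconsH TYPE('n) d (cws d) \<and> \<not> CertH TYPE('n) \<kappa> d d (cws d)" by blast
  define u where "u d i = (if i < d then lnth (cws d) i else 0)" for d i
  have ub: "u d i \<le> bnd TYPE('n) B i" for d i
    using cws[of d] unfolding u_def candH_def by auto
  obtain \<sigma> s :: "nat \<Rightarrow> nat" where sm: "strict_mono \<sigma>" and ag: "\<forall>n. \<exists>m0. \<forall>m\<ge>m0. \<forall>i<n. u (\<sigma> m) i = s i"
    using KL[of u "bnd TYPE('n) B" "{0 :: real ^ 'n}" "\<lambda>_. 0", OF ub] by auto
  have agd: "\<exists>m0. \<forall>m\<ge>m0. \<forall>i<n. i < \<sigma> m \<and> lnth (cws (\<sigma> m)) i = s i" for n
  proof -
    obtain m0 where m0: "\<forall>m\<ge>m0. \<forall>i<n. u (\<sigma> m) i = s i" using ag by blast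
    show ?thesis
    proof (intro exI[of _ "max m0 n"] allI impI conjI)
      fix m i assume "max m0 n \<le> m" "i < n"
      moreover have "m \<le> \<sigma> m" by (rule seq_suble[OF sm])
      ultimately show "i < \<sigma> m" by linarith
      then show "lnth (cws (\<sigma> m)) i = s i" using m0 \<open>max m0 n \<le> m\<close> \<open>i < n\<close> unfolding u_def by force
    qed
  qed
  show False
  proof (cases "\<exists>i i' j. (1/2) ^ i + (1/2) ^ i' < \<bar>vec_dec (s i) $ j - vec_dec (s i') $ (j :: 'n)\<bar>")
    case True
    then obtain i i' and j :: 'n where ij: "(1/2) ^ i + (1/2) ^ i' < \<bar>vec_dec (s i) $ j - vec_dec (s i') $ j\<bar>" by blast
    obtain m0 where m0: "\<forall>m\<ge>m0. \<forall>l<Suc (max i i'). l < \<sigma> m \<and> lnth (cws (\<sigma> m)) l = s l" using agd by blast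
    then have "i < \<sigma> m0" "i' < \<sigma> m0" "lnth (cws (\<sigma> m0)) i = s i" "lnth (cws (\<sigma> m0)) i' = s i'" by auto
    then have "InconsH TYPE('n) (\<sigma> m0) (cws (\<sigma> m0))"
      unfolding InconsH_def inconsQ_iff using ij by metis
    then show False using cws by blast
  next
    case False
    then have "\<bar>vec_dec (s i) $ j - vec_dec (s i') $ (j :: 'n)\<bar> \<le> (1/2) ^ i + (1/2) ^ i'" for i i' j
      by (simp add: not_less)
    from consistent_limit[OF this] obtain xs :: "real ^ 'n" where rs: "rho s xs" by blast
    show False
    proof (cases "xs \<in> K")
      case True
      then have "(P, xs) \<in> D \<times> X" using P KX by auto
      moreover have "prod_rep id_rep rho (ilv P s) (P, xs)" by (rule prod_rep_ilv[OF rs])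
      ultimately obtain q where q: "realizes r (ilv P s) q" using r by blast
      then obtain n0 where n0: "eval r [0, prefix_code (ilv P s) n0] (Suc (q 0))" unfolding realizes_def by blast
      from clk_complete[OF n0] obtain t0 where t0: "\<forall>t\<ge>t0. clk r t [0, prefix_code (ilv P s) n0] = Some (Suc (q 0))" by blast
      obtain m0 where m0: "\<forall>m\<ge>m0. \<forall>l<n0. l < \<sigma> m \<and> lnth (cws (\<sigma> m)) l = s l" using agd by blast
      define m where "m = m0 + n0 + t0"
      define d where "d = \<sigma> m"
      have dm: "m \<le> d" unfolding d_def by (rule seq_suble[OF sm])
      have "\<forall>l<n0. lnth (cws d) l = s l" using m0 unfolding d_def m_def by auto
      then have pre: "rinH P (cws d) n0 = prefix_code (ilv P s) n0" by (rule rinH_agree)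
      have "cenc r (pr d (list_encode [0, rinH P (cws d) n0])) = Suc (Suc (q 0))"
        unfolding pre cenc_list using t0 dm unfolding m_def by simp
      then have "ConvH r P d d (cws d)" unfolding ConvH_def using dm unfolding m_def by (intro exI[of _ n0]) auto
      then show False using cws by blast
    next
      case False
      have "open (- K)" using compact_imp_closed k unfolding kappa_def by blast
      then obtain \<epsilon> where \<epsilon>: "\<epsilon> > 0" "ball xs \<epsilon> \<subseteq> - K" using False open_contains_ball by blast
      obtain i1 where i1: "(1/2::real) ^ i1 < \<epsilon> / (2 * real CARD('n))"
        using real_arch_pow_inv[of "\<epsilon> / (2 * real CARD('n))" "1/2"] \<epsilon> by auto
      define Q where "Q = cube (vec_dec (s i1) :: real ^ 'n) ((1/2) ^ i1)"
      have "K \<inter> Q = {}"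
      proof (rule ccontr)
        assume "K \<inter> Q \<noteq> {}"
        then obtain y where y: "y \<in> K" "y \<in> Q" by blast
        have "\<bar>xs $ j - y $ j\<bar> \<le> 2 * (1/2) ^ i1" for j
        proof -
          have "\<bar>vec_dec (s i1) $ j - xs $ j\<bar> \<le> (1/2) ^ i1" using rs unfolding rho_def by blast
          moreover have "\<bar>vec_dec (s i1) $ j - y $ j\<bar> \<le> (1/2) ^ i1" using y(2) unfolding Q_def cube_def by blast
          ultimately show ?thesis by linarith
        qed
        then have "dist xs y \<le> real CARD('n) * (2 * (1/2) ^ i1)" by (rule dist_le_card)
        also have "\<dots> < \<epsilon>" using i1 by (simp add: field_simps)
        finally have "y \<in> ball xs \<epsilon>" by simp
        with \<epsilon>(2) y(1) show False by blast
      qed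
      from cover_disjoint[OF _ _ this] k closed_cube obtain l where
        l: "K \<subseteq> \<Union>(ball_dec ` set l)" "\<forall>b\<in>set l. ball_dec b \<inter> Q = {}"
        unfolding kappa_def Q_def by blast
      from k l(1) obtain e where e: "\<kappa> e = list_encode l" unfolding kappa_def by (metis list_encode_inverse)
      obtain m0 where m0: "\<forall>m\<ge>m0. \<forall>i<Suc i1. i < \<sigma> m \<and> lnth (cws (\<sigma> m)) i = s i" using agd by blast
      define m where "m = m0 + Suc e"
      define d where "d = \<sigma> m"
      have dm: "m \<le> d" unfolding d_def by (rule seq_suble[OF sm])
      have i1d: "i1 < d" and li: "lnth (cws d) i1 = s i1" using m0 unfolding d_def m_def by auto
      have ed: "e < d" using dm unfolding m_def by simp
      have "\<forall>k'<llen (\<kappa> e). disjQ TYPE('n) (lnth (\<kappa> e) k') (lnth (cws d) i1) i1"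
      proof (intro allI impI)
        fix k' assume "k' < llen (\<kappa> e)"
        then have k': "k' < length l" unfolding e by (simp add: llen_eq)
        then have "ball_dec (l ! k') \<inter> Q = {}" using l(2) by auto
        then show "disjQ TYPE('n) (lnth (\<kappa> e) k') (lnth (cws d) i1) i1"
          unfolding disjQ_iff e li Q_def using k' by (simp add: lnth_encode)
      qed
      then have "CertH TYPE('n) \<kappa> d d (cws d)"
        unfolding CertH_def using i1d ed by blast
      then show False using cws by blast
    qed
  qed
qed


lemma RE_prefix:
  assumes "GoodH T r P K (p1 Z) (p2 Z)" "\<And>z. GoodH T r P K (p1 z) (p2 z) \<Longrightarrow> Z \<le> z"
  shows "RE T r i (prefix_code (ilv P K) n) = (if 2 * Z + 1 < n then Suc (NvH T r P K (p1 Z) (p2 Z)) else 0)"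
proof -
  let ?c = "prefix_code (ilv P K) n"
  have pz: "p1 z \<le> z" "p2 z \<le> z" for z using p1_le p2_le by auto
  have gc: "2 * z + 1 < n \<Longrightarrow> GoodC T r ?c (p1 z) (p2 z) \<longleftrightarrow> GoodH T r P K (p1 z) (p2 z)" for z
    using GoodC_prefix[of z n "p1 z" "p2 z"] pz by auto
  have ex: "(\<exists>z<llen ?c. 2 * z + 1 < llen ?c \<and> GoodC T r ?c (p1 z) (p2 z)) \<longleftrightarrow> 2 * Z + 1 < n"
  proof
    assume "\<exists>z<llen ?c. 2 * z + 1 < llen ?c \<and> GoodC T r ?c (p1 z) (p2 z)"
    then obtain z where "2 * z + 1 < n" "GoodC T r ?c (p1 z) (p2 z)" by auto
    with gc have "GoodH T r P K (p1 z) (p2 z)" by blast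
    with assms(2) have "Z \<le> z" by blast
    with \<open>2 * z + 1 < n\<close> show "2 * Z + 1 < n" by linarith
  next
    assume "2 * Z + 1 < n"
    then show "\<exists>z<llen ?c. 2 * z + 1 < llen ?c \<and> GoodC T r ?c (p1 z) (p2 z)"
      using gc[of Z] assms(1) by (intro exI[of _ Z]) auto
  qed
  have le: "(LEAST z. (2 * z + 1 < llen ?c \<and> GoodC T r ?c (p1 z) (p2 z)) \<or> llen ?c \<le> z) = Z" if "2 * Z + 1 < n"
  proof (rule Least_equality)
    show "(2 * Z + 1 < llen ?c \<and> GoodC T r ?c (p1 Z) (p2 Z)) \<or> llen ?c \<le> Z"
      using that gc[of Z] assms(1) by auto
    fix y assume "(2 * y + 1 < llen ?c \<and> GoodC T r ?c (p1 y) (p2 y)) \<or> llen ?c \<le> y"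
    then show "Z \<le> y"
    proof
      assume "2 * y + 1 < llen ?c \<and> GoodC T r ?c (p1 y) (p2 y)"
      then have "GoodH T r P K (p1 y) (p2 y)" using gc[of y] by auto
      then show ?thesis by (rule assms(2))
    next
      assume "llen ?c \<le> y" then show ?thesis using that by simp
    qed
  qed
  show ?thesis
  proof (cases "2 * Z + 1 < n")
    case True
    have "NvC T r ?c (p1 Z) (p2 Z) = NvH T r P K (p1 Z) (p2 Z)"
      by (rule NvC_prefix[OF True pz(1) pz(2)])
    then show ?thesis unfolding RE_def ex using le[OF True] True by simp
  next
    case False
    then show ?thesis unfolding RE_def ex by simp
  qed
qed

theorem partE:
  fixes f :: "(nat \<Rightarrow> nat) \<times> (real ^ 'n::finite) \<Rightarrow> (real ^ 'm::finite) set"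
  assumes r: "\<forall>a\<in>D \<times> X. \<forall>p. prod_rep id_rep rho p a \<longrightarrow> (\<exists>q b. realizes r p q \<and> rho q b \<and> b \<in> f a)"
  shows "mv_computable (prod_rep id_rep kappa) nu (D \<times> {K. compact K \<and> K \<subseteq> X})
           (\<lambda>(P, K). {N. \<forall>y\<in>(\<Union>x\<in>K. gset TYPE('n) r f (P, x)). \<forall>j. \<bar>y $ j\<bar> \<le> real N})"
proof -
  obtain re where re: "\<And>i c. eval re [i, c] (RE TYPE('n) r i c)"
    using realizer_total[OF comp_RE[of "TYPE('n)" r]] by blast
  show ?thesis unfolding mv_computable_def
  proof (intro exI[of _ re] ballI allI impI)
    fix PK pp assume PK: "PK \<in> D \<times> {K. compact K \<and> K \<subseteq> X}" and pn: "prod_rep id_rep kappa pp PK"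
    obtain P K where PKe: "PK = (P, K)" by (cases PK)
    with PK have P: "P \<in> D" and KX: "K \<subseteq> X" by auto
    define \<kappa> where "\<kappa> = (\<lambda>i. pp (2 * i + 1))"
    from pn PKe have Pe: "P = (\<lambda>i. pp (2 * i))" and k: "kappa \<kappa> K"
      by (auto simp: prod_rep_def id_rep_def \<kappa>_def)
    have ppe: "pp = ilv P \<kappa>" unfolding Pe \<kappa>_def ilv_split ..
    obtain d t where "GoodH TYPE('n) r P \<kappa> d t" using Good_exists[OF r P k KX] by blast
    then have ex: "\<exists>z. GoodH TYPE('n) r P \<kappa> (p1 z) (p2 z)" by (intro exI[of _ "pr d t"]) simp
    define Z where "Z = (LEAST z. GoodH TYPE('n) r P \<kappa> (p1 z) (p2 z))"
    have Z1: "GoodH TYPE('n) r P \<kappa> (p1 Z) (p2 Z)" unfolding Z_def by (rule LeastI_ex[OF ex])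
    have Z2: "\<And>z. GoodH TYPE('n) r P \<kappa> (p1 z) (p2 z) \<Longrightarrow> Z \<le> z" unfolding Z_def by (rule Least_le)
    define N where "N = NvH TYPE('n) r P \<kappa> (p1 Z) (p2 Z)"
    have "realizes re pp (\<lambda>i. N)"
    proof (rule realizes_total[OF re])
      fix i show "\<exists>n. RE TYPE('n) r i (prefix_code pp n) = Suc N"
        using RE_prefix[OF Z1 Z2, of i "2 * Z + 2"] unfolding ppe N_def by (intro exI[of _ "2 * Z + 2"]) simp
      fix n show "RE TYPE('n) r i (prefix_code pp n) = 0 \<or> RE TYPE('n) r i (prefix_code pp n) = Suc N"
        using RE_prefix[OF Z1 Z2, of i n] unfolding ppe N_def by simp
    qed
    moreover have "nu (\<lambda>i. N) N" by (simp add: nu_def)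
    moreover have "N \<in> (\<lambda>(P, K). {N. \<forall>y\<in>(\<Union>x\<in>K. gset TYPE('n) r f (P, x)). \<forall>j. \<bar>y $ j\<bar> \<le> real N}) PK"
    proof -
      have "\<bar>y $ j\<bar> \<le> real N" if "y \<in> (\<Union>x\<in>K. gset TYPE('n) r f (P, x))" for y j
      proof -
        from that obtain x p q where x: "x \<in> K" and pq: "rho p x" "realizes r (ilv P (normseq TYPE('n) p)) q" "rho q y"
          unfolding gset_def by auto
        show ?thesis unfolding N_def by (rule NvH_sound[OF Z1 k x pq])
      qed
      then show ?thesis unfolding PKe by auto
    qed
    ultimately show "\<exists>q b. realizes re pp q \<and> nu q b \<and> b \<in> (\<lambda>(P, K). {N. \<forall>y\<in>(\<Union>x\<in>K. gset TYPE('n) r f (P, x)). \<forall>j. \<bar>y $ j\<bar> \<le> real N}) PK"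
      by blast
  qed
qed


lemma realizer_comp_T: "comp1 T \<Longrightarrow> \<exists>r'. \<forall>i c v. eval r' [i, c] v \<longleftrightarrow> eval r [i, T c] v"
proof -
  assume "comp1 T"
  then obtain rt where rt: "\<And>c. eval rt [c] (T c)" unfolding comp1_def by blast
  have "eval (Cn r [Pj 0, Cn rt [Pj 1]]) [i, c] v \<longleftrightarrow> eval r [i, T c] v" for i c v
    by (rule eval_Cn2_iff[OF eval_Pj0 eval_Cn1[OF eval_Pj1 rt]])
  then show ?thesis by blast
qed

lemma realizes_transfer:
  assumes ev: "\<And>i c v. eval r' [i, c] v \<longleftrightarrow> eval r [i, T c] v"
    and pre: "\<And>n. T (prefix_code p n) = prefix_code p' (h n)"
    and hs: "\<And>m. \<exists>n. h n = m"
    and re: "realizes r p' q"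
  shows "realizes r' p q"
  unfolding realizes_def
proof (rule allI, rule conjI)
  fix i
  from re obtain m where m: "eval r [i, prefix_code p' m] (Suc (q i))" unfolding realizes_def by blast
  from hs obtain n where "h n = m" by blast
  with m show "\<exists>n. eval r' [i, prefix_code p n] (Suc (q i))" using ev pre by metis
  show "\<forall>n v. eval r' [i, prefix_code p n] v \<longrightarrow> v = 0 \<or> v = Suc (q i)"
    using re unfolding realizes_def ev pre by blast
qed

definition Hodd :: "nat \<Rightarrow> nat" where
  "Hodd c = list_encode (map (\<lambda>e. lnth c (2 * e + 1)) [0..<llen c div 2])"

lemma comp_Hodd: "comp1 Hodd"
  unfolding Hodd_def by (rule C_lbuild[where F="\<lambda>c e. lnth c (2 * e + 1)"]) (intro ci)+

lemma Hodd_prefix: "Hodd (prefix_code pp n) = prefix_code (\<lambda>i. pp (2 * i + 1)) (n div 2)"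
  unfolding Hodd_def prefix_code_def[of "\<lambda>i. pp (2 * i + 1)"]
  by (intro arg_cong[where f=list_encode] map_cong) (auto simp: prefix_code_def lnth_encode llen_eq)

definition Jz :: "nat \<Rightarrow> nat" where
  "Jz c = list_encode (map (\<lambda>e. if e mod 2 = 0 then 0 else lnth c (e div 2)) [0..<llen c])"

lemma comp_Jz: "comp1 Jz"
  unfolding Jz_def by (rule C_lbuild[where F="\<lambda>c e. if e mod 2 = 0 then 0 else lnth c (e div 2)"]) (intro ci)+

lemma Jz_prefix: "Jz (prefix_code p n) = prefix_code (ilv (\<lambda>_. 0) p) n"
  unfolding Jz_def prefix_code_def[of "ilv (\<lambda>_. 0) p"]
  by (intro arg_cong[where f=list_encode] map_cong) (auto simp: prefix_code_def lnth_encode llen_eq ilv_def even_iff_mod_2_eq_zero)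

lemma mv_mono: "mv_computable \<delta> \<delta>' A h \<Longrightarrow> (\<And>a. a \<in> A \<Longrightarrow> h a \<subseteq> h' a) \<Longrightarrow> mv_computable \<delta> \<delta>' A h'"
  unfolding mv_computable_def by (meson subsetD)

lemma ex_div2: "\<exists>n. n div 2 = (m::nat)" by (intro exI[of _ "2 * m"]) simp

theorem param_main:
  fixes f :: "(nat \<Rightarrow> nat) \<times> (real ^ 'n::finite) \<Rightarrow> (real ^ 'm::finite) set"
  assumes "mv_computable (prod_rep id_rep rho) rho (D \<times> X) f"
  shows "\<exists>g. mv_computable (prod_rep id_rep rho) rho (D \<times> X) g \<and> (\<forall>z\<in>D \<times> X. g z \<subseteq> f z) \<and>
            (\<forall>p\<in>D. \<forall>K. compact K \<and> K \<subseteq> X \<longrightarrow> bounded (\<Union>x\<in>K. g (p, x))) \<and>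
            mv_computable (prod_rep id_rep kappa) nu (D \<times> {K. compact K \<and> K \<subseteq> X})
              (\<lambda>(p, K). {N. \<forall>y\<in>(\<Union>x\<in>K. g (p, x)). \<forall>j. \<bar>y $ j\<bar> \<le> real N})"
proof -
  from assms obtain r where r: "\<forall>a\<in>D \<times> X. \<forall>p. prod_rep id_rep rho p a \<longrightarrow> (\<exists>q b. realizes r p q \<and> rho q b \<and> b \<in> f a)"
    unfolding mv_computable_def by blast
  show ?thesis
    using gset_comp[OF r] gset_sub[of "TYPE('n)" r f] gset_bounded[OF r] partE[OF r]
    by (intro exI[of _ "gset TYPE('n) r f"]) blast
qed

theorem nonparam_main:
  fixes f :: "(real ^ 'n::finite) \<Rightarrow> (real ^ 'm::finite) set"
  assumes "mv_computable rho rho X f"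
  shows "\<exists>g. mv_computable rho rho X g \<and> (\<forall>x\<in>X. g x \<subseteq> f x) \<and>
            (\<forall>K. compact K \<and> K \<subseteq> X \<longrightarrow> bounded (\<Union>x\<in>K. g x)) \<and>
            mv_computable kappa nu {K. compact K \<and> K \<subseteq> X}
              (\<lambda>K. {N. \<forall>y\<in>(\<Union>x\<in>K. g x). \<forall>j. \<bar>y $ j\<bar> \<le> real N})"
proof -
  from assms obtain r where r: "\<forall>a\<in>X. \<forall>p. rho p a \<longrightarrow> (\<exists>q b. realizes r p q \<and> rho q b \<and> b \<in> f a)"
    unfolding mv_computable_def by blast
  define Z :: "nat \<Rightarrow> nat" where "Z = (\<lambda>_. 0)"
  define D where "D = {Z}"
  define F where "F = (\<lambda>Px :: (nat \<Rightarrow> nat) \<times> (real ^ 'n). f (snd Px))"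
  obtain r1 where r1: "\<And>i c v. eval r1 [i, c] v \<longleftrightarrow> eval r [i, Hodd c] v"
    using realizer_comp_T[OF comp_Hodd] by blast
  have rF: "\<forall>a\<in>D \<times> X. \<forall>p. prod_rep id_rep rho p a \<longrightarrow> (\<exists>q b. realizes r1 p q \<and> rho q b \<and> b \<in> F a)"
  proof (intro ballI allI impI)
    fix a pp assume a: "a \<in> D \<times> X" and pn: "prod_rep id_rep rho pp a"
    then have "rho (\<lambda>i. pp (2 * i + 1)) (snd a)" "snd a \<in> X" by (auto simp: prod_rep_def)
    with r obtain q b where qb: "realizes r (\<lambda>i. pp (2 * i + 1)) q" "rho q b" "b \<in> f (snd a)" by blast
    have "realizes r1 pp q"
      by (rule realizes_transfer[OF r1 Hodd_prefix ex_div2 qb(1)])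
    with qb show "\<exists>q b. realizes r1 pp q \<and> rho q b \<and> b \<in> F a" unfolding F_def by blast
  qed
  define G where "G = gset TYPE('n) r1 F"
  define g where "g = (\<lambda>x. G (Z, x))"
  obtain rJ_dummy :: nat where True by blast
  have mvG: "mv_computable (prod_rep id_rep rho) rho (D \<times> X) G" unfolding G_def by (rule gset_comp[OF rF])
  then obtain rG where rG: "\<forall>a\<in>D \<times> X. \<forall>p. prod_rep id_rep rho p a \<longrightarrow> (\<exists>q b. realizes rG p q \<and> rho q b \<and> b \<in> G a)"
    unfolding mv_computable_def by blast
  obtain r2 where r2: "\<And>i c v. eval r2 [i, c] v \<longleftrightarrow> eval rG [i, Jz c] v"
    using realizer_comp_T[OF comp_Jz] by blast
  have "mv_computable rho rho X g" unfolding mv_computable_def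
  proof (intro exI[of _ r2] ballI allI impI)
    fix x p assume x: "x \<in> X" and p: "rho p x"
    have "prod_rep id_rep rho (ilv Z p) (Z, x)" by (rule prod_rep_ilv[OF p])
    moreover have "(Z, x) \<in> D \<times> X" using x by (simp add: D_def)
    ultimately obtain q b where qb: "realizes rG (ilv Z p) q" "rho q b" "b \<in> G (Z, x)" using rG by blast
    have "realizes r2 p q"
      by (rule realizes_transfer[OF r2 _ _ qb(1), of p id]) (auto simp: Jz_prefix Z_def)
    with qb show "\<exists>q b. realizes r2 p q \<and> rho q b \<and> b \<in> g x" unfolding g_def by blast
  qed
  moreover have "\<forall>x\<in>X. g x \<subseteq> f x"
  proof
    fix x show "g x \<subseteq> f x" unfolding g_def G_def using gset_sub[of "TYPE('n)" r1 F "(Z, x)"] by (simp add: F_def)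
  qed
  moreover have "\<forall>K. compact K \<and> K \<subseteq> X \<longrightarrow> bounded (\<Union>x\<in>K. g x)"
    unfolding g_def G_def using gset_bounded[OF rF, of Z] by (simp add: D_def)
  moreover have "mv_computable kappa nu {K. compact K \<and> K \<subseteq> X} (\<lambda>K. {N. \<forall>y\<in>(\<Union>x\<in>K. g x). \<forall>j. \<bar>y $ j\<bar> \<le> real N})"
  proof -
    from partE[OF rF] obtain rE where rE: "\<forall>a\<in>D \<times> {K. compact K \<and> K \<subseteq> X}. \<forall>p. prod_rep id_rep kappa p a \<longrightarrow>
        (\<exists>q b. realizes rE p q \<and> nu q b \<and> b \<in> (\<lambda>(P, K). {N. \<forall>y\<in>(\<Union>x\<in>K. G (P, x)). \<forall>j. \<bar>y $ j\<bar> \<le> real N}) a)"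
      unfolding mv_computable_def G_def by blast
    obtain r3 where r3: "\<And>i c v. eval r3 [i, c] v \<longleftrightarrow> eval rE [i, Jz c] v"
      using realizer_comp_T[OF comp_Jz] by blast
    show ?thesis unfolding mv_computable_def
    proof (intro exI[of _ r3] ballI allI impI)
      fix K p assume K: "K \<in> {K. compact K \<and> K \<subseteq> X}" and p: "kappa p K"
      have "prod_rep id_rep kappa (ilv Z p) (Z, K)" using p by (simp add: prod_rep_def id_rep_def Z_def ilv_def)
      moreover have "(Z, K) \<in> D \<times> {K. compact K \<and> K \<subseteq> X}" using K by (simp add: D_def)
      ultimately obtain q b where qb: "realizes rE (ilv Z p) q" "nu q b"
        "b \<in> {N. \<forall>y\<in>(\<Union>x\<in>K. G (Z, x)). \<forall>j. \<bar>y $ j\<bar> \<le> real N}" using rE by fastforce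
      have "realizes r3 p q"
        by (rule realizes_transfer[OF r3 _ _ qb(1), of p id]) (auto simp: Jz_prefix Z_def)
      with qb show "\<exists>q b. realizes r3 p q \<and> nu q b \<and> b \<in> {N. \<forall>y\<in>(\<Union>x\<in>K. g x). \<forall>j. \<bar>y $ j\<bar> \<le> real N}"
        unfolding g_def by blast
    qed
  qed
  ultimately show ?thesis by blast
qed


theorem lemma2:
  fixes X :: "(real ^ 'n) set"
  assumes "re_open X"
  shows
   "mv_computable (prod_rep theta rho) nu {(U, x::real ^ 'n). open U \<and> x \<in> U}
       (\<lambda>(U, x). {k. cball x ((1/2) ^ k) \<subseteq> U})
  \<and> (\<forall>f :: real ^ 'n \<Rightarrow> (real ^ 'm) set. mv_computable rho rho X f \<longrightarrow>
       (\<exists>g. mv_computable rho rho X g \<and> (\<forall>x\<in>X. g x \<subseteq> f x) \<and>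
            (\<forall>K. compact K \<and> K \<subseteq> X \<longrightarrow> bounded (\<Union>x\<in>K. g x))))
  \<and> (\<forall>f :: real ^ 'n \<Rightarrow> (real ^ 1) set. mv_computable rho rho X f \<longrightarrow>
       (\<exists>g. mv_computable rho rho X g \<and> (\<forall>x\<in>X. g x \<subseteq> f x) \<and>
            (\<forall>K. compact K \<and> K \<subseteq> X \<longrightarrow> bounded (\<Union>x\<in>K. g x)) \<and>
            mv_computable kappa nu {K. compact K \<and> K \<subseteq> X}
              (\<lambda>K. {N. \<forall>y\<in>(\<Union>x\<in>K. g x). \<bar>y $ 1\<bar> \<le> real N})))
  \<and> (\<forall>(D :: (nat \<Rightarrow> nat) set) (f :: (nat \<Rightarrow> nat) \<times> (real ^ 'n) \<Rightarrow> (real ^ 'm) set).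
       mv_computable (prod_rep id_rep rho) rho (D \<times> X) f \<longrightarrow>
       (\<exists>g. mv_computable (prod_rep id_rep rho) rho (D \<times> X) g \<and> (\<forall>z\<in>D \<times> X. g z \<subseteq> f z) \<and>
            (\<forall>p\<in>D. \<forall>K. compact K \<and> K \<subseteq> X \<longrightarrow> bounded (\<Union>x\<in>K. g (p, x)))))
  \<and> (\<forall>(D :: (nat \<Rightarrow> nat) set) (f :: (nat \<Rightarrow> nat) \<times> (real ^ 'n) \<Rightarrow> (real ^ 1) set).
       mv_computable (prod_rep id_rep rho) rho (D \<times> X) f \<longrightarrow>
       (\<exists>g. mv_computable (prod_rep id_rep rho) rho (D \<times> X) g \<and> (\<forall>z\<in>D \<times> X. g z \<subseteq> f z) \<and>
            (\<forall>p\<in>D. \<forall>K. compact K \<and> K \<subseteq> X \<longrightarrow> bounded (\<Union>x\<in>K. g (p, x))) \<and>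
            mv_computable (prod_rep id_rep kappa) nu (D \<times> {K. compact K \<and> K \<subseteq> X})
              (\<lambda>(p, K). {N. \<forall>y\<in>(\<Union>x\<in>K. g (p, x)). \<bar>y $ 1\<bar> \<le> real N})))"
proof -
  have c1: "mv_computable (prod_rep theta rho) nu {(U, x::real ^ 'n). open U \<and> x \<in> U}
       (\<lambda>(U, x). {k. cball x ((1/2) ^ k) \<subseteq> U})" by (rule partA)
  have c2: "\<forall>f :: real ^ 'n \<Rightarrow> (real ^ 'm) set. mv_computable rho rho X f \<longrightarrow>
       (\<exists>g. mv_computable rho rho X g \<and> (\<forall>x\<in>X. g x \<subseteq> f x) \<and>
            (\<forall>K. compact K \<and> K \<subseteq> X \<longrightarrow> bounded (\<Union>x\<in>K. g x)))"
    using nonparam_main by blast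
  have c3: "\<forall>f :: real ^ 'n \<Rightarrow> (real ^ 1) set. mv_computable rho rho X f \<longrightarrow>
       (\<exists>g. mv_computable rho rho X g \<and> (\<forall>x\<in>X. g x \<subseteq> f x) \<and>
            (\<forall>K. compact K \<and> K \<subseteq> X \<longrightarrow> bounded (\<Union>x\<in>K. g x)) \<and>
            mv_computable kappa nu {K. compact K \<and> K \<subseteq> X}
              (\<lambda>K. {N. \<forall>y\<in>(\<Union>x\<in>K. g x). \<bar>y $ 1\<bar> \<le> real N}))"
  proof (intro allI impI)
    fix f :: "real ^ 'n \<Rightarrow> (real ^ 1) set" assume "mv_computable rho rho X f"
    from nonparam_main[OF this] obtain g where g: "mv_computable rho rho X g" "\<forall>x\<in>X. g x \<subseteq> f x"
      "\<forall>K. compact K \<and> K \<subseteq> X \<longrightarrow> bounded (\<Union>x\<in>K. g x)"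
      "mv_computable kappa nu {K. compact K \<and> K \<subseteq> X} (\<lambda>K. {N. \<forall>y\<in>(\<Union>x\<in>K. g x). \<forall>j. \<bar>y $ j\<bar> \<le> real N})"
      by blast
    have "mv_computable kappa nu {K. compact K \<and> K \<subseteq> X} (\<lambda>K. {N. \<forall>y\<in>(\<Union>x\<in>K. g x). \<bar>y $ 1\<bar> \<le> real N})"
      by (rule mv_mono[OF g(4)]) auto
    with g show "\<exists>g. mv_computable rho rho X g \<and> (\<forall>x\<in>X. g x \<subseteq> f x) \<and>
            (\<forall>K. compact K \<and> K \<subseteq> X \<longrightarrow> bounded (\<Union>x\<in>K. g x)) \<and>
            mv_computable kappa nu {K. compact K \<and> K \<subseteq> X}
              (\<lambda>K. {N. \<forall>y\<in>(\<Union>x\<in>K. g x). \<bar>y $ 1\<bar> \<le> real N})" by blast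
  qed
  have c4: "\<forall>(D :: (nat \<Rightarrow> nat) set) (f :: (nat \<Rightarrow> nat) \<times> (real ^ 'n) \<Rightarrow> (real ^ 'm) set).
       mv_computable (prod_rep id_rep rho) rho (D \<times> X) f \<longrightarrow>
       (\<exists>g. mv_computable (prod_rep id_rep rho) rho (D \<times> X) g \<and> (\<forall>z\<in>D \<times> X. g z \<subseteq> f z) \<and>
            (\<forall>p\<in>D. \<forall>K. compact K \<and> K \<subseteq> X \<longrightarrow> bounded (\<Union>x\<in>K. g (p, x))))"
    using param_main by blast
  have c5: "\<forall>(D :: (nat \<Rightarrow> nat) set) (f :: (nat \<Rightarrow> nat) \<times> (real ^ 'n) \<Rightarrow> (real ^ 1) set).
       mv_computable (prod_rep id_rep rho) rho (D \<times> X) f \<longrightarrow>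
       (\<exists>g. mv_computable (prod_rep id_rep rho) rho (D \<times> X) g \<and> (\<forall>z\<in>D \<times> X. g z \<subseteq> f z) \<and>
            (\<forall>p\<in>D. \<forall>K. compact K \<and> K \<subseteq> X \<longrightarrow> bounded (\<Union>x\<in>K. g (p, x))) \<and>
            mv_computable (prod_rep id_rep kappa) nu (D \<times> {K. compact K \<and> K \<subseteq> X})
              (\<lambda>(p, K). {N. \<forall>y\<in>(\<Union>x\<in>K. g (p, x)). \<bar>y $ 1\<bar> \<le> real N}))"
  proof (intro allI impI)
    fix D :: "(nat \<Rightarrow> nat) set" and f :: "(nat \<Rightarrow> nat) \<times> (real ^ 'n) \<Rightarrow> (real ^ 1) set"
    assume "mv_computable (prod_rep id_rep rho) rho (D \<times> X) f"
    from param_main[OF this] obtain g where g: "mv_computable (prod_rep id_rep rho) rho (D \<times> X) g"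
      "\<forall>z\<in>D \<times> X. g z \<subseteq> f z" "\<forall>p\<in>D. \<forall>K. compact K \<and> K \<subseteq> X \<longrightarrow> bounded (\<Union>x\<in>K. g (p, x))"
      "mv_computable (prod_rep id_rep kappa) nu (D \<times> {K. compact K \<and> K \<subseteq> X})
              (\<lambda>(p, K). {N. \<forall>y\<in>(\<Union>x\<in>K. g (p, x)). \<forall>j. \<bar>y $ j\<bar> \<le> real N})"
      by blast
    have "mv_computable (prod_rep id_rep kappa) nu (D \<times> {K. compact K \<and> K \<subseteq> X})
              (\<lambda>(p, K). {N. \<forall>y\<in>(\<Union>x\<in>K. g (p, x)). \<bar>y $ 1\<bar> \<le> real N})"
      by (rule mv_mono[OF g(4)]) auto
    with g show "\<exists>g. mv_computable (prod_rep id_rep rho) rho (D \<times> X) g \<and> (\<forall>z\<in>D \<times> X. g z \<subseteq> f z) \<and>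
            (\<forall>p\<in>D. \<forall>K. compact K \<and> K \<subseteq> X \<longrightarrow> bounded (\<Union>x\<in>K. g (p, x))) \<and>
            mv_computable (prod_rep id_rep kappa) nu (D \<times> {K. compact K \<and> K \<subseteq> X})
              (\<lambda>(p, K). {N. \<forall>y\<in>(\<Union>x\<in>K. g (p, x)). \<bar>y $ 1\<bar> \<le> real N})" by blast
  qed
  show ?thesis using c1 c2 c3 c4 c5 by blast
qed


end
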